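(* Let $G$ be a finite abelian group and $M$ a (small) category. Then the category $\mathrm{Fun}(M,\mathrm{Vect}_{\hat G})$ of all functors $M\to\mathrm{Vect}_{\hat G}$, with natural transformations as morphisms, is proto-abelian. If $M$ is finite (finitely many objects and finitely many morphisms), then $\mathrm{Fun}(M,\mathrm{Vect}_{\hat G})$ is finitary.
   Context: $\hat G=G\sqcup\{0\}$ with $0$ absorbing. $\mathrm{Vect}_{\hat G}$ has as objects finite pointed sets $(V,0_V)$ with an action of the monoid $\hat G$ ($0v=0_V$, $g0_V=0_V$) such that $G$ acts freely on $V\setminus\{0_V\}$; morphisms $f:V\to W$ satisfy $f(0_V)=0_W$, $f(gv)=gf(v)$, and $f(v_1)=f(v_2)\neq0_W\Rightarrow Gv_1=Gv_2$. A category with zero object and classes $\mathfrak M,\mathfrak E$ is proto-exact if: $0\to X\in\mathfrak M$, $X\to0\in\mathfrak E$; $\mathfrak M,\mathfrak E$ contain isomorphisms and are closed under composition; a commutative square with two parallel maps in $\mathfrak M$ and the other two in $\mathfrak E$ is a pullback iff it is a pushout; any cospan $X'\hookrightarrow Y'\twoheadleftarrow Y$ (mono in $\mathfrak M$, epi in $\mathfrak E$) and any span $X'\twoheadleftarrow X\hookrightarrow Y$ can be completed to such a bi-Cartesian square. Proto-abelian: $\mathfrak M$ = all monomorphisms, $\mathfrak E$ = all epimorphisms. Finitary: all Hom-sets and all $\mathrm{Ext}$-sets (equivalence classes of admissible short exact sequences $A\hookrightarrow B\twoheadrightarrow C$, i.e. bi-Cartesian squares with $0$ in the corner, modulo isomorphisms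 of the middle term compatible with the maps) are finite. *)

theory Defs
  imports "HOL-Algebra.Group" "HOL-Library.FuncSet"
begin

record ('o,'m) catg =
  cObj  :: "'o set"
  cMor  :: "'m set"
  cDom  :: "'m \<Rightarrow> 'o"
  cCod  :: "'m \<Rightarrow> 'o"
  cComp :: "'m \<Rightarrow> 'm \<Rightarrow> 'm"   (* cComp C g f = g \<circ> f *)
  cId   :: "'o \<Rightarrow> 'm"

definition hom :: "('o,'m) catg \<Rightarrow> 'o \<Rightarrow> 'o \<Rightarrow> 'm set" where
  "hom C X Y = {f \<in> cMor C. cDom C f = X \<and> cCod C f = Y}"

definition is_category :: "('o,'m) catg \<Rightarrow> bool" where
  "is_category C \<longleftrightarrow>
     (\<forall>f\<in>cMor C. cDom C f \<in> cObj C \<and> cCod C f \<in> cObj C) \<and>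
     (\<forall>X\<in>cObj C. cId C X \<in> hom C X X) \<and>
     (\<forall>f\<in>cMor C. \<forall>g\<in>cMor C. cCod C f = cDom C g \<longrightarrow>
          cComp C g f \<in> hom C (cDom C f) (cCod C g)) \<and>
     (\<forall>f\<in>cMor C. cComp C f (cId C (cDom C f)) = f \<and> cComp C (cId C (cCod C f)) f = f) \<and>
     (\<forall>f\<in>cMor C. \<forall>g\<in>cMor C. \<forall>h\<in>cMor C. cCod C f = cDom C g \<and> cCod C g = cDom C h \<longrightarrow>
          cComp C h (cComp C g f) = cComp C (cComp C h g) f)"

definition mono :: "('o,'m) catg \<Rightarrow> 'm \<Rightarrow> bool" where
  "mono C f \<longleftrightarrow> f \<in> cMor C \<and>
     (\<forall>g\<in>cMor C. \<forall>h\<in>cMor C. cCod C g = cDom C f \<and> cCod C h = cDom C f \<and>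
        cDom C g = cDom C h \<and> cComp C f g = cComp C f h \<longrightarrow> g = h)"

definition epi :: "('o,'m) catg \<Rightarrow> 'm \<Rightarrow> bool" where
  "epi C f \<longleftrightarrow> f \<in> cMor C \<and>
     (\<forall>g\<in>cMor C. \<forall>h\<in>cMor C. cDom C g = cCod C f \<and> cDom C h = cCod C f \<and>
        cCod C g = cCod C h \<and> cComp C g f = cComp C h f \<longrightarrow> g = h)"

definition iso :: "('o,'m) catg \<Rightarrow> 'm \<Rightarrow> bool" where
  "iso C f \<longleftrightarrow> f \<in> cMor C \<and>
     (\<exists>g\<in>hom C (cCod C f) (cDom C f).
        cComp C g f = cId C (cDom C f) \<and> cComp C f g = cId C (cCod C f))"

definition zero_obj :: "('o,'m) catg \<Rightarrow> 'o \<Rightarrow> bool" where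
  "zero_obj C Z \<longleftrightarrow> Z \<in> cObj C \<and>
     (\<forall>X\<in>cObj C. (\<exists>!f. f \<in> hom C X Z) \<and> (\<exists>!f. f \<in> hom C Z X))"

text \<open>Squares are written
   A --i--> B
   |j       |k
   C --l--> D \<close>

definition comm_square :: "('o,'m) catg \<Rightarrow> 'm \<Rightarrow> 'm \<Rightarrow> 'm \<Rightarrow> 'm \<Rightarrow> bool" where
  "comm_square C i j k l \<longleftrightarrow> i \<in> cMor C \<and> j \<in> cMor C \<and> k \<in> cMor C \<and> l \<in> cMor C \<and>
     cDom C i = cDom C j \<and> cCod C i = cDom C k \<and> cCod C j = cDom C l \<and> cCod C k = cCod C l \<and>
     cComp C k i = cComp C l j"

definition is_pullback :: "('o,'m) catg \<Rightarrow> 'm \<Rightarrow> 'm \<Rightarrow> 'm \<Rightarrow> 'm \<Rightarrow> bool" where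
  "is_pullback C i j k l \<longleftrightarrow> comm_square C i j k l \<and>
     (\<forall>p\<in>cMor C. \<forall>q\<in>cMor C. cDom C p = cDom C q \<and> cCod C p = cDom C k \<and> cCod C q = cDom C l \<and>
        cComp C k p = cComp C l q \<longrightarrow>
        (\<exists>!u. u \<in> hom C (cDom C p) (cDom C i) \<and> cComp C i u = p \<and> cComp C j u = q))"

definition is_pushout :: "('o,'m) catg \<Rightarrow> 'm \<Rightarrow> 'm \<Rightarrow> 'm \<Rightarrow> 'm \<Rightarrow> bool" where
  "is_pushout C i j k l \<longleftrightarrow> comm_square C i j k l \<and>
     (\<forall>p\<in>cMor C. \<forall>q\<in>cMor C. cDom C p = cCod C i \<and> cDom C q = cCod C j \<and> cCod C p = cCod C q \<and>
        cComp C p i = cComp C q j \<longrightarrow>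
        (\<exists>!u. u \<in> hom C (cCod C k) (cCod C p) \<and> cComp C u k = p \<and> cComp C u l = q))"

definition bicartesian :: "('o,'m) catg \<Rightarrow> 'm \<Rightarrow> 'm \<Rightarrow> 'm \<Rightarrow> 'm \<Rightarrow> bool" where
  "bicartesian C i j k l \<longleftrightarrow> is_pullback C i j k l \<and> is_pushout C i j k l"

definition proto_exact :: "('o,'m) catg \<Rightarrow> ('m \<Rightarrow> bool) \<Rightarrow> ('m \<Rightarrow> bool) \<Rightarrow> bool" where
  "proto_exact C MM EE \<longleftrightarrow>
     is_category C \<and> (\<exists>Z. zero_obj C Z) \<and>
     (\<forall>f. MM f \<longrightarrow> mono C f) \<and> (\<forall>f. EE f \<longrightarrow> epi C f) \<and>
     (\<forall>Z X f. zero_obj C Z \<and> X \<in> cObj C \<and> f \<in> hom C Z X \<longrightarrow> MM f) \<and>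
     (\<forall>Z X f. zero_obj C Z \<and> X \<in> cObj C \<and> f \<in> hom C X Z \<longrightarrow> EE f) \<and>
     (\<forall>f. iso C f \<longrightarrow> MM f \<and> EE f) \<and>
     (\<forall>f g. MM f \<and> MM g \<and> cCod C f = cDom C g \<longrightarrow> MM (cComp C g f)) \<and>
     (\<forall>f g. EE f \<and> EE g \<and> cCod C f = cDom C g \<longrightarrow> EE (cComp C g f)) \<and>
     (\<forall>i j k l. comm_square C i j k l \<and> MM i \<and> MM l \<and> EE j \<and> EE k \<longrightarrow>
        (is_pullback C i j k l \<longleftrightarrow> is_pushout C i j k l)) \<and>
     (\<forall>k l. MM l \<and> EE k \<and> cCod C k = cCod C l \<longrightarrow>
        (\<exists>i j. MM i \<and> EE j \<and> bicartesian C i j k l)) \<and>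
     (\<forall>i j. MM i \<and> EE j \<and> cDom C i = cDom C j \<longrightarrow>
        (\<exists>k l. EE k \<and> MM l \<and> bicartesian C i j k l))"

definition proto_abelian :: "('o,'m) catg \<Rightarrow> bool" where
  "proto_abelian C \<longleftrightarrow> proto_exact C (mono C) (epi C)"

text \<open>Admissible short exact sequences A >-i-> B -p->> Cc: bi-Cartesian squares
  with a zero object in the corner.\<close>

definition ses :: "('o,'m) catg \<Rightarrow> ('m \<Rightarrow> bool) \<Rightarrow> ('m \<Rightarrow> bool) \<Rightarrow> 'o \<Rightarrow> 'o \<Rightarrow> ('m \<times> 'm) set" where
  "ses C MM EE A Cc = {(i, p). MM i \<and> EE p \<and> cDom C i = A \<and> cCod C p = Cc \<and>
      (\<exists>Z z1 z2. zero_obj C Z \<and> z1 \<in> hom C A Z \<and> z2 \<in> hom C Z Cc \<and>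
                 bicartesian C i z1 p z2)}"

definition ses_equiv :: "('o,'m) catg \<Rightarrow> 'm \<times> 'm \<Rightarrow> 'm \<times> 'm \<Rightarrow> bool" where
  "ses_equiv C s s' \<longleftrightarrow> (\<exists>\<phi>. iso C \<phi> \<and> \<phi> \<in> hom C (cCod C (fst s)) (cCod C (fst s')) \<and>
      cComp C \<phi> (fst s) = fst s' \<and> cComp C (snd s') \<phi> = snd s)"

definition Ext :: "('o,'m) catg \<Rightarrow> ('m \<Rightarrow> bool) \<Rightarrow> ('m \<Rightarrow> bool) \<Rightarrow> 'o \<Rightarrow> 'o \<Rightarrow> ('m \<times> 'm) set set" where
  "Ext C MM EE Cc A = {{s' \<in> ses C MM EE A Cc. ses_equiv C s s'} | s. s \<in> ses C MM EE A Cc}"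

definition finitary :: "('o,'m) catg \<Rightarrow> ('m \<Rightarrow> bool) \<Rightarrow> ('m \<Rightarrow> bool) \<Rightarrow> bool" where
  "finitary C MM EE \<longleftrightarrow>
     (\<forall>X\<in>cObj C. \<forall>Y\<in>cObj C. finite (hom C X Y)) \<and>
     (\<forall>A\<in>cObj C. \<forall>Cc\<in>cObj C. finite (Ext C MM EE Cc A))"

section \<open>The category Vect over \<hat>G (pointed finite sets, carried by subsets of nat)\<close>

text \<open>An object: a finite pointed set with an action of G; the absorbing element 0 of
  \<hat>G acts as the constant map to the base point, so only the G-action is recorded.\<close>

record 'g vobj =
  vcar :: "nat set"
  vpt  :: nat
  vact :: "'g \<Rightarrow> nat \<Rightarrow> nat"

definition vect_obj :: "('g,'b) monoid_scheme \<Rightarrow> 'g vobj \<Rightarrow> bool" where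
  "vect_obj G V \<longleftrightarrow>
     finite (vcar V) \<and> vpt V \<in> vcar V \<and>
     vact V \<in> extensional (carrier G) \<and>
     (\<forall>g\<in>carrier G. vact V g \<in> vcar V \<rightarrow> vcar V \<and> vact V g \<in> extensional (vcar V)) \<and>
     (\<forall>v\<in>vcar V. vact V \<one>\<^bsub>G\<^esub> v = v) \<and>
     (\<forall>g\<in>carrier G. \<forall>h\<in>carrier G. \<forall>v\<in>vcar V. vact V (g \<otimes>\<^bsub>G\<^esub> h) v = vact V g (vact V h v)) \<and>
     (\<forall>g\<in>carrier G. vact V g (vpt V) = vpt V) \<and>
     (\<forall>g\<in>carrier G. \<forall>v\<in>vcar V - {vpt V}. vact V g v = v \<longrightarrow> g = \<one>\<^bsub>G\<^esub>)"

definition vect_mor :: "('g,'b) monoid_scheme \<Rightarrow> 'g vobj \<Rightarrow> 'g vobj \<Rightarrow> (nat \<Rightarrow> nat) \<Rightarrow> bool" where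
  "vect_mor G V W f \<longleftrightarrow>
     f \<in> vcar V \<rightarrow> vcar W \<and> f \<in> extensional (vcar V) \<and>
     f (vpt V) = vpt W \<and>
     (\<forall>g\<in>carrier G. \<forall>v\<in>vcar V. f (vact V g v) = vact W g (f v)) \<and>
     (\<forall>v1\<in>vcar V. \<forall>v2\<in>vcar V. f v1 = f v2 \<and> f v1 \<noteq> vpt W \<longrightarrow>
        (\<exists>g\<in>carrier G. vact V g v1 = v2))"

type_synonym ('o,'a,'g) vfun = "('o \<Rightarrow> 'g vobj) \<times> ('a \<Rightarrow> nat \<Rightarrow> nat)"
type_synonym ('o,'a,'g) vnat = "('o,'a,'g) vfun \<times> ('o,'a,'g) vfun \<times> ('o \<Rightarrow> nat \<Rightarrow> nat)"

definition is_vfunctor :: "('g,'b) monoid_scheme \<Rightarrow> ('o,'a) catg \<Rightarrow> ('o,'a,'g) vfun \<Rightarrow> bool" where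
  "is_vfunctor G M F \<longleftrightarrow>
     fst F \<in> extensional (cObj M) \<and> snd F \<in> extensional (cMor M) \<and>
     (\<forall>x\<in>cObj M. vect_obj G (fst F x)) \<and>
     (\<forall>f\<in>cMor M. vect_mor G (fst F (cDom M f)) (fst F (cCod M f)) (snd F f)) \<and>
     (\<forall>x\<in>cObj M. snd F (cId M x) = (\<lambda>v\<in>vcar (fst F x). v)) \<and>
     (\<forall>f\<in>cMor M. \<forall>g\<in>cMor M. cCod M f = cDom M g \<longrightarrow>
        snd F (cComp M g f) = compose (vcar (fst F (cDom M f))) (snd F g) (snd F f))"

definition is_vnat :: "('g,'b) monoid_scheme \<Rightarrow> ('o,'a) catg \<Rightarrow> ('o,'a,'g) vnat \<Rightarrow> bool" where
  "is_vnat G M t \<longleftrightarrow>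
     (case t of (F, H, \<eta>) \<Rightarrow>
       is_vfunctor G M F \<and> is_vfunctor G M H \<and> \<eta> \<in> extensional (cObj M) \<and>
       (\<forall>x\<in>cObj M. vect_mor G (fst F x) (fst H x) (\<eta> x)) \<and>
       (\<forall>f\<in>cMor M. compose (vcar (fst F (cDom M f))) (\<eta> (cCod M f)) (snd F f)
                    = compose (vcar (fst F (cDom M f))) (snd H f) (\<eta> (cDom M f))))"

definition FunVect :: "('g,'b) monoid_scheme \<Rightarrow> ('o,'a) catg \<Rightarrow> (('o,'a,'g) vfun, ('o,'a,'g) vnat) catg" where
  "FunVect G M =
     \<lparr> cObj = {F. is_vfunctor G M F},
       cMor = {t. is_vnat G M t},
       cDom = (\<lambda>t. fst t),
       cCod = (\<lambda>t. fst (snd t)),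
       cComp = (\<lambda>s t. (fst t, fst (snd s),
                  \<lambda>x\<in>cObj M. compose (vcar (fst (fst t) x)) (snd (snd s) x) (snd (snd t) x))),
       cId = (\<lambda>F. (F, F, \<lambda>x\<in>cObj M. (\<lambda>v\<in>vcar (fst F x). v))) \<rparr>"

end

theory Submission
  imports Defs
begin


abbreviation Car :: "('o,'a,'g) vfun \<Rightarrow> 'o \<Rightarrow> nat set" where "Car F x \<equiv> vcar (fst F x)"
abbreviation Pt :: "('o,'a,'g) vfun \<Rightarrow> 'o \<Rightarrow> nat" where "Pt F x \<equiv> vpt (fst F x)"
abbreviation Act :: "('o,'a,'g) vfun \<Rightarrow> 'o \<Rightarrow> 'g \<Rightarrow> nat \<Rightarrow> nat" where "Act F x \<equiv> vact (fst F x)"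
abbreviation Fm :: "('o,'a,'g) vfun \<Rightarrow> 'a \<Rightarrow> nat \<Rightarrow> nat" where "Fm F m \<equiv> snd F m"
abbreviation Ap :: "('o,'a,'g) vnat \<Rightarrow> 'o \<Rightarrow> nat \<Rightarrow> nat" where "Ap t x \<equiv> snd (snd t) x"
abbreviation Dm :: "('o,'a,'g) vnat \<Rightarrow> ('o,'a,'g) vfun" where "Dm t \<equiv> fst t"
abbreviation Cd :: "('o,'a,'g) vnat \<Rightarrow> ('o,'a,'g) vfun" where "Cd t \<equiv> fst (snd t)"

locale vg = fixes G :: "('g,'b) monoid_scheme"
  assumes grp: "group G"
begin

lemma vo_act_in: "vect_obj G V \<Longrightarrow> g \<in> carrier G \<Longrightarrow> v \<in> vcar V \<Longrightarrow> vact V g v \<in> vcar V"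
  unfolding vect_obj_def by blast
lemma vo_one: "vect_obj G V \<Longrightarrow> v \<in> vcar V \<Longrightarrow> vact V \<one>\<^bsub>G\<^esub> v = v"
  unfolding vect_obj_def by blast
lemma vo_mult: "vect_obj G V \<Longrightarrow> g \<in> carrier G \<Longrightarrow> h \<in> carrier G \<Longrightarrow> v \<in> vcar V \<Longrightarrow>
   vact V (g \<otimes>\<^bsub>G\<^esub> h) v = vact V g (vact V h v)"
  unfolding vect_obj_def by blast
lemma vo_pt: "vect_obj G V \<Longrightarrow> g \<in> carrier G \<Longrightarrow> vact V g (vpt V) = vpt V"
  unfolding vect_obj_def by blast
lemma vo_ptin: "vect_obj G V \<Longrightarrow> vpt V \<in> vcar V"
  unfolding vect_obj_def by blast
lemma vo_fin: "vect_obj G V \<Longrightarrow> finite (vcar V)"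
  unfolding vect_obj_def by blast
lemma vo_free: "vect_obj G V \<Longrightarrow> g \<in> carrier G \<Longrightarrow> v \<in> vcar V \<Longrightarrow> v \<noteq> vpt V \<Longrightarrow> vact V g v = v \<Longrightarrow> g = \<one>\<^bsub>G\<^esub>"
  unfolding vect_obj_def by blast
lemma vo_inv: "vect_obj G V \<Longrightarrow> g \<in> carrier G \<Longrightarrow> v \<in> vcar V \<Longrightarrow> vact V (inv\<^bsub>G\<^esub> g) (vact V g v) = v"
proof -
  assume a: "vect_obj G V" "g \<in> carrier G" "v \<in> vcar V"
  have "vact V (inv\<^bsub>G\<^esub> g) (vact V g v) = vact V (inv\<^bsub>G\<^esub> g \<otimes>\<^bsub>G\<^esub> g) v"
    using vo_mult[OF a(1) _ a(2) a(3), of "inv\<^bsub>G\<^esub> g"] a grp by (simp add: group.inv_closed)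
  also have "\<dots> = v" using a grp vo_one by (simp add: group.l_inv)
  finally show ?thesis .
qed

lemma vm_in: "vect_mor G V W f \<Longrightarrow> v \<in> vcar V \<Longrightarrow> f v \<in> vcar W"
  unfolding vect_mor_def by blast
lemma vm_ext: "vect_mor G V W f \<Longrightarrow> f \<in> extensional (vcar V)"
  unfolding vect_mor_def by blast
lemma vm_pt: "vect_mor G V W f \<Longrightarrow> f (vpt V) = vpt W"
  unfolding vect_mor_def by blast
lemma vm_eq: "vect_mor G V W f \<Longrightarrow> g \<in> carrier G \<Longrightarrow> v \<in> vcar V \<Longrightarrow> f (vact V g v) = vact W g (f v)"
  unfolding vect_mor_def by blast

lemma vm_inj: assumes "vect_obj G V" "vect_obj G W" "vect_mor G V W f" "v1 \<in> vcar V" "v2 \<in> vcar V"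
  "f v1 = f v2" "f v1 \<noteq> vpt W" shows "v1 = v2"
proof -
  obtain g where g: "g \<in> carrier G" "vact V g v1 = v2" using assms unfolding vect_mor_def by blast
  have "vact W g (f v1) = f v1" using vm_eq[OF assms(3) g(1) assms(4)] g assms(6) by simp
  hence "g = \<one>\<^bsub>G\<^esub>" using vo_free[OF assms(2) g(1) vm_in[OF assms(3) assms(4)] assms(7)] by simp
  thus ?thesis using g vo_one[OF assms(1) assms(4)] by simp
qed

lemma vect_morI:
  assumes "vect_obj G V" "\<And>v. v \<in> vcar V \<Longrightarrow> f v \<in> vcar W" "f \<in> extensional (vcar V)"
    "f (vpt V) = vpt W" "\<And>g v. g \<in> carrier G \<Longrightarrow> v \<in> vcar V \<Longrightarrow> f (vact V g v) = vact W g (f v)"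
    "\<And>v1 v2. v1 \<in> vcar V \<Longrightarrow> v2 \<in> vcar V \<Longrightarrow> f v1 = f v2 \<Longrightarrow> f v1 \<noteq> vpt W \<Longrightarrow> v1 = v2"
  shows "vect_mor G V W f"
  unfolding vect_mor_def
proof (intro conjI ballI impI)
  fix v1 v2 assume "v1 \<in> vcar V" "v2 \<in> vcar V" "f v1 = f v2 \<and> f v1 \<noteq> vpt W"
  hence "v1 = v2" using assms(6) by blast
  thus "\<exists>g\<in>carrier G. vact V g v1 = v2" using vo_one[OF assms(1)] \<open>v1 \<in> vcar V\<close> grp
    by (metis monoid.one_closed group.is_monoid)
qed (use assms in auto)

lemma vm_comp: assumes "vect_obj G U" "vect_obj G V" "vect_obj G W" "vect_mor G U V f" "vect_mor G V W h"
  shows "vect_mor G U W (compose (vcar U) h f)"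
proof (rule vect_morI[OF assms(1)])
  show "\<And>v. v \<in> vcar U \<Longrightarrow> compose (vcar U) h f v \<in> vcar W" using assms vm_in by (simp add: compose_def)
  show "compose (vcar U) h f \<in> extensional (vcar U)" by (simp add: compose_def)
  show "compose (vcar U) h f (vpt U) = vpt W" using assms vm_pt vo_ptin by (simp add: compose_def)
  show "\<And>g v. g \<in> carrier G \<Longrightarrow> v \<in> vcar U \<Longrightarrow> compose (vcar U) h f (vact U g v) = vact W g (compose (vcar U) h f v)"
    using assms vm_in vm_eq vo_act_in by (simp add: compose_def)
  fix v1 v2 assume a: "v1 \<in> vcar U" "v2 \<in> vcar U" "compose (vcar U) h f v1 = compose (vcar U) h f v2"
    "compose (vcar U) h f v1 \<noteq> vpt W"
  hence "h (f v1) = h (f v2)" "h (f v1) \<noteq> vpt W" by (auto simp: compose_def)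
  hence e: "f v1 = f v2" using vm_inj[OF assms(2,3,5)] vm_in[OF assms(4)] a by blast
  have "f v1 \<noteq> vpt V" using \<open>h (f v1) \<noteq> vpt W\<close> vm_pt[OF assms(5)] by auto
  thus "v1 = v2" using vm_inj[OF assms(1,2,4) a(1,2) e] by blast
qed

lemma vm_id: "vect_obj G V \<Longrightarrow> vect_mor G V V (\<lambda>v\<in>vcar V. v)"
  by (rule vect_morI) (auto simp: vo_ptin vo_act_in)

end


locale fv = vg G for G :: "('g,'b) monoid_scheme" +
  fixes M :: "('o,'a) catg"
  assumes catM: "is_category M"
begin

abbreviation FV where "FV \<equiv> FunVect G M"
abbreviation Ob where "Ob \<equiv> cObj M"
abbreviation Mo where "Mo \<equiv> cMor M"
abbreviation mD where "mD \<equiv> cDom M"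
abbreviation mC where "mC \<equiv> cCod M"

lemma M_dc: "f \<in> Mo \<Longrightarrow> mD f \<in> Ob \<and> mC f \<in> Ob"
  using catM unfolding is_category_def by blast
lemma M_id: "x \<in> Ob \<Longrightarrow> cId M x \<in> Mo \<and> mD (cId M x) = x \<and> mC (cId M x) = x"
  using catM unfolding is_category_def hom_def by blast
lemma M_comp: "f \<in> Mo \<Longrightarrow> g \<in> Mo \<Longrightarrow> mC f = mD g \<Longrightarrow>
   cComp M g f \<in> Mo \<and> mD (cComp M g f) = mD f \<and> mC (cComp M g f) = mC g"
  using catM unfolding is_category_def hom_def by blast

lemma FV_simps[simp]:
  "cObj FV = {F. is_vfunctor G M F}"
  "cMor FV = {t. is_vnat G M t}"
  "cDom FV t = fst t"
  "cCod FV t = fst (snd t)"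
  by (simp_all add: FunVect_def)

lemma FV_comp: "cComp FV s t = (fst t, fst (snd s),
                  \<lambda>x\<in>cObj M. compose (vcar (fst (fst t) x)) (snd (snd s) x) (snd (snd t) x))"
  by (simp add: FunVect_def)
lemma FV_id: "cId FV F = (F, F, \<lambda>x\<in>cObj M. (\<lambda>v\<in>vcar (fst F x). v))"
  by (simp add: FunVect_def)

lemma vfunI:
  assumes "fst F \<in> extensional Ob" "snd F \<in> extensional Mo"
    "\<And>x. x \<in> Ob \<Longrightarrow> vect_obj G (fst F x)"
    "\<And>m. m \<in> Mo \<Longrightarrow> vect_mor G (fst F (mD m)) (fst F (mC m)) (Fm F m)"
    "\<And>x. x \<in> Ob \<Longrightarrow> Fm F (cId M x) = (\<lambda>v\<in>Car F x. v)"
    "\<And>f g v. f \<in> Mo \<Longrightarrow> g \<in> Mo \<Longrightarrow> mC f = mD g \<Longrightarrow> v \<in> Car F (mD f) \<Longrightarrow>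
        Fm F (cComp M g f) v = Fm F g (Fm F f v)"
  shows "is_vfunctor G M F"
  unfolding is_vfunctor_def
proof (intro conjI ballI impI)
  fix f g assume a: "f \<in> Mo" "g \<in> Mo" "mC f = mD g"
  have c: "cComp M g f \<in> Mo" "mD (cComp M g f) = mD f" using M_comp[OF a] by auto
  show "Fm F (cComp M g f) = compose (Car F (mD f)) (Fm F g) (Fm F f)"
  proof (rule extensionalityI[of _ "Car F (mD f)"])
    show "Fm F (cComp M g f) \<in> extensional (Car F (mD f))" using assms(4)[OF c(1)] c(2) vm_ext by metis
  qed (use assms(6)[OF a] in \<open>auto simp: compose_def\<close>)
qed (use assms in auto)

lemma vfun_ext1: "is_vfunctor G M F \<Longrightarrow> fst F \<in> extensional Ob" unfolding is_vfunctor_def by blast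
lemma vfun_ext2: "is_vfunctor G M F \<Longrightarrow> snd F \<in> extensional Mo" unfolding is_vfunctor_def by blast
lemma vfun_obj: "is_vfunctor G M F \<Longrightarrow> x \<in> Ob \<Longrightarrow> vect_obj G (fst F x)" unfolding is_vfunctor_def by blast
lemma vfun_mor: "is_vfunctor G M F \<Longrightarrow> m \<in> Mo \<Longrightarrow> vect_mor G (fst F (mD m)) (fst F (mC m)) (Fm F m)"
  unfolding is_vfunctor_def by blast
lemma vfun_id: "is_vfunctor G M F \<Longrightarrow> x \<in> Ob \<Longrightarrow> Fm F (cId M x) = (\<lambda>v\<in>Car F x. v)"
  unfolding is_vfunctor_def by blast
lemma vfun_comp: "is_vfunctor G M F \<Longrightarrow> f \<in> Mo \<Longrightarrow> g \<in> Mo \<Longrightarrow> mC f = mD g \<Longrightarrow> v \<in> Car F (mD f) \<Longrightarrow>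
        Fm F (cComp M g f) v = Fm F g (Fm F f v)"
  unfolding is_vfunctor_def by (simp add: compose_def)
lemma vfun_in: "is_vfunctor G M F \<Longrightarrow> m \<in> Mo \<Longrightarrow> v \<in> Car F (mD m) \<Longrightarrow> Fm F m v \<in> Car F (mC m)"
  using vfun_mor vm_in by blast
lemma vfun_pt: "is_vfunctor G M F \<Longrightarrow> m \<in> Mo \<Longrightarrow> Fm F m (Pt F (mD m)) = Pt F (mC m)"
  using vfun_mor vm_pt by blast
lemma vfun_eq: "is_vfunctor G M F \<Longrightarrow> m \<in> Mo \<Longrightarrow> g \<in> carrier G \<Longrightarrow> v \<in> Car F (mD m) \<Longrightarrow>
    Fm F m (Act F (mD m) g v) = Act F (mC m) g (Fm F m v)"
  using vfun_mor vm_eq by blast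
lemma vfun_inj: "is_vfunctor G M F \<Longrightarrow> m \<in> Mo \<Longrightarrow> v1 \<in> Car F (mD m) \<Longrightarrow> v2 \<in> Car F (mD m) \<Longrightarrow>
    Fm F m v1 = Fm F m v2 \<Longrightarrow> Fm F m v1 \<noteq> Pt F (mC m) \<Longrightarrow> v1 = v2"
  using vfun_mor vm_inj vfun_obj M_dc by metis
lemma vfun_ptin: "is_vfunctor G M F \<Longrightarrow> x \<in> Ob \<Longrightarrow> Pt F x \<in> Car F x"
  using vfun_obj vo_ptin by blast
lemma vfun_actin: "is_vfunctor G M F \<Longrightarrow> x \<in> Ob \<Longrightarrow> g \<in> carrier G \<Longrightarrow> v \<in> Car F x \<Longrightarrow> Act F x g v \<in> Car F x"
  using vfun_obj vo_act_in by blast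
lemma vfun_actpt: "is_vfunctor G M F \<Longrightarrow> x \<in> Ob \<Longrightarrow> g \<in> carrier G \<Longrightarrow> Act F x g (Pt F x) = Pt F x"
  using vfun_obj vo_pt by blast

lemma vnat_unf: "is_vnat G M t \<longleftrightarrow>
   is_vfunctor G M (Dm t) \<and> is_vfunctor G M (Cd t) \<and> snd (snd t) \<in> extensional Ob \<and>
   (\<forall>x\<in>Ob. vect_mor G (fst (Dm t) x) (fst (Cd t) x) (Ap t x)) \<and>
   (\<forall>f\<in>Mo. compose (Car (Dm t) (mD f)) (Ap t (mC f)) (Fm (Dm t) f)
                    = compose (Car (Dm t) (mD f)) (Fm (Cd t) f) (Ap t (mD f)))"
  unfolding is_vnat_def by (cases t) auto

lemma vnatI:
  assumes "is_vfunctor G M (Dm t)" "is_vfunctor G M (Cd t)" "snd (snd t) \<in> extensional Ob"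
   "\<And>x. x \<in> Ob \<Longrightarrow> vect_mor G (fst (Dm t) x) (fst (Cd t) x) (Ap t x)"
   "\<And>f v. f \<in> Mo \<Longrightarrow> v \<in> Car (Dm t) (mD f) \<Longrightarrow> Ap t (mC f) (Fm (Dm t) f v) = Fm (Cd t) f (Ap t (mD f) v)"
  shows "is_vnat G M t"
  unfolding vnat_unf using assms by (auto simp: compose_def)

lemma vnat_D1: "is_vnat G M t \<Longrightarrow> is_vfunctor G M (Dm t)" unfolding vnat_unf by blast
lemma vnat_D2: "is_vnat G M t \<Longrightarrow> is_vfunctor G M (Cd t)" unfolding vnat_unf by blast
lemma vnat_ext: "is_vnat G M t \<Longrightarrow> snd (snd t) \<in> extensional Ob" unfolding vnat_unf by blast
lemma vnat_mor: "is_vnat G M t \<Longrightarrow> x \<in> Ob \<Longrightarrow> vect_mor G (fst (Dm t) x) (fst (Cd t) x) (Ap t x)"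
  unfolding vnat_unf by blast
lemma vnat_nat: "is_vnat G M t \<Longrightarrow> f \<in> Mo \<Longrightarrow> v \<in> Car (Dm t) (mD f) \<Longrightarrow>
    Ap t (mC f) (Fm (Dm t) f v) = Fm (Cd t) f (Ap t (mD f) v)"
proof -
  assume a: "is_vnat G M t" "f \<in> Mo" "v \<in> Car (Dm t) (mD f)"
  hence "compose (Car (Dm t) (mD f)) (Ap t (mC f)) (Fm (Dm t) f) v
                    = compose (Car (Dm t) (mD f)) (Fm (Cd t) f) (Ap t (mD f)) v"
    unfolding vnat_unf by metis
  thus ?thesis using a(3) by (simp add: compose_def)
qed
lemma vnat_in: "is_vnat G M t \<Longrightarrow> x \<in> Ob \<Longrightarrow> v \<in> Car (Dm t) x \<Longrightarrow> Ap t x v \<in> Car (Cd t) x"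
  using vnat_mor vm_in by blast
lemma vnat_pt: "is_vnat G M t \<Longrightarrow> x \<in> Ob \<Longrightarrow> Ap t x (Pt (Dm t) x) = Pt (Cd t) x"
  using vnat_mor vm_pt by blast
lemma vnat_eq: "is_vnat G M t \<Longrightarrow> x \<in> Ob \<Longrightarrow> g \<in> carrier G \<Longrightarrow> v \<in> Car (Dm t) x \<Longrightarrow>
    Ap t x (Act (Dm t) x g v) = Act (Cd t) x g (Ap t x v)"
  using vnat_mor vm_eq by blast
lemma vnat_inj: "is_vnat G M t \<Longrightarrow> x \<in> Ob \<Longrightarrow> v1 \<in> Car (Dm t) x \<Longrightarrow> v2 \<in> Car (Dm t) x \<Longrightarrow>
    Ap t x v1 = Ap t x v2 \<Longrightarrow> Ap t x v1 \<noteq> Pt (Cd t) x \<Longrightarrow> v1 = v2"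
  by (rule vm_inj[OF vfun_obj[OF vnat_D1 _] vfun_obj[OF vnat_D2 _] vnat_mor])
lemma vnat_extx: "is_vnat G M t \<Longrightarrow> x \<in> Ob \<Longrightarrow> Ap t x \<in> extensional (Car (Dm t) x)"
  using vnat_mor vm_ext by blast

lemma vnat_eqI:
  assumes "is_vnat G M s" "is_vnat G M t" "Dm s = Dm t" "Cd s = Cd t"
    "\<And>x v. x \<in> Ob \<Longrightarrow> v \<in> Car (Dm s) x \<Longrightarrow> Ap s x v = Ap t x v"
  shows "s = t"
proof -
  have "snd (snd s) = snd (snd t)"
  proof (rule extensionalityI[of _ Ob])
    show "snd (snd s) \<in> extensional Ob" "snd (snd t) \<in> extensional Ob" using assms vnat_ext by auto
    fix x assume x: "x \<in> Ob"
    have e1: "Ap s x \<in> extensional (Car (Dm s) x)" using vnat_extx[OF assms(1) x] .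
    have e2: "Ap t x \<in> extensional (Car (Dm s) x)" using vnat_extx[OF assms(2) x] assms(3) by simp
    show "snd (snd s) x = snd (snd t) x"
      by (rule extensionalityI[OF e1 e2]) (use assms x in auto)
  qed
  thus ?thesis using assms(3,4) by (metis prod.expand)
qed

lemma comp_ap[simp]: "x \<in> Ob \<Longrightarrow> v \<in> Car (Dm t) x \<Longrightarrow> Ap (cComp FV s t) x v = Ap s x (Ap t x v)"
  by (simp add: compose_def FV_comp)
lemma comp_Dm[simp]: "Dm (cComp FV s t) = Dm t" by (simp add: FV_comp)
lemma comp_Cd[simp]: "Cd (cComp FV s t) = Cd s" by (simp add: FV_comp)
lemma comp_ext[simp]: "snd (snd (cComp FV s t)) \<in> extensional Ob" by (simp add: FV_comp)
lemma id_ap[simp]: "x \<in> Ob \<Longrightarrow> v \<in> Car F x \<Longrightarrow> Ap (cId FV F) x v = v"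
  by (simp add: FV_id)
lemma id_Dm[simp]: "Dm (cId FV F) = F" by (simp add: FV_id)
lemma id_Cd[simp]: "Cd (cId FV F) = F" by (simp add: FV_id)
lemma id_ext[simp]: "snd (snd (cId FV F)) \<in> extensional Ob" by (simp add: FV_id)

lemma comp_vnat: assumes "is_vnat G M s" "is_vnat G M t" "Cd t = Dm s" shows "is_vnat G M (cComp FV s t)"
proof (rule vnatI)
  show "is_vfunctor G M (Dm (cComp FV s t))" using assms vnat_D1 by simp
  show "is_vfunctor G M (Cd (cComp FV s t))" using assms vnat_D2 by simp
  show "snd (snd (cComp FV s t)) \<in> extensional Ob" by simp
  fix x assume x: "x \<in> Ob"
  have "vect_mor G (fst (Dm t) x) (fst (Cd s) x) (compose (Car (Dm t) x) (Ap s x) (Ap t x))"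
    using vm_comp[OF vfun_obj[OF vnat_D1[OF assms(2)] x] vfun_obj[OF vnat_D1[OF assms(1)] x]
      vfun_obj[OF vnat_D2[OF assms(1)] x]] vnat_mor[OF assms(2) x] vnat_mor[OF assms(1) x] assms(3) by simp
  thus "vect_mor G (fst (Dm (cComp FV s t)) x) (fst (Cd (cComp FV s t)) x) (Ap (cComp FV s t) x)"
    using x by (simp add: FV_comp)
next
  fix f v assume f: "f \<in> Mo" "v \<in> Car (Dm (cComp FV s t)) (mD f)"
  have v: "v \<in> Car (Dm t) (mD f)" using f by simp
  have w: "Ap t (mD f) v \<in> Car (Dm s) (mD f)" using vnat_in[OF assms(2) _ v] M_dc f assms(3) by auto
  have w2: "Fm (Dm t) f v \<in> Car (Dm t) (mC f)" using vfun_in[OF vnat_D1[OF assms(2)] f(1) v] .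
  show "Ap (cComp FV s t) (mC f) (Fm (Dm (cComp FV s t)) f v) =
         Fm (Cd (cComp FV s t)) f (Ap (cComp FV s t) (mD f) v)"
  proof -
    have "Ap (cComp FV s t) (mC f) (Fm (Dm (cComp FV s t)) f v) = Ap s (mC f) (Ap t (mC f) (Fm (Dm t) f v))"
      using M_dc[OF f(1)] w2 by simp
    also have "\<dots> = Ap s (mC f) (Fm (Dm s) f (Ap t (mD f) v))"
      using vnat_nat[OF assms(2) f(1) v] assms(3) by simp
    also have "\<dots> = Fm (Cd s) f (Ap s (mD f) (Ap t (mD f) v))"
      using vnat_nat[OF assms(1) f(1) w] by simp
    also have "\<dots> = Fm (Cd (cComp FV s t)) f (Ap (cComp FV s t) (mD f) v)"
      using M_dc[OF f(1)] v by simp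
    finally show ?thesis .
  qed
qed

lemma id_vnat: assumes "is_vfunctor G M F" shows "is_vnat G M (cId FV F)"
proof (rule vnatI)
  fix f v assume f: "f \<in> Mo" "v \<in> Car (Dm (cId FV F)) (mD f)"
  thus "Ap (cId FV F) (mC f) (Fm (Dm (cId FV F)) f v) = Fm (Cd (cId FV F)) f (Ap (cId FV F) (mD f) v)"
    using M_dc[OF f(1)] vfun_in[OF assms f(1)] by simp
next
  fix x assume x: "x \<in> Ob"
  have "Ap (cId FV F) x = (\<lambda>v\<in>Car F x. v)" using x by (simp add: FV_id)
  thus "vect_mor G (fst (Dm (cId FV F)) x) (fst (Cd (cId FV F)) x) (Ap (cId FV F) x)"
    using vm_id[OF vfun_obj[OF assms x]] by simp
qed (use assms in simp_all)

lemma FV_cat: "is_category FV"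
proof -
  have 1: "\<forall>f\<in>cMor FV. cDom FV f \<in> cObj FV \<and> cCod FV f \<in> cObj FV" using vnat_D1 vnat_D2 by simp
  have 2: "\<forall>X\<in>cObj FV. cId FV X \<in> hom FV X X" unfolding hom_def using id_vnat by simp
  have 3: "\<forall>f\<in>cMor FV. \<forall>g\<in>cMor FV. cCod FV f = cDom FV g \<longrightarrow>
          cComp FV g f \<in> hom FV (cDom FV f) (cCod FV g)" unfolding hom_def using comp_vnat by simp
  have 4: "\<forall>f\<in>cMor FV. cComp FV f (cId FV (cDom FV f)) = f \<and> cComp FV (cId FV (cCod FV f)) f = f"
  proof
    fix f assume f: "f \<in> cMor FV"
    hence f': "is_vnat G M f" by simp
    have i1: "is_vnat G M (cId FV (Dm f))" using id_vnat vnat_D1 f' by blast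
    have i2: "is_vnat G M (cId FV (Cd f))" using id_vnat vnat_D2 f' by blast
    have a: "cComp FV f (cId FV (cDom FV f)) = f"
      by (rule vnat_eqI) (use f' comp_vnat[OF f' i1] in auto)
    have b: "cComp FV (cId FV (cCod FV f)) f = f"
      by (rule vnat_eqI) (use f' comp_vnat[OF i2 f'] vnat_in in auto)
    show "cComp FV f (cId FV (cDom FV f)) = f \<and> cComp FV (cId FV (cCod FV f)) f = f" using a b by blast
  qed
  have 5: "\<forall>f\<in>cMor FV. \<forall>g\<in>cMor FV. \<forall>h\<in>cMor FV. cCod FV f = cDom FV g \<and> cCod FV g = cDom FV h \<longrightarrow>
          cComp FV h (cComp FV g f) = cComp FV (cComp FV h g) f"
  proof (intro ballI impI)
    fix f g h assume a: "f \<in> cMor FV" "g \<in> cMor FV" "h \<in> cMor FV" "cCod FV f = cDom FV g \<and> cCod FV g = cDom FV h"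
    have a': "is_vnat G M f" "is_vnat G M g" "is_vnat G M h" "Cd f = Dm g" "Cd g = Dm h" using a by auto
    show "cComp FV h (cComp FV g f) = cComp FV (cComp FV h g) f"
    proof (rule vnat_eqI)
      fix x v assume xv: "x \<in> Ob" "v \<in> Car (Dm (cComp FV h (cComp FV g f))) x"
      hence v: "v \<in> Car (Dm f) x" by simp
      have w: "Ap f x v \<in> Car (Dm g) x" using vnat_in[OF a'(1) xv(1) v] a'(4) by simp
      show "Ap (cComp FV h (cComp FV g f)) x v = Ap (cComp FV (cComp FV h g) f) x v"
        using xv(1) v w by simp
    qed (use a' comp_vnat[OF a'(3) comp_vnat[OF a'(2) a'(1) a'(4)]] comp_vnat[OF comp_vnat[OF a'(3) a'(2) a'(5)] a'(1)] in auto)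
  qed
  show ?thesis unfolding is_category_def by (intro conjI 1 2 3 4 5)
qed

end


context fixes C :: "('o,'m) catg" assumes cat: "is_category C"
begin

lemma c_dc: "f \<in> cMor C \<Longrightarrow> cDom C f \<in> cObj C \<and> cCod C f \<in> cObj C"
  using cat unfolding is_category_def by blast
lemma c_id: "X \<in> cObj C \<Longrightarrow> cId C X \<in> cMor C \<and> cDom C (cId C X) = X \<and> cCod C (cId C X) = X"
  using cat unfolding is_category_def hom_def by blast
lemma c_comp: "f \<in> cMor C \<Longrightarrow> g \<in> cMor C \<Longrightarrow> cCod C f = cDom C g \<Longrightarrow>
   cComp C g f \<in> cMor C \<and> cDom C (cComp C g f) = cDom C f \<and> cCod C (cComp C g f) = cCod C g"
  using cat unfolding is_category_def hom_def by blast
lemma c_idl: "f \<in> cMor C \<Longrightarrow> cComp C (cId C (cCod C f)) f = f"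
  using cat unfolding is_category_def by blast
lemma c_idr: "f \<in> cMor C \<Longrightarrow> cComp C f (cId C (cDom C f)) = f"
  using cat unfolding is_category_def by blast
lemma c_assoc: "f \<in> cMor C \<Longrightarrow> g \<in> cMor C \<Longrightarrow> h \<in> cMor C \<Longrightarrow> cCod C f = cDom C g \<Longrightarrow> cCod C g = cDom C h \<Longrightarrow>
          cComp C h (cComp C g f) = cComp C (cComp C h g) f"
  using cat unfolding is_category_def by blast

lemma zero_mono: assumes "zero_obj C Z" "f \<in> hom C Z X" shows "mono C f"
  unfolding mono_def
proof (intro conjI ballI impI)
  show "f \<in> cMor C" using assms(2) by (simp add: hom_def)
  fix g h assume a: "g \<in> cMor C" "h \<in> cMor C" "cCod C g = cDom C f \<and> cCod C h = cDom C f \<and>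
        cDom C g = cDom C h \<and> cComp C f g = cComp C f h"
  have "cDom C g \<in> cObj C" using c_dc a(1) by blast
  then obtain u where "\<And>v. v \<in> hom C (cDom C g) Z \<Longrightarrow> v = u" using assms(1) unfolding zero_obj_def by metis
  moreover have "g \<in> hom C (cDom C g) Z" "h \<in> hom C (cDom C g) Z" using a assms(2) by (auto simp: hom_def)
  ultimately show "g = h" by metis
qed

lemma zero_epi: assumes "zero_obj C Z" "f \<in> hom C X Z" shows "epi C f"
  unfolding epi_def
proof (intro conjI ballI impI)
  show "f \<in> cMor C" using assms(2) by (simp add: hom_def)
  fix g h assume a: "g \<in> cMor C" "h \<in> cMor C" "cDom C g = cCod C f \<and> cDom C h = cCod C f \<and>
        cCod C g = cCod C h \<and> cComp C g f = cComp C h f"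
  have "cCod C g \<in> cObj C" using c_dc a(1) by blast
  then obtain u where "\<And>v. v \<in> hom C Z (cCod C g) \<Longrightarrow> v = u" using assms(1) unfolding zero_obj_def by metis
  moreover have "g \<in> hom C Z (cCod C g)" "h \<in> hom C Z (cCod C g)" using a assms(2) by (auto simp: hom_def)
  ultimately show "g = h" by metis
qed

lemma iso_mono: assumes "iso C f" shows "mono C f"
  unfolding mono_def
proof (intro conjI ballI impI)
  show f: "f \<in> cMor C" using assms by (simp add: iso_def)
  obtain f' where f': "f' \<in> hom C (cCod C f) (cDom C f)" "cComp C f' f = cId C (cDom C f)"
    using assms unfolding iso_def by blast
  fix g h assume a: "g \<in> cMor C" "h \<in> cMor C" "cCod C g = cDom C f \<and> cCod C h = cDom C f \<and>
        cDom C g = cDom C h \<and> cComp C f g = cComp C f h"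
  have f'm: "f' \<in> cMor C" "cDom C f' = cCod C f" using f' by (auto simp: hom_def)
  have "g = cComp C (cComp C f' f) g" using c_idl[OF a(1)] f'(2) a(3) by simp
  also have "\<dots> = cComp C f' (cComp C f g)" using c_assoc[OF a(1) f f'm(1)] a(3) f'm(2) by simp
  also have "\<dots> = cComp C f' (cComp C f h)" using a(3) by simp
  also have "\<dots> = cComp C (cComp C f' f) h" using c_assoc[OF a(2) f f'm(1)] a(3) f'm(2) by simp
  also have "\<dots> = h" using c_idl[OF a(2)] f'(2) a(3) by simp
  finally show "g = h" .
qed

lemma iso_epi: assumes "iso C f" shows "epi C f"
  unfolding epi_def
proof (intro conjI ballI impI)
  show f: "f \<in> cMor C" using assms by (simp add: iso_def)
  obtain f' where f': "f' \<in> hom C (cCod C f) (cDom C f)" "cComp C f f' = cId C (cCod C f)"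
    using assms unfolding iso_def by blast
  fix g h assume a: "g \<in> cMor C" "h \<in> cMor C" "cDom C g = cCod C f \<and> cDom C h = cCod C f \<and>
        cCod C g = cCod C h \<and> cComp C g f = cComp C h f"
  have f'm: "f' \<in> cMor C" "cCod C f' = cDom C f" "cDom C f' = cCod C f" using f' by (auto simp: hom_def)
  have "g = cComp C g (cComp C f f')" using c_idr[OF a(1)] f'(2) a(3) by simp
  also have "\<dots> = cComp C (cComp C g f) f'" using c_assoc[OF f'm(1) f a(1)] a(3) f'm(2) by simp
  also have "\<dots> = cComp C (cComp C h f) f'" using a(3) by simp
  also have "\<dots> = cComp C h (cComp C f f')" using c_assoc[OF f'm(1) f a(2)] a(3) f'm(2) by simp
  also have "\<dots> = h" using c_idr[OF a(2)] f'(2) a(3) by simp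
  finally show "g = h" .
qed

lemma mono_comp: assumes "mono C f" "mono C g" "cCod C f = cDom C g" shows "mono C (cComp C g f)"
  unfolding mono_def
proof (intro conjI ballI impI)
  have f: "f \<in> cMor C" and g: "g \<in> cMor C" using assms by (auto simp: mono_def)
  show "cComp C g f \<in> cMor C" using c_comp[OF f g assms(3)] by blast
  fix a b assume ab: "a \<in> cMor C" "b \<in> cMor C" "cCod C a = cDom C (cComp C g f) \<and> cCod C b = cDom C (cComp C g f) \<and>
        cDom C a = cDom C b \<and> cComp C (cComp C g f) a = cComp C (cComp C g f) b"
  have d: "cCod C a = cDom C f" "cCod C b = cDom C f" using ab(3) c_comp[OF f g assms(3)] by auto
  have fa: "cComp C f a \<in> cMor C" "cCod C (cComp C f a) = cDom C g" "cDom C (cComp C f a) = cDom C a"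
    using c_comp[OF ab(1) f d(1)] assms(3) by auto
  have fb: "cComp C f b \<in> cMor C" "cCod C (cComp C f b) = cDom C g" "cDom C (cComp C f b) = cDom C b"
    using c_comp[OF ab(2) f d(2)] assms(3) by auto
  have "cComp C g (cComp C f a) = cComp C g (cComp C f b)"
    using ab(3) c_assoc[OF ab(1) f g d(1) assms(3)] c_assoc[OF ab(2) f g d(2) assms(3)] by simp
  hence "cComp C f a = cComp C f b" using assms(2) fa fb ab(3) unfolding mono_def by auto
  thus "a = b" using assms(1) ab d unfolding mono_def by auto
qed

lemma epi_comp: assumes "epi C f" "epi C g" "cCod C f = cDom C g" shows "epi C (cComp C g f)"
  unfolding epi_def
proof (intro conjI ballI impI)
  have f: "f \<in> cMor C" and g: "g \<in> cMor C" using assms by (auto simp: epi_def)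
  show "cComp C g f \<in> cMor C" using c_comp[OF f g assms(3)] by blast
  fix a b assume ab: "a \<in> cMor C" "b \<in> cMor C" "cDom C a = cCod C (cComp C g f) \<and> cDom C b = cCod C (cComp C g f) \<and>
        cCod C a = cCod C b \<and> cComp C a (cComp C g f) = cComp C b (cComp C g f)"
  have d: "cDom C a = cCod C g" "cDom C b = cCod C g" using ab(3) c_comp[OF f g assms(3)] by auto
  have ga: "cComp C a g \<in> cMor C" "cDom C (cComp C a g) = cCod C f" "cCod C (cComp C a g) = cCod C a"
    using c_comp[OF g ab(1) d(1)[symmetric]] assms(3) by auto
  have gb: "cComp C b g \<in> cMor C" "cDom C (cComp C b g) = cCod C f" "cCod C (cComp C b g) = cCod C b"
    using c_comp[OF g ab(2) d(2)[symmetric]] assms(3) by auto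
  have "cComp C (cComp C a g) f = cComp C (cComp C b g) f"
    using ab(3) c_assoc[OF f g ab(1) assms(3) d(1)[symmetric]] c_assoc[OF f g ab(2) assms(3) d(2)[symmetric]] by simp
  hence "cComp C a g = cComp C b g" using assms(1) ga gb ab(3) unfolding epi_def by auto
  thus "a = b" using assms(2) ab d unfolding epi_def by auto
qed

lemma iso_comp: assumes "iso C f" "iso C g" "cCod C f = cDom C g" shows "iso C (cComp C g f)"
proof -
  have f: "f \<in> cMor C" and g: "g \<in> cMor C" using assms by (auto simp: iso_def)
  obtain f' where f': "f' \<in> hom C (cCod C f) (cDom C f)" "cComp C f' f = cId C (cDom C f)" "cComp C f f' = cId C (cCod C f)"
    using assms unfolding iso_def by blast
  obtain g' where g': "g' \<in> hom C (cCod C g) (cDom C g)" "cComp C g' g = cId C (cDom C g)" "cComp C g g' = cId C (cCod C g)"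
    using assms unfolding iso_def by blast
  have f'm: "f' \<in> cMor C" "cDom C f' = cCod C f" "cCod C f' = cDom C f" using f' by (auto simp: hom_def)
  have g'm: "g' \<in> cMor C" "cDom C g' = cCod C g" "cCod C g' = cDom C g" using g' by (auto simp: hom_def)
  have gf: "cComp C g f \<in> cMor C" "cDom C (cComp C g f) = cDom C f" "cCod C (cComp C g f) = cCod C g"
    using c_comp[OF f g assms(3)] by auto
  have fg': "cComp C f' g' \<in> cMor C" "cDom C (cComp C f' g') = cCod C g" "cCod C (cComp C f' g') = cDom C f"
    using c_comp[OF g'm(1) f'm(1)] g'm f'm assms(3) by auto
  have e1: "cComp C (cComp C f' g') (cComp C g f) = cId C (cDom C f)"
  proof -
    have "cComp C (cComp C f' g') (cComp C g f) = cComp C f' (cComp C g' (cComp C g f))"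
      using c_assoc[OF gf(1) g'm(1) f'm(1)] gf g'm f'm assms(3) by simp
    also have "cComp C g' (cComp C g f) = cComp C (cComp C g' g) f"
      using c_assoc[OF f g g'm(1) assms(3)] g'm by simp
    also have "\<dots> = f" using g'(2) assms(3) c_idl[OF f] by simp
    finally show ?thesis using f'(2) by simp
  qed
  have e2: "cComp C (cComp C g f) (cComp C f' g') = cId C (cCod C g)"
  proof -
    have "cComp C (cComp C g f) (cComp C f' g') = cComp C g (cComp C f (cComp C f' g'))"
      using c_assoc[OF fg'(1) f g] fg' assms(3) by simp
    also have "cComp C f (cComp C f' g') = cComp C (cComp C f f') g'"
      using c_assoc[OF g'm(1) f'm(1) f] g'm f'm assms(3) by simp
    also have "\<dots> = g'" using f'(3) assms(3) g'm c_idl[OF g'm(1)] by simp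
    finally show ?thesis using g'(3) by simp
  qed
  show ?thesis unfolding iso_def hom_def using gf fg' e1 e2 by auto
qed

lemma iso_inv: assumes "iso C f" obtains f' where "iso C f'" "f' \<in> hom C (cCod C f) (cDom C f)"
  "cComp C f' f = cId C (cDom C f)" "cComp C f f' = cId C (cCod C f)"
proof -
  obtain f' where f': "f' \<in> hom C (cCod C f) (cDom C f)" "cComp C f' f = cId C (cDom C f)" "cComp C f f' = cId C (cCod C f)"
    using assms unfolding iso_def by blast
  have "iso C f'" unfolding iso_def using f' assms unfolding iso_def hom_def by auto
  thus ?thesis using that f' by blast
qed

end


lemma monoD: "mono C f \<Longrightarrow> g \<in> cMor C \<Longrightarrow> h \<in> cMor C \<Longrightarrow> cCod C g = cDom C f \<Longrightarrow> cCod C h = cDom C f \<Longrightarrow>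
        cDom C g = cDom C h \<Longrightarrow> cComp C f g = cComp C f h \<Longrightarrow> g = h"
  unfolding mono_def by blast
lemma epiD: "epi C f \<Longrightarrow> g \<in> cMor C \<Longrightarrow> h \<in> cMor C \<Longrightarrow> cDom C g = cCod C f \<Longrightarrow> cDom C h = cCod C f \<Longrightarrow>
        cCod C g = cCod C h \<Longrightarrow> cComp C g f = cComp C h f \<Longrightarrow> g = h"
  unfolding epi_def by blast

context fv begin

definition subobj :: "'g vobj \<Rightarrow> nat set \<Rightarrow> 'g vobj" where
  "subobj V S = \<lparr>vcar = S, vpt = vpt V, vact = \<lambda>g\<in>carrier G. restrict (vact V g) S\<rparr>"

lemma subobj_simps[simp]: "vcar (subobj V S) = S" "vpt (subobj V S) = vpt V"
  "g \<in> carrier G \<Longrightarrow> v \<in> S \<Longrightarrow> vact (subobj V S) g v = vact V g v"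
  by (auto simp: subobj_def)

lemma subobj_vo: assumes "vect_obj G V" "S \<subseteq> vcar V" "vpt V \<in> S" "\<And>g v. g \<in> carrier G \<Longrightarrow> v \<in> S \<Longrightarrow> vact V g v \<in> S"
  shows "vect_obj G (subobj V S)"
  unfolding vect_obj_def
proof (intro conjI ballI impI)
  show "finite (vcar (subobj V S))" using vo_fin[OF assms(1)] assms(2) finite_subset by auto
  show "vact (subobj V S) \<in> extensional (carrier G)" by (simp add: subobj_def)
  fix g assume g: "g \<in> carrier G"
  show "vact (subobj V S) g \<in> vcar (subobj V S) \<rightarrow> vcar (subobj V S)" using g assms(4) by auto
  show "vact (subobj V S) g \<in> extensional (vcar (subobj V S))" using g by (simp add: subobj_def)
  show "vact (subobj V S) g (vpt (subobj V S)) = vpt (subobj V S)" using g assms vo_pt by simp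
next
  fix v assume v: "v \<in> vcar (subobj V S)"
  show "vact (subobj V S) \<one>\<^bsub>G\<^esub> v = v" using v assms vo_one grp group.is_monoid monoid.one_closed by fastforce
next
  fix g h v assume a: "g \<in> carrier G" "h \<in> carrier G" "v \<in> vcar (subobj V S)"
  have gh: "g \<otimes>\<^bsub>G\<^esub> h \<in> carrier G" using a grp by (simp add: group.is_monoid monoid.m_closed)
  show "vact (subobj V S) (g \<otimes>\<^bsub>G\<^esub> h) v = vact (subobj V S) g (vact (subobj V S) h v)"
    using a gh assms vo_mult by auto
next
  fix g v assume a: "g \<in> carrier G" "v \<in> vcar (subobj V S) - {vpt (subobj V S)}" "vact (subobj V S) g v = v"
  thus "g = \<one>\<^bsub>G\<^esub>" using vo_free[OF assms(1) a(1)] assms(2) by auto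
qed (use assms in auto)

definition closedF :: "('o,'a,'g) vfun \<Rightarrow> ('o \<Rightarrow> nat set) \<Rightarrow> bool" where
  "closedF F S \<longleftrightarrow> (\<forall>x\<in>Ob. S x \<subseteq> Car F x \<and> Pt F x \<in> S x \<and> (\<forall>g\<in>carrier G. \<forall>v\<in>S x. Act F x g v \<in> S x)) \<and>
     (\<forall>m\<in>Mo. \<forall>v\<in>S (mD m). Fm F m v \<in> S (mC m))"

lemma closedFI: assumes "\<And>x. x \<in> Ob \<Longrightarrow> S x \<subseteq> Car F x" "\<And>x. x \<in> Ob \<Longrightarrow> Pt F x \<in> S x"
  "\<And>x g v. x \<in> Ob \<Longrightarrow> g \<in> carrier G \<Longrightarrow> v \<in> S x \<Longrightarrow> Act F x g v \<in> S x"
  "\<And>m v. m \<in> Mo \<Longrightarrow> v \<in> S (mD m) \<Longrightarrow> Fm F m v \<in> S (mC m)" shows "closedF F S"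
  using assms unfolding closedF_def by blast

lemma closedF_sub: "closedF F S \<Longrightarrow> x \<in> Ob \<Longrightarrow> S x \<subseteq> Car F x" unfolding closedF_def by blast
lemma closedF_pt: "closedF F S \<Longrightarrow> x \<in> Ob \<Longrightarrow> Pt F x \<in> S x" unfolding closedF_def by blast
lemma closedF_act: "closedF F S \<Longrightarrow> x \<in> Ob \<Longrightarrow> g \<in> carrier G \<Longrightarrow> v \<in> S x \<Longrightarrow> Act F x g v \<in> S x"
  unfolding closedF_def by blast
lemma closedF_mor: "closedF F S \<Longrightarrow> m \<in> Mo \<Longrightarrow> v \<in> S (mD m) \<Longrightarrow> Fm F m v \<in> S (mC m)"
  unfolding closedF_def by blast

definition subF :: "('o,'a,'g) vfun \<Rightarrow> ('o \<Rightarrow> nat set) \<Rightarrow> ('o,'a,'g) vfun" where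
  "subF F S = (\<lambda>x\<in>Ob. subobj (fst F x) (S x), \<lambda>m\<in>Mo. restrict (Fm F m) (S (mD m)))"

lemma subF_simps[simp]: "x \<in> Ob \<Longrightarrow> Car (subF F S) x = S x" "x \<in> Ob \<Longrightarrow> Pt (subF F S) x = Pt F x"
  "x \<in> Ob \<Longrightarrow> g \<in> carrier G \<Longrightarrow> v \<in> S x \<Longrightarrow> Act (subF F S) x g v = Act F x g v"
  "m \<in> Mo \<Longrightarrow> v \<in> S (mD m) \<Longrightarrow> Fm (subF F S) m v = Fm F m v"
  by (auto simp: subF_def)

lemma subF_vfun: assumes F: "is_vfunctor G M F" and S: "closedF F S" shows "is_vfunctor G M (subF F S)"
proof (rule vfunI)
  show "fst (subF F S) \<in> extensional Ob" "snd (subF F S) \<in> extensional Mo" by (auto simp: subF_def)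
  fix x assume x: "x \<in> Ob"
  show "vect_obj G (fst (subF F S) x)" using x subobj_vo[OF vfun_obj[OF F x] closedF_sub[OF S x] closedF_pt[OF S x]]
      closedF_act[OF S x] by (simp add: subF_def)
  show "Fm (subF F S) (cId M x) = (\<lambda>v\<in>Car (subF F S) x. v)"
    using x M_id[OF x] vfun_id[OF F x] closedF_sub[OF S x] by (auto simp: subF_def Int_absorb1)
next
  fix m assume m: "m \<in> Mo"
  have d: "mD m \<in> Ob" "mC m \<in> Ob" using M_dc[OF m] by auto
  have vo: "vect_obj G (fst (subF F S) (mD m))"
    using d subobj_vo[OF vfun_obj[OF F d(1)] closedF_sub[OF S d(1)] closedF_pt[OF S d(1)]]
      closedF_act[OF S d(1)] by (simp add: subF_def)
  show "vect_mor G (fst (subF F S) (mD m)) (fst (subF F S) (mC m)) (Fm (subF F S) m)"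
  proof (rule vect_morI[OF vo])
    show "\<And>v. v \<in> vcar (fst (subF F S) (mD m)) \<Longrightarrow> Fm (subF F S) m v \<in> vcar (fst (subF F S) (mC m))"
      using d m closedF_mor[OF S m] by simp
    show "Fm (subF F S) m \<in> extensional (vcar (fst (subF F S) (mD m)))" using d m by (simp add: subF_def)
    show "Fm (subF F S) m (vpt (fst (subF F S) (mD m))) = vpt (fst (subF F S) (mC m))"
      using d m closedF_pt[OF S d(1)] vfun_pt[OF F m] by simp
    show "\<And>g v. g \<in> carrier G \<Longrightarrow> v \<in> vcar (fst (subF F S) (mD m)) \<Longrightarrow>
      Fm (subF F S) m (vact (fst (subF F S) (mD m)) g v) = vact (fst (subF F S) (mC m)) g (Fm (subF F S) m v)"
      using d m closedF_act[OF S] closedF_mor[OF S m] vfun_eq[OF F m] closedF_sub[OF S d(1)] by auto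
    show "\<And>v1 v2. v1 \<in> vcar (fst (subF F S) (mD m)) \<Longrightarrow> v2 \<in> vcar (fst (subF F S) (mD m)) \<Longrightarrow>
      Fm (subF F S) m v1 = Fm (subF F S) m v2 \<Longrightarrow> Fm (subF F S) m v1 \<noteq> vpt (fst (subF F S) (mC m)) \<Longrightarrow> v1 = v2"
      using d m vfun_inj[OF F m] closedF_sub[OF S d(1)] by auto
  qed
next
  fix f g v assume a: "f \<in> Mo" "g \<in> Mo" "mC f = mD g" "v \<in> Car (subF F S) (mD f)"
  have c: "cComp M g f \<in> Mo" "mD (cComp M g f) = mD f" using M_comp[OF a(1-3)] by auto
  have v: "v \<in> S (mD f)" using a(4) M_dc[OF a(1)] by simp
  show "Fm (subF F S) (cComp M g f) v = Fm (subF F S) g (Fm (subF F S) f v)"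
    using c v a closedF_mor[OF S a(1) v] vfun_comp[OF F a(1-3)] closedF_sub[OF S] M_dc[OF a(1)] by auto
qed

definition inclF :: "('o,'a,'g) vfun \<Rightarrow> ('o \<Rightarrow> nat set) \<Rightarrow> ('o,'a,'g) vnat" where
  "inclF F S = (subF F S, F, \<lambda>x\<in>Ob. \<lambda>v\<in>S x. v)"

lemma inclF_simps[simp]: "Dm (inclF F S) = subF F S" "Cd (inclF F S) = F"
  "x \<in> Ob \<Longrightarrow> v \<in> S x \<Longrightarrow> Ap (inclF F S) x v = v"
  by (auto simp: inclF_def)

lemma inclF_vnat: assumes F: "is_vfunctor G M F" and S: "closedF F S" shows "is_vnat G M (inclF F S)"
proof (rule vnatI)
  show "is_vfunctor G M (Dm (inclF F S))" using subF_vfun[OF F S] by simp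
  show "is_vfunctor G M (Cd (inclF F S))" using F by simp
  show "snd (snd (inclF F S)) \<in> extensional Ob" by (simp add: inclF_def)
  fix x assume x: "x \<in> Ob"
  have vo: "vect_obj G (fst (Dm (inclF F S)) x)" using vfun_obj[OF subF_vfun[OF F S] x] by simp
  show "vect_mor G (fst (Dm (inclF F S)) x) (fst (Cd (inclF F S)) x) (Ap (inclF F S) x)"
  proof (rule vect_morI[OF vo])
    show "Ap (inclF F S) x \<in> extensional (vcar (fst (Dm (inclF F S)) x))" using x by (simp add: inclF_def)
  qed (use x closedF_sub[OF S x] closedF_pt[OF S x] closedF_act[OF S x] in auto)
next
  fix f v assume a: "f \<in> Mo" "v \<in> Car (Dm (inclF F S)) (mD f)"
  thus "Ap (inclF F S) (mC f) (Fm (Dm (inclF F S)) f v) = Fm (Cd (inclF F S)) f (Ap (inclF F S) (mD f) v)"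
    using M_dc[OF a(1)] closedF_mor[OF S a(1)] by simp
qed

definition zmap :: "('o,'a,'g) vfun \<Rightarrow> ('o,'a,'g) vfun \<Rightarrow> ('o,'a,'g) vnat" where
  "zmap F H = (F, H, \<lambda>x\<in>Ob. \<lambda>v\<in>Car F x. Pt H x)"

lemma zmap_simps[simp]: "Dm (zmap F H) = F" "Cd (zmap F H) = H"
  "x \<in> Ob \<Longrightarrow> v \<in> Car F x \<Longrightarrow> Ap (zmap F H) x v = Pt H x"
  by (auto simp: zmap_def)

lemma zmap_vnat: assumes F: "is_vfunctor G M F" and H: "is_vfunctor G M H" shows "is_vnat G M (zmap F H)"
proof (rule vnatI)
  show "snd (snd (zmap F H)) \<in> extensional Ob" by (simp add: zmap_def)
  fix x assume x: "x \<in> Ob"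
  show "vect_mor G (fst (Dm (zmap F H)) x) (fst (Cd (zmap F H)) x) (Ap (zmap F H) x)"
  proof (rule vect_morI)
    show "Ap (zmap F H) x \<in> extensional (vcar (fst (Dm (zmap F H)) x))" using x by (simp add: zmap_def)
  qed (use x vfun_obj[OF F x] vfun_ptin[OF F x] vfun_ptin[OF H x] vfun_actin[OF F x] vfun_actpt[OF H x] in auto)
next
  fix f v assume a: "f \<in> Mo" "v \<in> Car (Dm (zmap F H)) (mD f)"
  thus "Ap (zmap F H) (mC f) (Fm (Dm (zmap F H)) f v) = Fm (Cd (zmap F H)) f (Ap (zmap F H) (mD f) v)"
    using M_dc[OF a(1)] vfun_in[OF F a(1)] vfun_pt[OF H a(1)] by simp
qed (use F H in auto)

lemma mono_iff: "mono FV t \<longleftrightarrow> is_vnat G M t \<and> (\<forall>x\<in>Ob. inj_on (Ap t x) (Car (Dm t) x))"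
proof
  assume a: "is_vnat G M t \<and> (\<forall>x\<in>Ob. inj_on (Ap t x) (Car (Dm t) x))"
  show "mono FV t" unfolding mono_def
  proof (intro conjI ballI impI)
    show "t \<in> cMor FV" using a by simp
    fix g h assume gh: "g \<in> cMor FV" "h \<in> cMor FV" "cCod FV g = cDom FV t \<and> cCod FV h = cDom FV t \<and>
        cDom FV g = cDom FV h \<and> cComp FV t g = cComp FV t h"
    have g: "is_vnat G M g" "is_vnat G M h" "Cd g = Dm t" "Cd h = Dm t" "Dm g = Dm h" using gh by auto
    show "g = h"
    proof (rule vnat_eqI[OF g(1,2,5)])
      show "Cd g = Cd h" using g by simp
      fix x v assume xv: "x \<in> Ob" "v \<in> Car (Dm g) x"
      have "Ap (cComp FV t g) x v = Ap (cComp FV t h) x v" using gh by simp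
      hence "Ap t x (Ap g x v) = Ap t x (Ap h x v)" using xv g(5) by simp
      moreover have "Ap g x v \<in> Car (Dm t) x" "Ap h x v \<in> Car (Dm t) x"
        using vnat_in[OF g(1) xv] vnat_in[OF g(2) xv(1)] xv g by auto
      ultimately show "Ap g x v = Ap h x v" using a xv(1) by (meson inj_onD)
    qed
  qed
next
  assume m: "mono FV t"
  hence t: "is_vnat G M t" by (simp add: mono_def)
  define F where "F = Dm t"
  have F: "is_vfunctor G M F" using vnat_D1[OF t] F_def by simp
  define K where "K = (\<lambda>x. {v \<in> Car F x. Ap t x v = Pt (Cd t) x})"
  have K: "closedF F K"
  proof (rule closedFI)
    show "\<And>x. x \<in> Ob \<Longrightarrow> K x \<subseteq> Car F x" by (auto simp: K_def)
    show "\<And>x. x \<in> Ob \<Longrightarrow> Pt F x \<in> K x" using vfun_ptin[OF F] vnat_pt[OF t] by (auto simp: K_def F_def)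
    show "\<And>x g v. x \<in> Ob \<Longrightarrow> g \<in> carrier G \<Longrightarrow> v \<in> K x \<Longrightarrow> Act F x g v \<in> K x"
      using vfun_actin[OF F] vnat_eq[OF t] vfun_actpt[OF vnat_D2[OF t]] by (auto simp: K_def F_def)
    show "\<And>m v. m \<in> Mo \<Longrightarrow> v \<in> K (mD m) \<Longrightarrow> Fm F m v \<in> K (mC m)"
      using vfun_in[OF F] vnat_nat[OF t] vfun_pt[OF vnat_D2[OF t]] by (auto simp: K_def F_def)
  qed
  have i: "is_vnat G M (inclF F K)" using inclF_vnat[OF F K] .
  have z: "is_vnat G M (zmap (subF F K) F)" using zmap_vnat[OF subF_vfun[OF F K] F] .
  have c1: "is_vnat G M (cComp FV t (inclF F K))" using comp_vnat[OF t i] F_def by simp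
  have c2: "is_vnat G M (cComp FV t (zmap (subF F K) F))" using comp_vnat[OF t z] F_def by simp
  have "cComp FV t (inclF F K) = cComp FV t (zmap (subF F K) F)"
  proof (rule vnat_eqI[OF c1 c2])
    fix x v assume xv: "x \<in> Ob" "v \<in> Car (Dm (cComp FV t (inclF F K))) x"
    hence v: "v \<in> K x" by simp
    show "Ap (cComp FV t (inclF F K)) x v = Ap (cComp FV t (zmap (subF F K) F)) x v"
      using xv v vnat_pt[OF t xv(1)] by (simp add: K_def F_def)
  qed simp_all
  hence eq: "inclF F K = zmap (subF F K) F" using monoD[OF m] i z F_def by simp
  have kz: "\<And>x v. x \<in> Ob \<Longrightarrow> v \<in> K x \<Longrightarrow> v = Pt F x"
  proof -
    fix x v assume xv: "x \<in> Ob" "v \<in> K x"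
    have "Ap (inclF F K) x v = Ap (zmap (subF F K) F) x v" using eq by simp
    thus "v = Pt F x" using xv by simp
  qed
  show "is_vnat G M t \<and> (\<forall>x\<in>Ob. inj_on (Ap t x) (Car (Dm t) x))"
  proof (intro conjI ballI inj_onI t)
    fix x v1 v2 assume a: "x \<in> Ob" "v1 \<in> Car (Dm t) x" "v2 \<in> Car (Dm t) x" "Ap t x v1 = Ap t x v2"
    show "v1 = v2"
    proof (cases "Ap t x v1 = Pt (Cd t) x")
      case True
      hence "v1 \<in> K x" "v2 \<in> K x" using a by (auto simp: K_def F_def)
      thus ?thesis using kz a(1) by metis
    next
      case False
      thus ?thesis using vnat_inj[OF t a(1-4)] by simp
    qed
  qed
qed

end


context fv begin

definition QC :: "('o,'a,'g) vfun \<Rightarrow> ('o \<Rightarrow> nat set) \<Rightarrow> 'o \<Rightarrow> nat set" where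
  "QC F I x = Car F x - I x \<union> {Pt F x}"

definition quotF :: "('o,'a,'g) vfun \<Rightarrow> ('o \<Rightarrow> nat set) \<Rightarrow> ('o,'a,'g) vfun" where
  "quotF F I = (\<lambda>x\<in>Ob. subobj (fst F x) (QC F I x),
     \<lambda>m\<in>Mo. \<lambda>v\<in>QC F I (mD m). if Fm F m v \<in> I (mC m) then Pt F (mC m) else Fm F m v)"

lemma quotF_simps[simp]: "x \<in> Ob \<Longrightarrow> Car (quotF F I) x = QC F I x" "x \<in> Ob \<Longrightarrow> Pt (quotF F I) x = Pt F x"
  "x \<in> Ob \<Longrightarrow> g \<in> carrier G \<Longrightarrow> v \<in> QC F I x \<Longrightarrow> Act (quotF F I) x g v = Act F x g v"
  "m \<in> Mo \<Longrightarrow> v \<in> QC F I (mD m) \<Longrightarrow> Fm (quotF F I) m v = (if Fm F m v \<in> I (mC m) then Pt F (mC m) else Fm F m v)"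
  by (auto simp: quotF_def)

lemma I_act_iff: assumes F: "is_vfunctor G M F" and I: "closedF F I" and x: "x \<in> Ob" and g: "g \<in> carrier G"
  and v: "v \<in> Car F x" shows "Act F x g v \<in> I x \<longleftrightarrow> v \<in> I x"
proof
  assume "Act F x g v \<in> I x"
  hence "Act F x (inv\<^bsub>G\<^esub> g) (Act F x g v) \<in> I x" using closedF_act[OF I x] grp g by (simp add: group.inv_closed)
  thus "v \<in> I x" using vo_inv[OF vfun_obj[OF F x] g v] by simp
qed (use closedF_act[OF I x g] in auto)

lemma QC_sub: "is_vfunctor G M F \<Longrightarrow> x \<in> Ob \<Longrightarrow> QC F I x \<subseteq> Car F x"
  using vfun_ptin by (auto simp: QC_def)
lemma QC_pt: "Pt F x \<in> QC F I x" by (simp add: QC_def)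
lemma QC_act: assumes F: "is_vfunctor G M F" and I: "closedF F I" and x: "x \<in> Ob" and g: "g \<in> carrier G"
  and v: "v \<in> QC F I x" shows "Act F x g v \<in> QC F I x"
proof (cases "v = Pt F x")
  case True thus ?thesis using vfun_actpt[OF F x g] QC_pt by simp
next
  case False
  hence "v \<in> Car F x" "v \<notin> I x" using v by (auto simp: QC_def)
  thus ?thesis using I_act_iff[OF F I x g] vfun_actin[OF F x g] by (auto simp: QC_def)
qed
lemma QC_I: "closedF F I \<Longrightarrow> x \<in> Ob \<Longrightarrow> v \<in> QC F I x \<Longrightarrow> v \<in> I x \<Longrightarrow> v = Pt F x"
  by (auto simp: QC_def)

lemma quotF_vfun: assumes F: "is_vfunctor G M F" and I: "closedF F I" shows "is_vfunctor G M (quotF F I)"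
proof (rule vfunI)
  show "fst (quotF F I) \<in> extensional Ob" "snd (quotF F I) \<in> extensional Mo" by (auto simp: quotF_def)
  fix x assume x: "x \<in> Ob"
  show "vect_obj G (fst (quotF F I) x)" using x subobj_vo[OF vfun_obj[OF F x] QC_sub[OF F x] QC_pt]
      QC_act[OF F I x] by (simp add: quotF_def)
  have "\<And>v. v \<in> QC F I x \<Longrightarrow> Fm (quotF F I) (cId M x) v = v"
    using x M_id[OF x] vfun_id[OF F x] QC_sub[OF F x] QC_I[OF I x] by auto
  thus "Fm (quotF F I) (cId M x) = (\<lambda>v\<in>Car (quotF F I) x. v)"
    using x M_id[OF x] by (auto simp: quotF_def)
next
  fix m assume m: "m \<in> Mo"
  have d: "mD m \<in> Ob" "mC m \<in> Ob" using M_dc[OF m] by auto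
  have vo: "vect_obj G (fst (quotF F I) (mD m))"
    using d subobj_vo[OF vfun_obj[OF F d(1)] QC_sub[OF F d(1)] QC_pt] QC_act[OF F I d(1)] by (simp add: quotF_def)
  have inQ: "\<And>v. v \<in> QC F I (mD m) \<Longrightarrow> Fm (quotF F I) m v \<in> QC F I (mC m)"
    using m vfun_in[OF F m] QC_sub[OF F d(1)] by (auto simp: QC_def)
  show "vect_mor G (fst (quotF F I) (mD m)) (fst (quotF F I) (mC m)) (Fm (quotF F I) m)"
  proof (rule vect_morI[OF vo])
    show "\<And>v. v \<in> vcar (fst (quotF F I) (mD m)) \<Longrightarrow> Fm (quotF F I) m v \<in> vcar (fst (quotF F I) (mC m))"
      using d inQ by simp
    show "Fm (quotF F I) m \<in> extensional (vcar (fst (quotF F I) (mD m)))" using d m by (simp add: quotF_def)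
    show "Fm (quotF F I) m (vpt (fst (quotF F I) (mD m))) = vpt (fst (quotF F I) (mC m))"
      using d m QC_pt vfun_pt[OF F m] by simp
  next
    fix g v assume gv: "g \<in> carrier G" "v \<in> vcar (fst (quotF F I) (mD m))"
    hence v: "v \<in> QC F I (mD m)" using d by simp
    hence vc: "v \<in> Car F (mD m)" using QC_sub[OF F d(1)] by auto
    have av: "Act F (mD m) g v \<in> QC F I (mD m)" using QC_act[OF F I d(1) gv(1) v] .
    have e: "Fm F m (Act F (mD m) g v) = Act F (mC m) g (Fm F m v)" using vfun_eq[OF F m gv(1) vc] .
    have fi: "Fm F m v \<in> Car F (mC m)" using vfun_in[OF F m vc] .
    show "Fm (quotF F I) m (vact (fst (quotF F I) (mD m)) g v) = vact (fst (quotF F I) (mC m)) g (Fm (quotF F I) m v)"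
    proof (cases "Fm F m v \<in> I (mC m)")
      case True
      thus ?thesis using d m v av e gv(1) I_act_iff[OF F I d(2) gv(1) fi] QC_pt vfun_actpt[OF F d(2) gv(1)] by simp
    next
      case False
      hence "Fm F m v \<in> QC F I (mC m)" using fi by (simp add: QC_def)
      thus ?thesis using False d m v av e gv(1) I_act_iff[OF F I d(2) gv(1) fi] by simp
    qed
  next
    fix v1 v2 assume a: "v1 \<in> vcar (fst (quotF F I) (mD m))" "v2 \<in> vcar (fst (quotF F I) (mD m))"
      "Fm (quotF F I) m v1 = Fm (quotF F I) m v2" "Fm (quotF F I) m v1 \<noteq> vpt (fst (quotF F I) (mC m))"
    hence v: "v1 \<in> QC F I (mD m)" "v2 \<in> QC F I (mD m)" using d by auto
    hence vc: "v1 \<in> Car F (mD m)" "v2 \<in> Car F (mD m)" using QC_sub[OF F d(1)] by auto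
    have q1: "Fm (quotF F I) m v1 = (if Fm F m v1 \<in> I (mC m) then Pt F (mC m) else Fm F m v1)"
      using quotF_simps(4)[OF m v(1)] .
    have q2: "Fm (quotF F I) m v2 = (if Fm F m v2 \<in> I (mC m) then Pt F (mC m) else Fm F m v2)"
      using quotF_simps(4)[OF m v(2)] .
    have p: "vpt (fst (quotF F I) (mC m)) = Pt F (mC m)" using quotF_simps(2)[OF d(2)] .
    have n1: "Fm F m v1 \<notin> I (mC m)"
    proof
      assume "Fm F m v1 \<in> I (mC m)"
      hence "Fm (quotF F I) m v1 = Pt F (mC m)" using q1 by simp
      thus False using a(4) p by simp
    qed
    have n2: "Fm F m v2 \<notin> I (mC m)"
    proof
      assume "Fm F m v2 \<in> I (mC m)"
      hence "Fm (quotF F I) m v2 = Pt F (mC m)" using q2 by simp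
      thus False using a(3,4) p by simp
    qed
    have "Fm F m v1 = Fm F m v2" "Fm F m v1 \<noteq> Pt F (mC m)" using a(3,4) n1 n2 q1 q2 p by auto
    thus "v1 = v2" using vfun_inj[OF F m vc] by blast
  qed
next
  fix f g v assume a: "f \<in> Mo" "g \<in> Mo" "mC f = mD g" "v \<in> Car (quotF F I) (mD f)"
  have c: "cComp M g f \<in> Mo" "mD (cComp M g f) = mD f" "mC (cComp M g f) = mC g" using M_comp[OF a(1-3)] by auto
  have v: "v \<in> QC F I (mD f)" using a(4) M_dc[OF a(1)] by simp
  have vc: "v \<in> Car F (mD f)" using QC_sub[OF F _ ] M_dc[OF a(1)] v by auto
  have fv: "Fm F f v \<in> Car F (mC f)" using vfun_in[OF F a(1) vc] .
  have comp: "Fm F (cComp M g f) v = Fm F g (Fm F f v)" using vfun_comp[OF F a(1-3) vc] .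
  show "Fm (quotF F I) (cComp M g f) v = Fm (quotF F I) g (Fm (quotF F I) f v)"
  proof (cases "Fm F f v \<in> I (mC f)")
    case True
    have "Fm F g (Fm F f v) \<in> I (mC g)" using closedF_mor[OF I a(2)] True a(3) by simp
    thus ?thesis using True c v comp a QC_pt vfun_pt[OF F a(2)] closedF_pt[OF I] M_dc[OF a(2)] by simp
  next
    case False
    hence "Fm F f v \<in> QC F I (mD g)" using fv a(3) by (simp add: QC_def)
    thus ?thesis using False c v comp a by simp
  qed
qed

definition qmap :: "('o,'a,'g) vfun \<Rightarrow> ('o \<Rightarrow> nat set) \<Rightarrow> ('o,'a,'g) vnat" where
  "qmap F I = (F, quotF F I, \<lambda>x\<in>Ob. \<lambda>v\<in>Car F x. if v \<in> I x then Pt F x else v)"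

lemma qmap_simps[simp]: "Dm (qmap F I) = F" "Cd (qmap F I) = quotF F I"
  "x \<in> Ob \<Longrightarrow> v \<in> Car F x \<Longrightarrow> Ap (qmap F I) x v = (if v \<in> I x then Pt F x else v)"
  by (auto simp: qmap_def)

lemma qmap_vnat: assumes F: "is_vfunctor G M F" and I: "closedF F I" shows "is_vnat G M (qmap F I)"
proof (rule vnatI)
  show "is_vfunctor G M (Dm (qmap F I))" using F by simp
  show "is_vfunctor G M (Cd (qmap F I))" using quotF_vfun[OF F I] by simp
  show "snd (snd (qmap F I)) \<in> extensional Ob" by (simp add: qmap_def)
  fix x assume x: "x \<in> Ob"
  show "vect_mor G (fst (Dm (qmap F I)) x) (fst (Cd (qmap F I)) x) (Ap (qmap F I) x)"
  proof (rule vect_morI)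
    show "vect_obj G (fst (Dm (qmap F I)) x)" using vfun_obj[OF F x] by simp
    show "Ap (qmap F I) x \<in> extensional (vcar (fst (Dm (qmap F I)) x))" using x by (simp add: qmap_def)
    show "\<And>v. v \<in> vcar (fst (Dm (qmap F I)) x) \<Longrightarrow> Ap (qmap F I) x v \<in> vcar (fst (Cd (qmap F I)) x)"
      using x by (auto simp: QC_def)
    show "Ap (qmap F I) x (vpt (fst (Dm (qmap F I)) x)) = vpt (fst (Cd (qmap F I)) x)"
      using x vfun_ptin[OF F x] by simp
  next
    fix g v assume gv: "g \<in> carrier G" "v \<in> vcar (fst (Dm (qmap F I)) x)"
    hence v: "v \<in> Car F x" by simp
    show "Ap (qmap F I) x (vact (fst (Dm (qmap F I)) x) g v) = vact (fst (Cd (qmap F I)) x) g (Ap (qmap F I) x v)"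
    proof (cases "v \<in> I x")
      case True thus ?thesis using x gv v I_act_iff[OF F I x gv(1) v] vfun_actin[OF F x gv(1) v] QC_pt
          vfun_actpt[OF F x gv(1)] by simp
    next
      case False
      hence "v \<in> QC F I x" using v by (simp add: QC_def)
      thus ?thesis using False x gv v I_act_iff[OF F I x gv(1) v] vfun_actin[OF F x gv(1) v] by simp
    qed
  next
    fix v1 v2 assume a: "v1 \<in> vcar (fst (Dm (qmap F I)) x)" "v2 \<in> vcar (fst (Dm (qmap F I)) x)"
      "Ap (qmap F I) x v1 = Ap (qmap F I) x v2" "Ap (qmap F I) x v1 \<noteq> vpt (fst (Cd (qmap F I)) x)"
    thus "v1 = v2" using x by (auto split: if_splits)
  qed
next
  fix f v assume a: "f \<in> Mo" "v \<in> Car (Dm (qmap F I)) (mD f)"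
  have d: "mD f \<in> Ob" "mC f \<in> Ob" using M_dc[OF a(1)] by auto
  have v: "v \<in> Car F (mD f)" using a by simp
  have fv: "Fm F f v \<in> Car F (mC f)" using vfun_in[OF F a(1) v] .
  show "Ap (qmap F I) (mC f) (Fm (Dm (qmap F I)) f v) = Fm (Cd (qmap F I)) f (Ap (qmap F I) (mD f) v)"
  proof (cases "v \<in> I (mD f)")
    case True
    thus ?thesis using d a(1) v fv closedF_mor[OF I a(1) True] QC_pt vfun_pt[OF F a(1)] closedF_pt[OF I d(2)] by simp
  next
    case False
    hence "v \<in> QC F I (mD f)" using v by (simp add: QC_def)
    thus ?thesis using False d a(1) v fv by simp
  qed
qed

lemma epi_iff: "epi FV t \<longleftrightarrow> is_vnat G M t \<and> (\<forall>x\<in>Ob. Ap t x ` Car (Dm t) x = Car (Cd t) x)"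
proof
  assume a: "is_vnat G M t \<and> (\<forall>x\<in>Ob. Ap t x ` Car (Dm t) x = Car (Cd t) x)"
  show "epi FV t" unfolding epi_def
  proof (intro conjI ballI impI)
    show "t \<in> cMor FV" using a by simp
    fix g h assume gh: "g \<in> cMor FV" "h \<in> cMor FV" "cDom FV g = cCod FV t \<and> cDom FV h = cCod FV t \<and>
        cCod FV g = cCod FV h \<and> cComp FV g t = cComp FV h t"
    have g: "is_vnat G M g" "is_vnat G M h" "Dm g = Cd t" "Dm h = Cd t" "Cd g = Cd h" using gh by auto
    show "g = h"
    proof (rule vnat_eqI[OF g(1,2)])
      show "Dm g = Dm h" using g by simp
      fix x w assume xw: "x \<in> Ob" "w \<in> Car (Dm g) x"
      have "w \<in> Ap t x ` Car (Dm t) x" using a xw(1) xw(2) g(3) by simp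
      then obtain v where v: "v \<in> Car (Dm t) x" "w = Ap t x v" by blast
      have "Ap (cComp FV g t) x v = Ap (cComp FV h t) x v" using gh by simp
      thus "Ap g x w = Ap h x w" using xw v by simp
    qed (use g in simp)
  qed
next
  assume e: "epi FV t"
  hence t: "is_vnat G M t" by (simp add: epi_def)
  define H where "H = Cd t"
  have H: "is_vfunctor G M H" using vnat_D2[OF t] H_def by simp
  define I where "I = (\<lambda>x. Ap t x ` Car (Dm t) x)"
  have I: "closedF H I"
  proof (rule closedFI)
    show "\<And>x. x \<in> Ob \<Longrightarrow> I x \<subseteq> Car H x" using vnat_in[OF t] by (auto simp: I_def H_def)
    show "\<And>x. x \<in> Ob \<Longrightarrow> Pt H x \<in> I x"
    proof -
      fix x assume x: "x \<in> Ob"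
      have "Ap t x (Pt (Dm t) x) \<in> I x" unfolding I_def using vfun_ptin[OF vnat_D1[OF t] x] by (rule imageI)
      thus "Pt H x \<in> I x" using vnat_pt[OF t x] H_def by simp
    qed
    show "\<And>x g v. x \<in> Ob \<Longrightarrow> g \<in> carrier G \<Longrightarrow> v \<in> I x \<Longrightarrow> Act H x g v \<in> I x"
    proof -
      fix x g v assume a: "x \<in> Ob" "g \<in> carrier G" "v \<in> I x"
      then obtain u where u: "u \<in> Car (Dm t) x" "v = Ap t x u" by (auto simp: I_def)
      have "Ap t x (Act (Dm t) x g u) \<in> I x" unfolding I_def using vfun_actin[OF vnat_D1[OF t] a(1,2) u(1)] by (rule imageI)
      thus "Act H x g v \<in> I x" using vnat_eq[OF t a(1,2) u(1)] u(2) H_def by simp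
    qed
    show "\<And>m v. m \<in> Mo \<Longrightarrow> v \<in> I (mD m) \<Longrightarrow> Fm H m v \<in> I (mC m)"
    proof -
      fix m v assume a: "m \<in> Mo" "v \<in> I (mD m)"
      then obtain u where u: "u \<in> Car (Dm t) (mD m)" "v = Ap t (mD m) u" by (auto simp: I_def)
      have "Ap t (mC m) (Fm (Dm t) m u) \<in> I (mC m)" unfolding I_def using vfun_in[OF vnat_D1[OF t] a(1) u(1)] by (rule imageI)
      thus "Fm H m v \<in> I (mC m)" using vnat_nat[OF t a(1) u(1)] u(2) H_def by simp
    qed
  qed
  have q: "is_vnat G M (qmap H I)" using qmap_vnat[OF H I] .
  have z: "is_vnat G M (zmap H (quotF H I))" using zmap_vnat[OF H quotF_vfun[OF H I]] .
  have c1: "is_vnat G M (cComp FV (qmap H I) t)" using comp_vnat[OF q t] H_def by simp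
  have c2: "is_vnat G M (cComp FV (zmap H (quotF H I)) t)" using comp_vnat[OF z t] H_def by simp
  have "cComp FV (qmap H I) t = cComp FV (zmap H (quotF H I)) t"
  proof (rule vnat_eqI[OF c1 c2])
    fix x v assume xv: "x \<in> Ob" "v \<in> Car (Dm (cComp FV (qmap H I) t)) x"
    hence v: "v \<in> Car (Dm t) x" by simp
    have "Ap t x v \<in> I x" using v by (simp add: I_def)
    thus "Ap (cComp FV (qmap H I) t) x v = Ap (cComp FV (zmap H (quotF H I)) t) x v"
      using xv v vnat_in[OF t xv(1) v] H_def by simp
  qed simp_all
  hence eq: "qmap H I = zmap H (quotF H I)" using epiD[OF e] q z H_def by simp
  show "is_vnat G M t \<and> (\<forall>x\<in>Ob. Ap t x ` Car (Dm t) x = Car (Cd t) x)"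
  proof (intro conjI ballI t)
    fix x assume x: "x \<in> Ob"
    show "Ap t x ` Car (Dm t) x = Car (Cd t) x"
    proof
      show "Ap t x ` Car (Dm t) x \<subseteq> Car (Cd t) x" using vnat_in[OF t x] by auto
      show "Car (Cd t) x \<subseteq> Ap t x ` Car (Dm t) x"
      proof
        fix w assume w: "w \<in> Car (Cd t) x"
        have "Ap (qmap H I) x w = Ap (zmap H (quotF H I)) x w" using eq by simp
        hence "w \<in> I x \<or> w = Pt H x" using x w H_def by (simp split: if_splits)
        thus "w \<in> Ap t x ` Car (Dm t) x" using closedF_pt[OF I x] unfolding I_def by blast
      qed
    qed
  qed
qed

end


context fv begin

definition liftN :: "('o,'a,'g) vnat \<Rightarrow> ('o,'a,'g) vnat \<Rightarrow> ('o,'a,'g) vnat" where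
  "liftN i f = (Dm f, Dm i, \<lambda>x\<in>Ob. \<lambda>v\<in>Car (Dm f) x. inv_into (Car (Dm i) x) (Ap i x) (Ap f x v))"

lemma liftN_simps[simp]: "Dm (liftN i f) = Dm f" "Cd (liftN i f) = Dm i"
  "x \<in> Ob \<Longrightarrow> v \<in> Car (Dm f) x \<Longrightarrow> Ap (liftN i f) x v = inv_into (Car (Dm i) x) (Ap i x) (Ap f x v)"
  by (auto simp: liftN_def)

context fixes i f assumes i: "is_vnat G M i" and f: "is_vnat G M f" and cd: "Cd f = Cd i"
  and inj: "\<And>x. x \<in> Ob \<Longrightarrow> inj_on (Ap i x) (Car (Dm i) x)"
  and img: "\<And>x v. x \<in> Ob \<Longrightarrow> v \<in> Car (Dm f) x \<Longrightarrow> Ap f x v \<in> Ap i x ` Car (Dm i) x"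
begin

lemma lift_in: "x \<in> Ob \<Longrightarrow> v \<in> Car (Dm f) x \<Longrightarrow> Ap (liftN i f) x v \<in> Car (Dm i) x"
  using img by (simp add: inv_into_into)
lemma lift_ap: "x \<in> Ob \<Longrightarrow> v \<in> Car (Dm f) x \<Longrightarrow> Ap i x (Ap (liftN i f) x v) = Ap f x v"
  using img by (simp add: f_inv_into_f)
lemma i_eq: "x \<in> Ob \<Longrightarrow> a \<in> Car (Dm i) x \<Longrightarrow> b \<in> Car (Dm i) x \<Longrightarrow> Ap i x a = Ap i x b \<Longrightarrow> a = b"
  using inj inj_onD by metis

lemma lift_vnat: "is_vnat G M (liftN i f)"
proof (rule vnatI)
  show "is_vfunctor G M (Dm (liftN i f))" using vnat_D1[OF f] by simp
  show "is_vfunctor G M (Cd (liftN i f))" using vnat_D1[OF i] by simp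
  show "snd (snd (liftN i f)) \<in> extensional Ob" by (simp add: liftN_def)
  fix x assume x: "x \<in> Ob"
  have F: "is_vfunctor G M (Dm f)" using vnat_D1[OF f] .
  have A: "is_vfunctor G M (Dm i)" using vnat_D1[OF i] .
  show "vect_mor G (fst (Dm (liftN i f)) x) (fst (Cd (liftN i f)) x) (Ap (liftN i f) x)"
  proof (rule vect_morI)
    show "vect_obj G (fst (Dm (liftN i f)) x)" using vfun_obj[OF F x] by simp
    show "\<And>v. v \<in> vcar (fst (Dm (liftN i f)) x) \<Longrightarrow> Ap (liftN i f) x v \<in> vcar (fst (Cd (liftN i f)) x)"
      using lift_in x by simp
    show "Ap (liftN i f) x \<in> extensional (vcar (fst (Dm (liftN i f)) x))" using x by (simp add: liftN_def)
    have p: "Pt (Dm f) x \<in> Car (Dm f) x" using vfun_ptin[OF F x] .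
    have "Ap i x (Ap (liftN i f) x (Pt (Dm f) x)) = Ap i x (Pt (Dm i) x)"
      using lift_ap[OF x p] vnat_pt[OF f x] vnat_pt[OF i x] cd by simp
    thus "Ap (liftN i f) x (vpt (fst (Dm (liftN i f)) x)) = vpt (fst (Cd (liftN i f)) x)"
      using i_eq[OF x lift_in[OF x p] vfun_ptin[OF A x]] by simp
  next
    fix g v assume gv: "g \<in> carrier G" "v \<in> vcar (fst (Dm (liftN i f)) x)"
    hence v: "v \<in> Car (Dm f) x" by simp
    have gv': "Act (Dm f) x g v \<in> Car (Dm f) x" using vfun_actin[OF F x gv(1) v] .
    have u: "Ap (liftN i f) x v \<in> Car (Dm i) x" using lift_in[OF x v] .
    have "Ap i x (Ap (liftN i f) x (Act (Dm f) x g v)) = Ap i x (Act (Dm i) x g (Ap (liftN i f) x v))"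
      using lift_ap[OF x gv'] vnat_eq[OF f x gv(1) v] vnat_eq[OF i x gv(1) u] lift_ap[OF x v] cd by simp
    thus "Ap (liftN i f) x (vact (fst (Dm (liftN i f)) x) g v) = vact (fst (Cd (liftN i f)) x) g (Ap (liftN i f) x v)"
      using i_eq[OF x lift_in[OF x gv'] vfun_actin[OF A x gv(1) u]] by simp
  next
    fix v1 v2 assume a: "v1 \<in> vcar (fst (Dm (liftN i f)) x)" "v2 \<in> vcar (fst (Dm (liftN i f)) x)"
      "Ap (liftN i f) x v1 = Ap (liftN i f) x v2" "Ap (liftN i f) x v1 \<noteq> vpt (fst (Cd (liftN i f)) x)"
    hence v: "v1 \<in> Car (Dm f) x" "v2 \<in> Car (Dm f) x" by auto
    have e: "Ap f x v1 = Ap f x v2" using lift_ap[OF x v(1)] lift_ap[OF x v(2)] a(3) by metis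
    have "Ap i x (Ap (liftN i f) x v1) \<noteq> Ap i x (Pt (Dm i) x)"
      using a(4) i_eq[OF x lift_in[OF x v(1)] vfun_ptin[OF A x]] by auto
    hence "Ap f x v1 \<noteq> Pt (Cd f) x" using lift_ap[OF x v(1)] vnat_pt[OF i x] cd by simp
    thus "v1 = v2" using vnat_inj[OF f x v e] by simp
  qed
next
  fix m v assume a: "m \<in> Mo" "v \<in> Car (Dm (liftN i f)) (mD m)"
  have d: "mD m \<in> Ob" "mC m \<in> Ob" using M_dc[OF a(1)] by auto
  have v: "v \<in> Car (Dm f) (mD m)" using a by simp
  have fv: "Fm (Dm f) m v \<in> Car (Dm f) (mC m)" using vfun_in[OF vnat_D1[OF f] a(1) v] .
  have u: "Ap (liftN i f) (mD m) v \<in> Car (Dm i) (mD m)" using lift_in[OF d(1) v] .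
  have "Ap i (mC m) (Ap (liftN i f) (mC m) (Fm (Dm f) m v)) = Ap i (mC m) (Fm (Dm i) m (Ap (liftN i f) (mD m) v))"
    using lift_ap[OF d(2) fv] vnat_nat[OF f a(1) v] vnat_nat[OF i a(1) u] lift_ap[OF d(1) v] cd by simp
  thus "Ap (liftN i f) (mC m) (Fm (Dm (liftN i f)) m v) = Fm (Cd (liftN i f)) m (Ap (liftN i f) (mD m) v)"
    using i_eq[OF d(2) lift_in[OF d(2) fv] vfun_in[OF vnat_D1[OF i] a(1) u]] by simp
qed

lemma lift_comp: "cComp FV i (liftN i f) = f"
proof (rule vnat_eqI)
  show "is_vnat G M (cComp FV i (liftN i f))" using comp_vnat[OF i lift_vnat] by simp
  show "Cd (cComp FV i (liftN i f)) = Cd f" using cd by simp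
  fix x v assume "x \<in> Ob" "v \<in> Car (Dm (cComp FV i (liftN i f))) x"
  thus "Ap (cComp FV i (liftN i f)) x v = Ap f x v" using lift_ap by simp
qed (use f in simp_all)

end

definition descN :: "('o,'a,'g) vnat \<Rightarrow> ('o,'a,'g) vnat \<Rightarrow> ('o,'a,'g) vnat" where
  "descN j f = (Cd j, Cd f, \<lambda>x\<in>Ob. \<lambda>c\<in>Car (Cd j) x. Ap f x (inv_into (Car (Dm j) x) (Ap j x) c))"

lemma descN_simps[simp]: "Dm (descN j f) = Cd j" "Cd (descN j f) = Cd f"
  "x \<in> Ob \<Longrightarrow> c \<in> Car (Cd j) x \<Longrightarrow> Ap (descN j f) x c = Ap f x (inv_into (Car (Dm j) x) (Ap j x) c)"
  by (auto simp: descN_def)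

context fixes j f assumes j: "is_vnat G M j" and f: "is_vnat G M f" and dm: "Dm f = Dm j"
  and surj: "\<And>x. x \<in> Ob \<Longrightarrow> Ap j x ` Car (Dm j) x = Car (Cd j) x"
  and compat: "\<And>x a1 a2. x \<in> Ob \<Longrightarrow> a1 \<in> Car (Dm j) x \<Longrightarrow> a2 \<in> Car (Dm j) x \<Longrightarrow>
      Ap j x a1 = Ap j x a2 \<Longrightarrow> Ap f x a1 = Ap f x a2"
  and injc: "\<And>x a1 a2. x \<in> Ob \<Longrightarrow> a1 \<in> Car (Dm j) x \<Longrightarrow> a2 \<in> Car (Dm j) x \<Longrightarrow>
      Ap f x a1 = Ap f x a2 \<Longrightarrow> Ap f x a1 \<noteq> Pt (Cd f) x \<Longrightarrow> Ap j x a1 = Ap j x a2"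
begin

lemma desc_ap: "x \<in> Ob \<Longrightarrow> a \<in> Car (Dm j) x \<Longrightarrow> Ap (descN j f) x (Ap j x a) = Ap f x a"
proof -
  assume x: "x \<in> Ob" and a: "a \<in> Car (Dm j) x"
  have ja: "Ap j x a \<in> Car (Cd j) x" using vnat_in[OF j x a] .
  have im: "Ap j x a \<in> Ap j x ` Car (Dm j) x" using a by blast
  have "Ap j x (inv_into (Car (Dm j) x) (Ap j x) (Ap j x a)) = Ap j x a" using f_inv_into_f[OF im] .
  hence "Ap f x (inv_into (Car (Dm j) x) (Ap j x) (Ap j x a)) = Ap f x a"
    using compat[OF x inv_into_into[OF im] a] by simp
  thus ?thesis using x ja by simp
qed

lemma desc_cases: "x \<in> Ob \<Longrightarrow> c \<in> Car (Cd j) x \<Longrightarrow> (\<And>a. a \<in> Car (Dm j) x \<Longrightarrow> c = Ap j x a \<Longrightarrow> P) \<Longrightarrow> P"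
  using surj by blast

lemma desc_vnat: "is_vnat G M (descN j f)"
proof (rule vnatI)
  have C: "is_vfunctor G M (Cd j)" using vnat_D2[OF j] .
  have A: "is_vfunctor G M (Dm j)" using vnat_D1[OF j] .
  show "is_vfunctor G M (Dm (descN j f))" using C by simp
  show "is_vfunctor G M (Cd (descN j f))" using vnat_D2[OF f] by simp
  show "snd (snd (descN j f)) \<in> extensional Ob" by (simp add: descN_def)
  fix x assume x: "x \<in> Ob"
  show "vect_mor G (fst (Dm (descN j f)) x) (fst (Cd (descN j f)) x) (Ap (descN j f) x)"
  proof (rule vect_morI)
    show "vect_obj G (fst (Dm (descN j f)) x)" using vfun_obj[OF C x] by simp
    show "Ap (descN j f) x \<in> extensional (vcar (fst (Dm (descN j f)) x))" using x by (simp add: descN_def)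
  next
    fix c assume "c \<in> vcar (fst (Dm (descN j f)) x)"
    hence c: "c \<in> Car (Cd j) x" by simp
    show "Ap (descN j f) x c \<in> vcar (fst (Cd (descN j f)) x)"
    proof (rule desc_cases[OF x c])
      fix a assume a: "a \<in> Car (Dm j) x" "c = Ap j x a"
      show ?thesis using desc_ap[OF x a(1)] a(2) vnat_in[OF f x] a(1) dm by simp
    qed
  next
    have "Ap (descN j f) x (Ap j x (Pt (Dm j) x)) = Ap f x (Pt (Dm j) x)" using desc_ap[OF x vfun_ptin[OF A x]] .
    thus "Ap (descN j f) x (vpt (fst (Dm (descN j f)) x)) = vpt (fst (Cd (descN j f)) x)"
      using vnat_pt[OF j x] vnat_pt[OF f x] dm by simp
  next
    fix g c assume gc: "g \<in> carrier G" "c \<in> vcar (fst (Dm (descN j f)) x)"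
    hence c: "c \<in> Car (Cd j) x" by simp
    show "Ap (descN j f) x (vact (fst (Dm (descN j f)) x) g c) = vact (fst (Cd (descN j f)) x) g (Ap (descN j f) x c)"
    proof (rule desc_cases[OF x c])
      fix a assume a: "a \<in> Car (Dm j) x" "c = Ap j x a"
      have ga: "Act (Dm j) x g a \<in> Car (Dm j) x" using vfun_actin[OF A x gc(1) a(1)] .
      show ?thesis using desc_ap[OF x ga] desc_ap[OF x a(1)] vnat_eq[OF j x gc(1) a(1)] vnat_eq[OF f x gc(1)] a dm
        by simp
    qed
  next
    fix c1 c2 assume a: "c1 \<in> vcar (fst (Dm (descN j f)) x)" "c2 \<in> vcar (fst (Dm (descN j f)) x)"
      "Ap (descN j f) x c1 = Ap (descN j f) x c2" "Ap (descN j f) x c1 \<noteq> vpt (fst (Cd (descN j f)) x)"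
    hence c: "c1 \<in> Car (Cd j) x" "c2 \<in> Car (Cd j) x" by auto
    show "c1 = c2"
    proof (rule desc_cases[OF x c(1)])
      fix a1 assume a1: "a1 \<in> Car (Dm j) x" "c1 = Ap j x a1"
      show ?thesis
      proof (rule desc_cases[OF x c(2)])
        fix a2 assume a2: "a2 \<in> Car (Dm j) x" "c2 = Ap j x a2"
        have "Ap f x a1 = Ap f x a2" "Ap f x a1 \<noteq> Pt (Cd f) x"
          using a(3,4) desc_ap[OF x a1(1)] desc_ap[OF x a2(1)] a1(2) a2(2) by auto
        thus ?thesis using injc[OF x a1(1) a2(1)] a1(2) a2(2) by simp
      qed
    qed
  qed
next
  fix m c assume a: "m \<in> Mo" "c \<in> Car (Dm (descN j f)) (mD m)"
  have d: "mD m \<in> Ob" "mC m \<in> Ob" using M_dc[OF a(1)] by auto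
  have c: "c \<in> Car (Cd j) (mD m)" using a by simp
  show "Ap (descN j f) (mC m) (Fm (Dm (descN j f)) m c) = Fm (Cd (descN j f)) m (Ap (descN j f) (mD m) c)"
  proof (rule desc_cases[OF d(1) c])
    fix a assume aa: "a \<in> Car (Dm j) (mD m)" "c = Ap j (mD m) a"
    have fa: "Fm (Dm j) m a \<in> Car (Dm j) (mC m)" using vfun_in[OF vnat_D1[OF j] a(1) aa(1)] .
    show ?thesis using desc_ap[OF d(2) fa] desc_ap[OF d(1) aa(1)] vnat_nat[OF j a(1) aa(1)] vnat_nat[OF f a(1)] aa dm
      by simp
  qed
qed

lemma desc_comp: "cComp FV (descN j f) j = f"
proof (rule vnat_eqI)
  show "is_vnat G M (cComp FV (descN j f) j)" using comp_vnat[OF desc_vnat j] by simp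
  fix x v assume "x \<in> Ob" "v \<in> Car (Dm (cComp FV (descN j f) j)) x"
  thus "Ap (cComp FV (descN j f) j) x v = Ap f x v" using desc_ap by simp
qed (use f dm in simp_all)

end

end


context fv begin

definition injv :: "('o,'a,'g) vnat \<Rightarrow> bool" where
  "injv t \<longleftrightarrow> (\<forall>x\<in>Ob. inj_on (Ap t x) (Car (Dm t) x))"
definition surjv :: "('o,'a,'g) vnat \<Rightarrow> bool" where
  "surjv t \<longleftrightarrow> (\<forall>x\<in>Ob. Ap t x ` Car (Dm t) x = Car (Cd t) x)"
definition Qc :: "('o,'a,'g) vnat \<Rightarrow> ('o,'a,'g) vnat \<Rightarrow> ('o,'a,'g) vnat \<Rightarrow> bool" where
  "Qc i k l \<longleftrightarrow> (\<forall>x\<in>Ob. \<forall>b\<in>Car (Dm k) x. Ap k x b \<in> Ap l x ` Car (Dm l) x \<longrightarrow> b \<in> Ap i x ` Car (Dm i) x)"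

lemma mono_iff': "mono FV t \<longleftrightarrow> is_vnat G M t \<and> injv t" using mono_iff injv_def by simp
lemma epi_iff': "epi FV t \<longleftrightarrow> is_vnat G M t \<and> surjv t" using epi_iff surjv_def by simp

lemma injvD: "injv t \<Longrightarrow> x \<in> Ob \<Longrightarrow> a \<in> Car (Dm t) x \<Longrightarrow> b \<in> Car (Dm t) x \<Longrightarrow> Ap t x a = Ap t x b \<Longrightarrow> a = b"
  unfolding injv_def by (meson inj_onD)
lemma surjvE: "surjv t \<Longrightarrow> x \<in> Ob \<Longrightarrow> c \<in> Car (Cd t) x \<Longrightarrow> (\<And>a. a \<in> Car (Dm t) x \<Longrightarrow> c = Ap t x a \<Longrightarrow> P) \<Longrightarrow> P"
  unfolding surjv_def by blast
lemma QcD: "Qc i k l \<Longrightarrow> x \<in> Ob \<Longrightarrow> b \<in> Car (Dm k) x \<Longrightarrow> c \<in> Car (Dm l) x \<Longrightarrow> Ap k x b = Ap l x c \<Longrightarrow>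
   \<exists>a\<in>Car (Dm i) x. b = Ap i x a"
  unfolding Qc_def by blast

lemma sq_unf: "comm_square FV i j k l \<longleftrightarrow> is_vnat G M i \<and> is_vnat G M j \<and> is_vnat G M k \<and> is_vnat G M l \<and>
   Dm i = Dm j \<and> Cd i = Dm k \<and> Cd j = Dm l \<and> Cd k = Cd l \<and> cComp FV k i = cComp FV l j"
  unfolding comm_square_def by simp

lemma sq_pt: assumes "comm_square FV i j k l" "x \<in> Ob" "a \<in> Car (Dm i) x"
  shows "Ap k x (Ap i x a) = Ap l x (Ap j x a)"
proof -
  have e: "cComp FV k i = cComp FV l j" "Dm i = Dm j" using assms(1) unfolding sq_unf by auto
  have a2: "a \<in> Car (Dm j) x" using assms(3) e(2) by simp
  have "Ap k x (Ap i x a) = Ap (cComp FV k i) x a" using comp_ap[OF assms(2,3)] by simp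
  also have "\<dots> = Ap (cComp FV l j) x a" using e(1) by simp
  also have "\<dots> = Ap l x (Ap j x a)" using comp_ap[OF assms(2) a2] by simp
  finally show ?thesis .
qed

lemma sqI: assumes "is_vnat G M i" "is_vnat G M j" "is_vnat G M k" "is_vnat G M l"
   "Dm i = Dm j" "Cd i = Dm k" "Cd j = Dm l" "Cd k = Cd l"
   "\<And>x a. x \<in> Ob \<Longrightarrow> a \<in> Car (Dm i) x \<Longrightarrow> Ap k x (Ap i x a) = Ap l x (Ap j x a)"
 shows "comm_square FV i j k l"
  unfolding sq_unf
proof (intro conjI assms(1-8))
  show "cComp FV k i = cComp FV l j"
  proof (rule vnat_eqI)
    show "is_vnat G M (cComp FV k i)" using comp_vnat[OF assms(3,1,6)] .
    show "is_vnat G M (cComp FV l j)" using comp_vnat[OF assms(4,2,7)] .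
  qed (use assms in simp_all)
qed

lemma lift_all: assumes i: "is_vnat G M i" and f: "is_vnat G M f" and cd: "Cd f = Cd i" and ii: "injv i"
  and img: "\<forall>x\<in>Ob. \<forall>v\<in>Car (Dm f) x. Ap f x v \<in> Ap i x ` Car (Dm i) x"
  shows "is_vnat G M (liftN i f) \<and> cComp FV i (liftN i f) = f \<and>
    (\<forall>x\<in>Ob. \<forall>v\<in>Car (Dm f) x. Ap (liftN i f) x v \<in> Car (Dm i) x \<and> Ap i x (Ap (liftN i f) x v) = Ap f x v)"
proof (intro conjI ballI)
  show "is_vnat G M (liftN i f)" by (rule lift_vnat[OF i f cd]) (use ii img injv_def in auto)
  show "cComp FV i (liftN i f) = f" by (rule lift_comp[OF i f cd]) (use ii img injv_def in auto)
  fix x v assume "x \<in> Ob" "v \<in> Car (Dm f) x"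
  thus "Ap (liftN i f) x v \<in> Car (Dm i) x" by (rule lift_in[OF i f cd, rotated 2]) (use ii img injv_def in auto)
  show "Ap i x (Ap (liftN i f) x v) = Ap f x v" by (rule lift_ap[OF i f cd, rotated 2]) (use ii img injv_def \<open>x \<in> Ob\<close> \<open>v \<in> Car (Dm f) x\<close> in auto)
qed

lemma desc_all: assumes j: "is_vnat G M j" and f: "is_vnat G M f" and dm: "Dm f = Dm j" and sj: "surjv j"
  and compat: "\<And>x a1 a2. x \<in> Ob \<Longrightarrow> a1 \<in> Car (Dm j) x \<Longrightarrow> a2 \<in> Car (Dm j) x \<Longrightarrow>
      Ap j x a1 = Ap j x a2 \<Longrightarrow> Ap f x a1 = Ap f x a2"
  and injc: "\<And>x a1 a2. x \<in> Ob \<Longrightarrow> a1 \<in> Car (Dm j) x \<Longrightarrow> a2 \<in> Car (Dm j) x \<Longrightarrow>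
      Ap f x a1 = Ap f x a2 \<Longrightarrow> Ap f x a1 \<noteq> Pt (Cd f) x \<Longrightarrow> Ap j x a1 = Ap j x a2"
  shows "is_vnat G M (descN j f) \<and> cComp FV (descN j f) j = f \<and>
    (\<forall>x\<in>Ob. \<forall>a\<in>Car (Dm j) x. Ap (descN j f) x (Ap j x a) = Ap f x a)"
proof (intro conjI ballI)
  have s: "\<And>x. x \<in> Ob \<Longrightarrow> Ap j x ` Car (Dm j) x = Car (Cd j) x" using sj surjv_def by blast
  show "is_vnat G M (descN j f)" by (rule desc_vnat[OF j f dm s compat injc])
  show "cComp FV (descN j f) j = f" by (rule desc_comp[OF j f dm s compat injc])
  fix x a assume "x \<in> Ob" "a \<in> Car (Dm j) x"
  thus "Ap (descN j f) x (Ap j x a) = Ap f x a" using desc_ap[OF j f dm s compat injc] by blast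
qed

lemma Q_pullback: assumes sq: "comm_square FV i j k l" and ii: "injv i" and il: "injv l" and Q: "Qc i k l"
  shows "is_pullback FV i j k l"
  unfolding is_pullback_def
proof (intro conjI sq ballI impI)
  have s: "is_vnat G M i" "is_vnat G M j" "is_vnat G M k" "is_vnat G M l"
   "Dm i = Dm j" "Cd i = Dm k" "Cd j = Dm l" "Cd k = Cd l" using sq unfolding sq_unf by auto
  fix p q assume pq: "p \<in> cMor FV" "q \<in> cMor FV" "cDom FV p = cDom FV q \<and> cCod FV p = cDom FV k \<and>
      cCod FV q = cDom FV l \<and> cComp FV k p = cComp FV l q"
  have p: "is_vnat G M p" "is_vnat G M q" "Dm p = Dm q" "Cd p = Dm k" "Cd q = Dm l" using pq by auto
  have kplq: "\<And>x v. x \<in> Ob \<Longrightarrow> v \<in> Car (Dm p) x \<Longrightarrow> Ap k x (Ap p x v) = Ap l x (Ap q x v)"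
  proof -
    fix x v assume "x \<in> Ob" "v \<in> Car (Dm p) x"
    moreover have "Ap (cComp FV k p) x v = Ap (cComp FV l q) x v" using pq by simp
    ultimately show "Ap k x (Ap p x v) = Ap l x (Ap q x v)" using p(3) by simp
  qed
  have img: "\<And>x v. x \<in> Ob \<Longrightarrow> v \<in> Car (Dm p) x \<Longrightarrow> Ap p x v \<in> Ap i x ` Car (Dm i) x"
  proof -
    fix x v assume xv: "x \<in> Ob" "v \<in> Car (Dm p) x"
    have "Ap p x v \<in> Car (Dm k) x" "Ap q x v \<in> Car (Dm l) x" using vnat_in[OF p(1) xv] vnat_in[OF p(2) xv(1)] xv p by auto
    thus "Ap p x v \<in> Ap i x ` Car (Dm i) x" using QcD[OF Q xv(1)] kplq[OF xv] by blast
  qed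
  have cd: "Cd p = Cd i" using p s by simp
  have LA: "is_vnat G M (liftN i p) \<and> cComp FV i (liftN i p) = p \<and>
    (\<forall>x\<in>Ob. \<forall>v\<in>Car (Dm p) x. Ap (liftN i p) x v \<in> Car (Dm i) x \<and> Ap i x (Ap (liftN i p) x v) = Ap p x v)"
    by (rule lift_all[OF s(1) p(1) cd ii]) (use img in blast)
  have lv: "is_vnat G M (liftN i p)" and lc: "cComp FV i (liftN i p) = p" using LA by auto
  have la: "\<And>x v. x \<in> Ob \<Longrightarrow> v \<in> Car (Dm p) x \<Longrightarrow> Ap i x (Ap (liftN i p) x v) = Ap p x v" using LA by blast
  have li: "\<And>x v. x \<in> Ob \<Longrightarrow> v \<in> Car (Dm p) x \<Longrightarrow> Ap (liftN i p) x v \<in> Car (Dm i) x" using LA by blast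
  show "\<exists>!u. u \<in> hom FV (cDom FV p) (cDom FV i) \<and> cComp FV i u = p \<and> cComp FV j u = q"
  proof (rule ex1I[of _ "liftN i p"], intro conjI)
    show "liftN i p \<in> hom FV (cDom FV p) (cDom FV i)" using lv by (simp add: hom_def)
    show "cComp FV i (liftN i p) = p" using lc .
    show "cComp FV j (liftN i p) = q"
    proof (rule vnat_eqI)
      show "is_vnat G M (cComp FV j (liftN i p))" using comp_vnat[OF s(2) lv] s by simp
      fix x v assume xv: "x \<in> Ob" "v \<in> Car (Dm (cComp FV j (liftN i p))) x"
      hence v: "v \<in> Car (Dm p) x" by simp
      have u: "Ap (liftN i p) x v \<in> Car (Dm i) x" using li[OF xv(1) v] .
      have "Ap l x (Ap j x (Ap (liftN i p) x v)) = Ap l x (Ap q x v)"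
        using sq_pt[OF sq xv(1) u] la[OF xv(1) v] kplq[OF xv(1) v] by simp
      have u2: "Ap (liftN i p) x v \<in> Car (Dm j) x" using u s(5) by simp
      have v2: "v \<in> Car (Dm q) x" using v p(3) by simp
      have w1: "Ap j x (Ap (liftN i p) x v) \<in> Car (Dm l) x" using vnat_in[OF s(2) xv(1) u2] s(7) by simp
      have w2: "Ap q x v \<in> Car (Dm l) x" using vnat_in[OF p(2) xv(1) v2] p(5) by simp
      hence "Ap j x (Ap (liftN i p) x v) = Ap q x v"
        using injvD[OF il xv(1) w1 w2] \<open>Ap l x (Ap j x (Ap (liftN i p) x v)) = Ap l x (Ap q x v)\<close> by simp
      thus "Ap (cComp FV j (liftN i p)) x v = Ap q x v" using xv v by simp
    qed (use p s in simp_all)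
  next
    fix u assume u: "u \<in> hom FV (cDom FV p) (cDom FV i) \<and> cComp FV i u = p \<and> cComp FV j u = q"
    have u': "is_vnat G M u" "Dm u = Dm p" "Cd u = Dm i" using u by (auto simp: hom_def)
    show "u = liftN i p"
    proof (rule vnat_eqI[OF u'(1) lv])
      fix x v assume xv: "x \<in> Ob" "v \<in> Car (Dm u) x"
      have "Ap (cComp FV i u) x v = Ap p x v" using u by simp
      hence "Ap i x (Ap u x v) = Ap i x (Ap (liftN i p) x v)" using xv la[OF xv(1)] u' by simp
      thus "Ap u x v = Ap (liftN i p) x v"
        using injvD[OF ii xv(1)] vnat_in[OF u'(1) xv] li[OF xv(1)] xv u' by simp
    qed (use u' in simp_all)
  qed
qed

context fixes k l assumes k: "is_vnat G M k" and l: "is_vnat G M l" and cd: "Cd k = Cd l" and il: "injv l"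
begin

definition "SP x = {b \<in> Car (Dm k) x. Ap k x b \<in> Ap l x ` Car (Dm l) x}"

lemma SP_closed: "closedF (Dm k) SP"
proof (rule closedFI)
  have B: "is_vfunctor G M (Dm k)" using vnat_D1[OF k] .
  have C: "is_vfunctor G M (Dm l)" using vnat_D1[OF l] .
  show "\<And>x. x \<in> Ob \<Longrightarrow> SP x \<subseteq> Car (Dm k) x" by (auto simp: SP_def)
  show "\<And>x. x \<in> Ob \<Longrightarrow> Pt (Dm k) x \<in> SP x"
  proof -
    fix x assume x: "x \<in> Ob"
    have "Ap k x (Pt (Dm k) x) = Ap l x (Pt (Dm l) x)" using vnat_pt[OF k x] vnat_pt[OF l x] cd by simp
    thus "Pt (Dm k) x \<in> SP x" using vfun_ptin[OF B x] vfun_ptin[OF C x] unfolding SP_def by auto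
  qed
  show "\<And>x g v. x \<in> Ob \<Longrightarrow> g \<in> carrier G \<Longrightarrow> v \<in> SP x \<Longrightarrow> Act (Dm k) x g v \<in> SP x"
  proof -
    fix x g v assume a: "x \<in> Ob" "g \<in> carrier G" "v \<in> SP x"
    then obtain c where c: "c \<in> Car (Dm l) x" "Ap k x v = Ap l x c" and v: "v \<in> Car (Dm k) x" by (auto simp: SP_def)
    have "Ap k x (Act (Dm k) x g v) = Ap l x (Act (Dm l) x g c)" using vnat_eq[OF k a(1,2) v] vnat_eq[OF l a(1,2) c(1)] c cd by simp
    thus "Act (Dm k) x g v \<in> SP x" using vfun_actin[OF B a(1,2) v] vfun_actin[OF C a(1,2) c(1)] unfolding SP_def by auto
  qed
  show "\<And>m v. m \<in> Mo \<Longrightarrow> v \<in> SP (mD m) \<Longrightarrow> Fm (Dm k) m v \<in> SP (mC m)"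
  proof -
    fix m v assume a: "m \<in> Mo" "v \<in> SP (mD m)"
    then obtain c where c: "c \<in> Car (Dm l) (mD m)" "Ap k (mD m) v = Ap l (mD m) c" and v: "v \<in> Car (Dm k) (mD m)" by (auto simp: SP_def)
    have "Ap k (mC m) (Fm (Dm k) m v) = Ap l (mC m) (Fm (Dm l) m c)" using vnat_nat[OF k a(1) v] vnat_nat[OF l a(1) c(1)] c cd by simp
    thus "Fm (Dm k) m v \<in> SP (mC m)" using vfun_in[OF B a(1) v] vfun_in[OF C a(1) c(1)] unfolding SP_def by auto
  qed
qed

definition "iP = inclF (Dm k) SP"
definition "jP = liftN l (cComp FV k iP)"

lemma iP_vnat: "is_vnat G M iP" unfolding iP_def using inclF_vnat[OF vnat_D1[OF k] SP_closed] .
lemma iP_injv: "injv iP" unfolding injv_def iP_def by (auto intro!: inj_onI)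
lemma kiP: "is_vnat G M (cComp FV k iP)" using comp_vnat[OF k iP_vnat] by (simp add: iP_def)

lemma jP_props: "is_vnat G M jP \<and> cComp FV l jP = cComp FV k iP \<and>
  (\<forall>x\<in>Ob. \<forall>v\<in>SP x. Ap jP x v \<in> Car (Dm l) x \<and> Ap l x (Ap jP x v) = Ap k x v)"
proof -
  have cd': "Cd (cComp FV k iP) = Cd l" using cd by simp
  have img: "\<forall>x\<in>Ob. \<forall>v\<in>Car (Dm (cComp FV k iP)) x. Ap (cComp FV k iP) x v \<in> Ap l x ` Car (Dm l) x"
    by (auto simp: iP_def SP_def)
  show ?thesis using lift_all[OF l kiP cd' il img] unfolding jP_def by (simp add: iP_def)
qed

lemma PB_sq: "comm_square FV iP jP k l"
proof (rule sqI[OF iP_vnat conjunct1[OF jP_props] k l])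
  fix x a assume "x \<in> Ob" "a \<in> Car (Dm iP) x"
  thus "Ap k x (Ap iP x a) = Ap l x (Ap jP x a)" using jP_props by (simp add: iP_def)
qed (use cd jP_props in \<open>simp_all add: iP_def jP_def\<close>)

lemma PB_Q: "Qc iP k l"
  unfolding Qc_def
proof (intro ballI impI)
  fix x b assume a: "x \<in> Ob" "b \<in> Car (Dm k) x" "Ap k x b \<in> Ap l x ` Car (Dm l) x"
  hence b: "b \<in> SP x" by (simp add: SP_def)
  hence "Ap iP x b = b" "b \<in> Car (Dm iP) x" using a(1) by (simp_all add: iP_def)
  thus "b \<in> Ap iP x ` Car (Dm iP) x" by (metis imageI)
qed

lemma PB_surj: "surjv k \<Longrightarrow> surjv jP"
  unfolding surjv_def
proof (intro ballI equalityI subsetI)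
  assume sk: "\<forall>x\<in>Ob. Ap k x ` Car (Dm k) x = Car (Cd k) x"
  fix x assume x: "x \<in> Ob"
  { fix w assume "w \<in> Ap jP x ` Car (Dm jP) x"
    thus "w \<in> Car (Cd jP) x" using jP_props x by (auto simp: jP_def iP_def) }
  { fix c assume c: "c \<in> Car (Cd jP) x"
    hence c': "c \<in> Car (Dm l) x" by (simp add: jP_def)
    have "Ap l x c \<in> Car (Cd k) x" using vnat_in[OF l x c'] cd by simp
    hence "Ap l x c \<in> Ap k x ` Car (Dm k) x" using sk x by simp
    then obtain b where b: "b \<in> Car (Dm k) x" "Ap l x c = Ap k x b" by blast
    have "Ap k x b \<in> Ap l x ` Car (Dm l) x" using b(2) c' by (metis imageI)
    hence bS: "b \<in> SP x" using b(1) unfolding SP_def by simp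
    have "Ap l x (Ap jP x b) = Ap l x c" using jP_props x bS b by simp
    hence "Ap jP x b = c" using injvD[OF il x] jP_props x bS c' by simp
    thus "c \<in> Ap jP x ` Car (Dm jP) x" using bS x by (auto simp: jP_def iP_def) }
qed

end

end


context fv begin

lemma pullback_Q: assumes pb: "is_pullback FV i j k l" and il: "injv l" shows "Qc i k l"
proof -
  have sq: "comm_square FV i j k l" using pb unfolding is_pullback_def by blast
  have s: "is_vnat G M i" "is_vnat G M j" "is_vnat G M k" "is_vnat G M l"
   "Dm i = Dm j" "Cd i = Dm k" "Cd j = Dm l" "Cd k = Cd l" using sq unfolding sq_unf by auto
  note ctx = s(3) s(4) s(8) il
  have iPv: "is_vnat G M (iP k l)" using iP_vnat[OF ctx] .
  have jPp: "is_vnat G M (jP k l) \<and> cComp FV l (jP k l) = cComp FV k (iP k l) \<and>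
     (\<forall>x\<in>Ob. \<forall>v\<in>SP k l x. Ap (jP k l) x v \<in> Car (Dm l) x \<and> Ap l x (Ap (jP k l) x v) = Ap k x v)"
    using jP_props[OF ctx] .
  have dmj: "Dm (jP k l) = Dm (iP k l)" using jP_def[OF ctx] by simp
  have cdj: "Cd (jP k l) = Dm l" using jP_def[OF ctx] by simp
  have cdi: "Cd (iP k l) = Dm k" using iP_def[OF ctx] by simp
  have "\<exists>!u. u \<in> hom FV (cDom FV (iP k l)) (cDom FV i) \<and> cComp FV i u = iP k l \<and> cComp FV j u = jP k l"
    using pb unfolding is_pullback_def
  proof (elim conjE)
    assume H: "\<forall>p\<in>cMor FV. \<forall>q\<in>cMor FV. cDom FV p = cDom FV q \<and> cCod FV p = cDom FV k \<and> cCod FV q = cDom FV l \<and>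
        cComp FV k p = cComp FV l q \<longrightarrow>
        (\<exists>!u. u \<in> hom FV (cDom FV p) (cDom FV i) \<and> cComp FV i u = p \<and> cComp FV j u = q)"
    have c1: "iP k l \<in> cMor FV" using iPv by simp
    have c2: "jP k l \<in> cMor FV" using jPp by simp
    have c3: "cDom FV (iP k l) = cDom FV (jP k l) \<and> cCod FV (iP k l) = cDom FV k \<and> cCod FV (jP k l) = cDom FV l \<and>
        cComp FV k (iP k l) = cComp FV l (jP k l)" using dmj cdj cdi jPp by simp
    show ?thesis using H[rule_format, OF c1 c2 c3] .
  qed
  then obtain u where "u \<in> hom FV (cDom FV (iP k l)) (cDom FV i) \<and> cComp FV i u = iP k l \<and> cComp FV j u = jP k l"
    by (rule ex1E)
  hence u: "u \<in> hom FV (Dm (iP k l)) (Dm i)" "cComp FV i u = iP k l" by simp_all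
  have u': "is_vnat G M u" "Dm u = Dm (iP k l)" "Cd u = Dm i" using u(1) by (auto simp: hom_def)
  show ?thesis unfolding Qc_def
  proof (intro ballI impI)
    fix x b assume a: "x \<in> Ob" "b \<in> Car (Dm k) x" "Ap k x b \<in> Ap l x ` Car (Dm l) x"
    hence b: "b \<in> SP k l x" using SP_def[OF ctx] by simp
    have bi: "b \<in> Car (Dm (iP k l)) x" "Ap (iP k l) x b = b" using b a(1) iP_def[OF ctx] by simp_all
    have "Ap (cComp FV i u) x b = b" using u(2) bi by simp
    hence "Ap i x (Ap u x b) = b" using bi a(1) u' by simp
    moreover have "Ap u x b \<in> Car (Dm i) x" using vnat_in[OF u'(1) a(1)] bi u' by simp
    ultimately show "b \<in> Ap i x ` Car (Dm i) x" by (metis imageI)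
  qed
qed

lemma Q_pushout: assumes sq: "comm_square FV i j k l" and sj: "surjv j" and il: "injv l" and sk: "surjv k"
  and Q: "Qc i k l" shows "is_pushout FV i j k l"
  unfolding is_pushout_def
proof (intro conjI sq ballI impI)
  have s: "is_vnat G M i" "is_vnat G M j" "is_vnat G M k" "is_vnat G M l"
   "Dm i = Dm j" "Cd i = Dm k" "Cd j = Dm l" "Cd k = Cd l" using sq unfolding sq_unf by auto
  fix p q assume pq: "p \<in> cMor FV" "q \<in> cMor FV" "cDom FV p = cCod FV i \<and> cDom FV q = cCod FV j \<and>
        cCod FV p = cCod FV q \<and> cComp FV p i = cComp FV q j"
  have p: "is_vnat G M p" "is_vnat G M q" "Dm p = Cd i" "Dm q = Cd j" "Cd p = Cd q" using pq by auto
  have piqj: "\<And>x a. x \<in> Ob \<Longrightarrow> a \<in> Car (Dm i) x \<Longrightarrow> Ap p x (Ap i x a) = Ap q x (Ap j x a)"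
  proof -
    fix x a assume xa: "x \<in> Ob" "a \<in> Car (Dm i) x"
    have "Ap (cComp FV p i) x a = Ap (cComp FV q j) x a" using pq by simp
    thus "Ap p x (Ap i x a) = Ap q x (Ap j x a)" using xa s(5) by simp
  qed
  have kz: "\<And>x b. x \<in> Ob \<Longrightarrow> b \<in> Car (Dm k) x \<Longrightarrow> Ap k x b = Pt (Cd k) x \<Longrightarrow> Ap p x b = Pt (Cd p) x"
  proof -
    fix x b assume a: "x \<in> Ob" "b \<in> Car (Dm k) x" "Ap k x b = Pt (Cd k) x"
    have cp: "Pt (Dm l) x \<in> Car (Dm l) x" using vfun_ptin[OF vnat_D1[OF s(4)] a(1)] .
    have "Ap k x b = Ap l x (Pt (Dm l) x)" using a(3) vnat_pt[OF s(4) a(1)] s(8) by simp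
    then obtain a' where a': "a' \<in> Car (Dm i) x" "b = Ap i x a'" using QcD[OF Q a(1) a(2) cp] by blast
    have ja: "Ap j x a' \<in> Car (Dm l) x" using vnat_in[OF s(2) a(1)] a' s(5,7) by simp
    have "Ap l x (Ap j x a') = Ap l x (Pt (Dm l) x)"
      using sq_pt[OF sq a(1) a'(1)] a' a(3) vnat_pt[OF s(4) a(1)] s(8) by simp
    hence "Ap j x a' = Pt (Dm l) x" using injvD[OF il a(1) ja cp] by simp
    hence "Ap p x b = Ap q x (Pt (Dm q) x)" using piqj[OF a(1) a'(1)] a'(2) s(7) p(4) by simp
    thus "Ap p x b = Pt (Cd p) x" using vnat_pt[OF p(2) a(1)] p(5) by simp
  qed
  have dm: "Dm p = Dm k" using p s by simp
  have compat: "\<And>x b1 b2. x \<in> Ob \<Longrightarrow> b1 \<in> Car (Dm k) x \<Longrightarrow> b2 \<in> Car (Dm k) x \<Longrightarrow>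
      Ap k x b1 = Ap k x b2 \<Longrightarrow> Ap p x b1 = Ap p x b2"
  proof -
    fix x b1 b2 assume a: "x \<in> Ob" "b1 \<in> Car (Dm k) x" "b2 \<in> Car (Dm k) x" "Ap k x b1 = Ap k x b2"
    show "Ap p x b1 = Ap p x b2"
    proof (cases "Ap k x b1 = Pt (Cd k) x")
      case True thus ?thesis using kz[OF a(1,2)] kz[OF a(1,3)] a(4) by simp
    next
      case False thus ?thesis using vnat_inj[OF s(3) a(1-4)] by simp
    qed
  qed
  have injc: "\<And>x b1 b2. x \<in> Ob \<Longrightarrow> b1 \<in> Car (Dm k) x \<Longrightarrow> b2 \<in> Car (Dm k) x \<Longrightarrow>
      Ap p x b1 = Ap p x b2 \<Longrightarrow> Ap p x b1 \<noteq> Pt (Cd p) x \<Longrightarrow> Ap k x b1 = Ap k x b2"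
  proof -
    fix x b1 b2 assume a: "x \<in> Ob" "b1 \<in> Car (Dm k) x" "b2 \<in> Car (Dm k) x"
      "Ap p x b1 = Ap p x b2" "Ap p x b1 \<noteq> Pt (Cd p) x"
    have "b1 = b2" using vnat_inj[OF p(1) a(1)] a dm by simp
    thus "Ap k x b1 = Ap k x b2" by simp
  qed
  have D: "is_vnat G M (descN k p) \<and> cComp FV (descN k p) k = p \<and>
    (\<forall>x\<in>Ob. \<forall>b\<in>Car (Dm k) x. Ap (descN k p) x (Ap k x b) = Ap p x b)"
    by (rule desc_all[OF s(3) p(1) dm sk]) (use compat injc in blast)+
  have Dv: "is_vnat G M (descN k p)" and Dc: "cComp FV (descN k p) k = p" using D by auto
  have Da: "\<And>x b. x \<in> Ob \<Longrightarrow> b \<in> Car (Dm k) x \<Longrightarrow> Ap (descN k p) x (Ap k x b) = Ap p x b" using D by blast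
  show "\<exists>!u. u \<in> hom FV (cCod FV k) (cCod FV p) \<and> cComp FV u k = p \<and> cComp FV u l = q"
  proof (rule ex1I[of _ "descN k p"], intro conjI)
    show "descN k p \<in> hom FV (cCod FV k) (cCod FV p)" using Dv by (simp add: hom_def)
    show "cComp FV (descN k p) k = p" using Dc .
    show "cComp FV (descN k p) l = q"
    proof (rule vnat_eqI)
      show "is_vnat G M (cComp FV (descN k p) l)" using comp_vnat[OF Dv s(4)] s by simp
      fix x c assume xc: "x \<in> Ob" "c \<in> Car (Dm (cComp FV (descN k p) l)) x"
      hence c: "c \<in> Car (Cd j) x" using s(7) by simp
      show "Ap (cComp FV (descN k p) l) x c = Ap q x c"
      proof (rule surjvE[OF sj xc(1) c])
        fix a assume a: "a \<in> Car (Dm j) x" "c = Ap j x a"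
        have a2: "a \<in> Car (Dm i) x" using a s(5) by simp
        have ia: "Ap i x a \<in> Car (Dm k) x" using vnat_in[OF s(1) xc(1) a2] s(6) by simp
        have "Ap (cComp FV (descN k p) l) x c = Ap (descN k p) x (Ap l x c)" using xc by simp
        also have "\<dots> = Ap (descN k p) x (Ap k x (Ap i x a))" using sq_pt[OF sq xc(1) a2] a(2) by simp
        also have "\<dots> = Ap p x (Ap i x a)" using Da[OF xc(1) ia] .
        also have "\<dots> = Ap q x c" using piqj[OF xc(1) a2] a(2) by simp
        finally show ?thesis .
      qed
    qed (use p s in simp_all)
  next
    fix u assume u: "u \<in> hom FV (cCod FV k) (cCod FV p) \<and> cComp FV u k = p \<and> cComp FV u l = q"
    have u': "is_vnat G M u" "Dm u = Cd k" "Cd u = Cd p" "cComp FV u k = p" using u by (auto simp: hom_def)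
    show "u = descN k p"
    proof (rule vnat_eqI[OF u'(1) Dv])
      fix x d assume xd: "x \<in> Ob" "d \<in> Car (Dm u) x"
      hence d: "d \<in> Car (Cd k) x" using u' by simp
      show "Ap u x d = Ap (descN k p) x d"
      proof (rule surjvE[OF sk xd(1) d])
        fix b assume b: "b \<in> Car (Dm k) x" "d = Ap k x b"
        have "Ap (cComp FV u k) x b = Ap p x b" using u'(4) by simp
        thus ?thesis using b xd(1) Da[OF xd(1) b(1)] by simp
      qed
    qed (use u' in simp_all)
  qed
qed

end


context fv begin

context fixes i j assumes i: "is_vnat G M i" and j: "is_vnat G M j" and dm: "Dm i = Dm j"
  and ii: "injv i" and sj: "surjv j"
begin

definition "IP x = Ap i x ` {a \<in> Car (Dm i) x. Ap j x a = Pt (Cd j) x}"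

lemma IP_closed: "closedF (Cd i) IP"
proof (rule closedFI)
  have A: "is_vfunctor G M (Dm i)" using vnat_D1[OF i] .
  show "\<And>x. x \<in> Ob \<Longrightarrow> IP x \<subseteq> Car (Cd i) x" using vnat_in[OF i] by (auto simp: IP_def)
  show "\<And>x. x \<in> Ob \<Longrightarrow> Pt (Cd i) x \<in> IP x"
  proof -
    fix x assume x: "x \<in> Ob"
    have "Pt (Dm i) x \<in> {a \<in> Car (Dm i) x. Ap j x a = Pt (Cd j) x}"
      using vfun_ptin[OF A x] vnat_pt[OF j x] dm by simp
    hence "Ap i x (Pt (Dm i) x) \<in> IP x" unfolding IP_def by (rule imageI)
    thus "Pt (Cd i) x \<in> IP x" using vnat_pt[OF i x] by simp
  qed
  show "\<And>x g v. x \<in> Ob \<Longrightarrow> g \<in> carrier G \<Longrightarrow> v \<in> IP x \<Longrightarrow> Act (Cd i) x g v \<in> IP x"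
  proof -
    fix x g v assume a: "x \<in> Ob" "g \<in> carrier G" "v \<in> IP x"
    then obtain u where u: "u \<in> Car (Dm i) x" "Ap j x u = Pt (Cd j) x" "v = Ap i x u" by (auto simp: IP_def)
    have u2: "u \<in> Car (Dm j) x" using u dm by simp
    have "Ap j x (Act (Dm i) x g u) = Pt (Cd j) x"
      using vnat_eq[OF j a(1,2) u2] u(2) vfun_actpt[OF vnat_D2[OF j] a(1,2)] dm by simp
    hence "Act (Dm i) x g u \<in> {a \<in> Car (Dm i) x. Ap j x a = Pt (Cd j) x}" using vfun_actin[OF A a(1,2) u(1)] by simp
    hence "Ap i x (Act (Dm i) x g u) \<in> IP x" unfolding IP_def by (rule imageI)
    thus "Act (Cd i) x g v \<in> IP x" using vnat_eq[OF i a(1,2) u(1)] u(3) by simp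
  qed
  show "\<And>m v. m \<in> Mo \<Longrightarrow> v \<in> IP (mD m) \<Longrightarrow> Fm (Cd i) m v \<in> IP (mC m)"
  proof -
    fix m v assume a: "m \<in> Mo" "v \<in> IP (mD m)"
    then obtain u where u: "u \<in> Car (Dm i) (mD m)" "Ap j (mD m) u = Pt (Cd j) (mD m)" "v = Ap i (mD m) u"
      by (auto simp: IP_def)
    have u2: "u \<in> Car (Dm j) (mD m)" using u dm by simp
    have "Ap j (mC m) (Fm (Dm i) m u) = Pt (Cd j) (mC m)"
      using vnat_nat[OF j a(1) u2] u(2) vfun_pt[OF vnat_D2[OF j] a(1)] dm by simp
    hence "Fm (Dm i) m u \<in> {a \<in> Car (Dm i) (mC m). Ap j (mC m) a = Pt (Cd j) (mC m)}" using vfun_in[OF A a(1) u(1)] by simp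
    hence "Ap i (mC m) (Fm (Dm i) m u) \<in> IP (mC m)" unfolding IP_def by (rule imageI)
    thus "Fm (Cd i) m v \<in> IP (mC m)" using vnat_nat[OF i a(1) u(1)] u(3) by simp
  qed
qed

definition "kO = qmap (Cd i) IP"
definition "lO = descN j (cComp FV kO i)"

lemma kO_vnat: "is_vnat G M kO" unfolding kO_def using qmap_vnat[OF vnat_D2[OF i] IP_closed] .
lemma kOi_vnat: "is_vnat G M (cComp FV kO i)" using comp_vnat[OF kO_vnat i] by (simp add: kO_def)

lemma kO_ap: "x \<in> Ob \<Longrightarrow> b \<in> Car (Cd i) x \<Longrightarrow> Ap kO x b = (if b \<in> IP x then Pt (Cd i) x else b)"
  by (simp add: kO_def)

lemma IP_sub: "x \<in> Ob \<Longrightarrow> IP x \<subseteq> Car (Cd i) x" using closedF_sub[OF IP_closed] .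
lemma IP_pt: "x \<in> Ob \<Longrightarrow> Pt (Cd i) x \<in> IP x" using closedF_pt[OF IP_closed] .

lemma kO_surj: "surjv kO"
  unfolding surjv_def
proof (intro ballI equalityI subsetI)
  fix x assume x: "x \<in> Ob"
  { fix w assume "w \<in> Ap kO x ` Car (Dm kO) x" thus "w \<in> Car (Cd kO) x" using vnat_in[OF kO_vnat x] by auto }
  { fix w assume w: "w \<in> Car (Cd kO) x"
    hence w': "w \<in> QC (Cd i) IP x" using x by (simp add: kO_def)
    hence wc: "w \<in> Car (Cd i) x" using QC_sub[OF vnat_D2[OF i] x] by auto
    have "Ap kO x w = w"
    proof (cases "w \<in> IP x")
      case True hence "w = Pt (Cd i) x" using QC_I[OF IP_closed x w'] by simp
      thus ?thesis using kO_ap[OF x wc] by simp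
    next
      case False thus ?thesis using kO_ap[OF x wc] by simp
    qed
    thus "w \<in> Ap kO x ` Car (Dm kO) x" using wc by (simp add: kO_def) (metis imageI) }
qed

lemma IP_mem: "x \<in> Ob \<Longrightarrow> a \<in> Car (Dm i) x \<Longrightarrow> Ap i x a \<in> IP x \<longleftrightarrow> Ap j x a = Pt (Cd j) x"
proof
  assume a: "x \<in> Ob" "a \<in> Car (Dm i) x" "Ap i x a \<in> IP x"
  then obtain a' where a': "a' \<in> Car (Dm i) x" "Ap j x a' = Pt (Cd j) x" "Ap i x a = Ap i x a'" by (auto simp: IP_def)
  thus "Ap j x a = Pt (Cd j) x" using injvD[OF ii a(1) a(2) a'(1)] by simp
next
  assume a: "x \<in> Ob" "a \<in> Car (Dm i) x" "Ap j x a = Pt (Cd j) x"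
  thus "Ap i x a \<in> IP x" unfolding IP_def by auto
qed

lemma compat: "x \<in> Ob \<Longrightarrow> a1 \<in> Car (Dm j) x \<Longrightarrow> a2 \<in> Car (Dm j) x \<Longrightarrow>
      Ap j x a1 = Ap j x a2 \<Longrightarrow> Ap (cComp FV kO i) x a1 = Ap (cComp FV kO i) x a2"
proof -
  assume a: "x \<in> Ob" "a1 \<in> Car (Dm j) x" "a2 \<in> Car (Dm j) x" "Ap j x a1 = Ap j x a2"
  have a': "a1 \<in> Car (Dm i) x" "a2 \<in> Car (Dm i) x" using a dm by auto
  have c: "Ap i x a1 \<in> Car (Cd i) x" "Ap i x a2 \<in> Car (Cd i) x" using vnat_in[OF i a(1)] a' by auto
  show ?thesis
  proof (cases "Ap j x a1 = Pt (Cd j) x")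
    case True
    hence "Ap i x a1 \<in> IP x" "Ap i x a2 \<in> IP x" using IP_mem[OF a(1)] a' a(4) by auto
    thus ?thesis using a(1) a' c kO_ap by (simp add: kO_def)
  next
    case False thus ?thesis using vnat_inj[OF j a(1-4)] by simp
  qed
qed

lemma injc: "x \<in> Ob \<Longrightarrow> a1 \<in> Car (Dm j) x \<Longrightarrow> a2 \<in> Car (Dm j) x \<Longrightarrow>
      Ap (cComp FV kO i) x a1 = Ap (cComp FV kO i) x a2 \<Longrightarrow> Ap (cComp FV kO i) x a1 \<noteq> Pt (Cd (cComp FV kO i)) x \<Longrightarrow>
      Ap j x a1 = Ap j x a2"
proof -
  assume a: "x \<in> Ob" "a1 \<in> Car (Dm j) x" "a2 \<in> Car (Dm j) x"
      "Ap (cComp FV kO i) x a1 = Ap (cComp FV kO i) x a2" "Ap (cComp FV kO i) x a1 \<noteq> Pt (Cd (cComp FV kO i)) x"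
  have a': "a1 \<in> Car (Dm i) x" "a2 \<in> Car (Dm i) x" using a dm by auto
  have c: "Ap i x a1 \<in> Car (Cd i) x" "Ap i x a2 \<in> Car (Cd i) x" using vnat_in[OF i a(1)] a' by auto
  have e1: "Ap (cComp FV kO i) x a1 = (if Ap i x a1 \<in> IP x then Pt (Cd i) x else Ap i x a1)"
    using a(1) a'(1) c(1) kO_ap by (simp add: kO_def)
  have e2: "Ap (cComp FV kO i) x a2 = (if Ap i x a2 \<in> IP x then Pt (Cd i) x else Ap i x a2)"
    using a(1) a'(2) c(2) kO_ap by (simp add: kO_def)
  have pt: "Pt (Cd (cComp FV kO i)) x = Pt (Cd i) x" using a(1) by (simp add: kO_def)
  have n1: "Ap i x a1 \<notin> IP x" using a(5) e1 pt by auto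
  have n2: "Ap i x a2 \<notin> IP x" using a(4,5) e1 e2 pt by auto
  have "Ap i x a1 = Ap i x a2" using a(4) e1 e2 n1 n2 by simp
  thus ?thesis using injvD[OF ii a(1) a'] by simp
qed

lemma lO_props: "is_vnat G M lO \<and> cComp FV lO j = cComp FV kO i \<and>
    (\<forall>x\<in>Ob. \<forall>a\<in>Car (Dm j) x. Ap lO x (Ap j x a) = Ap (cComp FV kO i) x a)"
  unfolding lO_def
proof (rule desc_all[OF j kOi_vnat _ sj])
  show "Dm (cComp FV kO i) = Dm j" using dm by simp
qed (use compat injc in blast)+

lemma lO_vnat: "is_vnat G M lO" using lO_props by blast
lemma lO_ap: "x \<in> Ob \<Longrightarrow> a \<in> Car (Dm i) x \<Longrightarrow> Ap lO x (Ap j x a) = Ap kO x (Ap i x a)"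
  using lO_props dm by simp

lemma PO_sq: "comm_square FV i j kO lO"
proof (rule sqI[OF i j kO_vnat lO_vnat dm])
  show "Cd i = Dm kO" by (simp add: kO_def)
  show "Cd j = Dm lO" by (simp add: lO_def)
  show "Cd kO = Cd lO" by (simp add: lO_def kO_def)
  fix x a assume "x \<in> Ob" "a \<in> Car (Dm i) x"
  thus "Ap kO x (Ap i x a) = Ap lO x (Ap j x a)" using lO_ap by simp
qed

lemma PO_key: assumes x: "x \<in> Ob" and b: "b \<in> Car (Cd i) x" and c: "c \<in> Car (Cd j) x"
  and e: "Ap kO x b = Ap lO x c" shows "b \<in> Ap i x ` Car (Dm i) x"
proof (rule surjvE[OF sj x c])
  fix a assume a: "a \<in> Car (Dm j) x" "c = Ap j x a"
  have a': "a \<in> Car (Dm i) x" using a dm by simp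
  have ia: "Ap i x a \<in> Car (Cd i) x" using vnat_in[OF i x a'] .
  have e2: "Ap kO x b = Ap kO x (Ap i x a)" using e lO_ap[OF x a'] a(2) by simp
  show ?thesis
  proof (cases "b \<in> IP x")
    case True thus ?thesis unfolding IP_def by blast
  next
    case False
    hence kb: "Ap kO x b = b" using kO_ap[OF x b] by simp
    have bpt: "b \<noteq> Pt (Cd i) x" using False IP_pt[OF x] by auto
    have "Ap i x a \<notin> IP x" using e2 kb bpt kO_ap[OF x ia] by auto
    hence "b = Ap i x a" using e2 kb kO_ap[OF x ia] by simp
    thus ?thesis using a' by blast
  qed
qed

lemma PO_Q: "Qc i kO lO"
  unfolding Qc_def
proof (intro ballI impI)
  fix x b assume a: "x \<in> Ob" "b \<in> Car (Dm kO) x" "Ap kO x b \<in> Ap lO x ` Car (Dm lO) x"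
  then obtain c where c: "c \<in> Car (Dm lO) x" "Ap kO x b = Ap lO x c" by blast
  show "b \<in> Ap i x ` Car (Dm i) x"
    using PO_key[OF a(1) _ _ c(2)] a(2) c(1) by (simp add: kO_def lO_def)
qed

lemma lO_inj: "injv lO"
  unfolding injv_def
proof (intro ballI inj_onI)
  fix x c1 c2 assume a: "x \<in> Ob" "c1 \<in> Car (Dm lO) x" "c2 \<in> Car (Dm lO) x" "Ap lO x c1 = Ap lO x c2"
  have c: "c1 \<in> Car (Cd j) x" "c2 \<in> Car (Cd j) x" using a by (simp_all add: lO_def)
  have zero: "\<And>c. c \<in> Car (Cd j) x \<Longrightarrow> Ap lO x c = Pt (Cd i) x \<Longrightarrow> c = Pt (Cd j) x"
  proof -
    fix c assume c: "c \<in> Car (Cd j) x" "Ap lO x c = Pt (Cd i) x"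
    show "c = Pt (Cd j) x"
    proof (rule surjvE[OF sj a(1) c(1)])
      fix a' assume a': "a' \<in> Car (Dm j) x" "c = Ap j x a'"
      have a'': "a' \<in> Car (Dm i) x" using a' dm by simp
      have ia: "Ap i x a' \<in> Car (Cd i) x" using vnat_in[OF i a(1) a''] .
      have "Ap kO x (Ap i x a') = Pt (Cd i) x" using lO_ap[OF a(1) a''] a'(2) c(2) by simp
      hence "Ap i x a' \<in> IP x" using kO_ap[OF a(1) ia] IP_pt[OF a(1)] by (auto split: if_splits)
      thus "c = Pt (Cd j) x" using IP_mem[OF a(1) a''] a'(2) by simp
    qed
  qed
  show "c1 = c2"
  proof (cases "Ap lO x c1 = Pt (Cd i) x")
    case True thus ?thesis using zero[OF c(1)] zero[OF c(2)] a(4) by simp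
  next
    case False
    have "Pt (Cd lO) x = Pt (Cd i) x" using a(1) by (simp add: lO_def kO_def)
    thus ?thesis using vnat_inj[OF lO_vnat a(1-4)] False by simp
  qed
qed

end

lemma pushout_Q: assumes po: "is_pushout FV i j k l" and ii: "injv i" and sj: "surjv j" shows "Qc i k l"
proof -
  have sq: "comm_square FV i j k l" using po unfolding is_pushout_def by blast
  have s: "is_vnat G M i" "is_vnat G M j" "is_vnat G M k" "is_vnat G M l"
   "Dm i = Dm j" "Cd i = Dm k" "Cd j = Dm l" "Cd k = Cd l" using sq unfolding sq_unf by auto
  note ctx = s(1) s(2) s(5) ii sj
  have psq: "comm_square FV i j (kO i j) (lO i j)" using PO_sq[OF ctx] .
  have ps: "is_vnat G M (kO i j)" "is_vnat G M (lO i j)" "Cd i = Dm (kO i j)" "Cd j = Dm (lO i j)"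
    "Cd (kO i j) = Cd (lO i j)" "cComp FV (kO i j) i = cComp FV (lO i j) j" using psq unfolding sq_unf by auto
  have "\<exists>!u. u \<in> hom FV (cCod FV k) (cCod FV (kO i j)) \<and> cComp FV u k = kO i j \<and> cComp FV u l = lO i j"
    using po unfolding is_pushout_def
  proof (elim conjE)
    assume H: "\<forall>p\<in>cMor FV. \<forall>q\<in>cMor FV. cDom FV p = cCod FV i \<and> cDom FV q = cCod FV j \<and> cCod FV p = cCod FV q \<and>
        cComp FV p i = cComp FV q j \<longrightarrow>
        (\<exists>!u. u \<in> hom FV (cCod FV k) (cCod FV p) \<and> cComp FV u k = p \<and> cComp FV u l = q)"
    have c1: "kO i j \<in> cMor FV" using ps by simp
    have c2: "lO i j \<in> cMor FV" using ps by simp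
    have c3: "cDom FV (kO i j) = cCod FV i \<and> cDom FV (lO i j) = cCod FV j \<and> cCod FV (kO i j) = cCod FV (lO i j) \<and>
        cComp FV (kO i j) i = cComp FV (lO i j) j" using ps by simp
    show ?thesis using H[rule_format, OF c1 c2 c3] .
  qed
  then obtain u where "u \<in> hom FV (cCod FV k) (cCod FV (kO i j)) \<and> cComp FV u k = kO i j \<and> cComp FV u l = lO i j"
    by (rule ex1E)
  hence u: "is_vnat G M u" "Dm u = Cd k" "cComp FV u k = kO i j" "cComp FV u l = lO i j" unfolding hom_def by simp_all
  show ?thesis unfolding Qc_def
  proof (intro ballI impI)
    fix x b assume a: "x \<in> Ob" "b \<in> Car (Dm k) x" "Ap k x b \<in> Ap l x ` Car (Dm l) x"
    then obtain c where c: "c \<in> Car (Dm l) x" "Ap k x b = Ap l x c" by blast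
    have "Ap (kO i j) x b = Ap (cComp FV u k) x b" using u(3) by simp
    also have "\<dots> = Ap u x (Ap k x b)" using a(1,2) by simp
    also have "\<dots> = Ap u x (Ap l x c)" using c by simp
    also have "\<dots> = Ap (cComp FV u l) x c" using a(1) c(1) by simp
    also have "\<dots> = Ap (lO i j) x c" using u(4) by simp
    finally have "Ap (kO i j) x b = Ap (lO i j) x c" .
    moreover have "b \<in> Car (Cd i) x" using a(2) s(6) by simp
    moreover have "c \<in> Car (Cd j) x" using c(1) s(7) by simp
    ultimately show "b \<in> Ap i x ` Car (Dm i) x" using PO_key[OF ctx a(1)] by blast
  qed
qed

end


context fv begin

definition "Z0 = (\<lambda>x\<in>Ob. \<lparr>vcar = {0::nat}, vpt = 0, vact = \<lambda>g\<in>carrier G. \<lambda>v\<in>{0::nat}. 0::nat\<rparr>,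
                  \<lambda>m\<in>Mo. \<lambda>v\<in>{0::nat}. 0::nat)"

lemma Z0_simps[simp]: "x \<in> Ob \<Longrightarrow> Car Z0 x = {0}" "x \<in> Ob \<Longrightarrow> Pt Z0 x = 0"
  "x \<in> Ob \<Longrightarrow> g \<in> carrier G \<Longrightarrow> Act Z0 x g 0 = 0" "m \<in> Mo \<Longrightarrow> Fm Z0 m 0 = 0"
  by (auto simp: Z0_def)

lemma Z0_vfun: "is_vfunctor G M Z0"
proof (rule vfunI)
  show "fst Z0 \<in> extensional Ob" "snd Z0 \<in> extensional Mo" by (auto simp: Z0_def)
  have one: "\<one>\<^bsub>G\<^esub> \<in> carrier G" using grp by (simp add: group.is_monoid monoid.one_closed)
  have mc: "\<And>g h. g \<in> carrier G \<Longrightarrow> h \<in> carrier G \<Longrightarrow> g \<otimes>\<^bsub>G\<^esub> h \<in> carrier G"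
    using grp by (simp add: group.is_monoid monoid.m_closed)
  have vo: "\<And>x. x \<in> Ob \<Longrightarrow> vect_obj G (fst Z0 x)"
    unfolding vect_obj_def using one mc by (auto simp: Z0_def)
  thus "\<And>x. x \<in> Ob \<Longrightarrow> vect_obj G (fst Z0 x)" .
  show "\<And>m. m \<in> Mo \<Longrightarrow> vect_mor G (fst Z0 (mD m)) (fst Z0 (mC m)) (Fm Z0 m)"
  proof -
    fix m assume m: "m \<in> Mo"
    have d: "mD m \<in> Ob" "mC m \<in> Ob" using M_dc[OF m] by auto
    show "vect_mor G (fst Z0 (mD m)) (fst Z0 (mC m)) (Fm Z0 m)"
      by (rule vect_morI[OF vo[OF d(1)]]) (use d m in \<open>auto simp: Z0_def\<close>)
  qed
  show "\<And>x. x \<in> Ob \<Longrightarrow> Fm Z0 (cId M x) = (\<lambda>v\<in>Car Z0 x. v)"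
    using M_id by (auto simp: Z0_def)
  show "\<And>f g v. f \<in> Mo \<Longrightarrow> g \<in> Mo \<Longrightarrow> mC f = mD g \<Longrightarrow> v \<in> Car Z0 (mD f) \<Longrightarrow>
        Fm Z0 (cComp M g f) v = Fm Z0 g (Fm Z0 f v)"
    using M_comp M_dc by (auto simp: Z0_def)
qed

lemma Z0_zero: "zero_obj FV Z0"
  unfolding zero_obj_def
proof (intro conjI ballI)
  show "Z0 \<in> cObj FV" using Z0_vfun by simp
  fix X assume "X \<in> cObj FV"
  hence X: "is_vfunctor G M X" by simp
  show "\<exists>!f. f \<in> hom FV X Z0"
  proof (rule ex1I[of _ "zmap X Z0"])
    show "zmap X Z0 \<in> hom FV X Z0" using zmap_vnat[OF X Z0_vfun] by (simp add: hom_def)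
    fix f assume f: "f \<in> hom FV X Z0"
    hence f': "is_vnat G M f" "Dm f = X" "Cd f = Z0" by (auto simp: hom_def)
    show "f = zmap X Z0"
    proof (rule vnat_eqI[OF f'(1) zmap_vnat[OF X Z0_vfun]])
      fix x v assume "x \<in> Ob" "v \<in> Car (Dm f) x"
      thus "Ap f x v = Ap (zmap X Z0) x v" using vnat_in[OF f'(1)] f' by auto
    qed (use f' in simp_all)
  qed
  show "\<exists>!f. f \<in> hom FV Z0 X"
  proof (rule ex1I[of _ "zmap Z0 X"])
    show "zmap Z0 X \<in> hom FV Z0 X" using zmap_vnat[OF Z0_vfun X] by (simp add: hom_def)
    fix f assume f: "f \<in> hom FV Z0 X"
    hence f': "is_vnat G M f" "Dm f = Z0" "Cd f = X" by (auto simp: hom_def)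
    show "f = zmap Z0 X"
    proof (rule vnat_eqI[OF f'(1) zmap_vnat[OF Z0_vfun X]])
      fix x v assume xv: "x \<in> Ob" "v \<in> Car (Dm f) x"
      hence "v = Pt (Dm f) x" using f' by simp
      thus "Ap f x v = Ap (zmap Z0 X) x v" using vnat_pt[OF f'(1) xv(1)] xv f' by simp
    qed (use f' in simp_all)
  qed
qed

lemma FV_proto_abelian: "proto_abelian FV"
  unfolding proto_abelian_def proto_exact_def
proof (intro conjI allI impI)
  show cat: "is_category FV" using FV_cat .
  show "\<exists>Z. zero_obj FV Z" using Z0_zero by blast
  show "\<And>f. mono FV f \<Longrightarrow> mono FV f" "\<And>f. epi FV f \<Longrightarrow> epi FV f" by auto
  show "\<And>Z X f. zero_obj FV Z \<and> X \<in> cObj FV \<and> f \<in> hom FV Z X \<Longrightarrow> mono FV f"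
    using zero_mono[OF cat] by blast
  show "\<And>Z X f. zero_obj FV Z \<and> X \<in> cObj FV \<and> f \<in> hom FV X Z \<Longrightarrow> epi FV f"
    using zero_epi[OF cat] by blast
  show "\<And>f. iso FV f \<Longrightarrow> mono FV f" using iso_mono[OF cat] .
  show "\<And>f. iso FV f \<Longrightarrow> epi FV f" using iso_epi[OF cat] .
  show "\<And>f g. mono FV f \<and> mono FV g \<and> cCod FV f = cDom FV g \<Longrightarrow> mono FV (cComp FV g f)"
    using mono_comp[OF cat] by blast
  show "\<And>f g. epi FV f \<and> epi FV g \<and> cCod FV f = cDom FV g \<Longrightarrow> epi FV (cComp FV g f)"
    using epi_comp[OF cat] by blast
next
  fix i j k l assume a: "comm_square FV i j k l \<and> mono FV i \<and> mono FV l \<and> epi FV j \<and> epi FV k"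
  have sq: "comm_square FV i j k l" and ii: "injv i" and il: "injv l" and sj: "surjv j" and sk: "surjv k"
    using a mono_iff' epi_iff' by auto
  show "is_pullback FV i j k l \<longleftrightarrow> is_pushout FV i j k l"
  proof
    assume "is_pullback FV i j k l"
    hence "Qc i k l" using pullback_Q il by blast
    thus "is_pushout FV i j k l" using Q_pushout[OF sq sj il sk] by blast
  next
    assume "is_pushout FV i j k l"
    hence "Qc i k l" using pushout_Q ii sj by blast
    thus "is_pullback FV i j k l" using Q_pullback[OF sq ii il] by blast
  qed
next
  fix k l assume a: "mono FV l \<and> epi FV k \<and> cCod FV k = cCod FV l"
  have k: "is_vnat G M k" "surjv k" and l: "is_vnat G M l" "injv l" and cd: "Cd k = Cd l"
    using a mono_iff' epi_iff' by auto
  note ctx = k(1) l(1) cd l(2)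
  have sq: "comm_square FV (iP k l) (jP k l) k l" using PB_sq[OF ctx] .
  have Q: "Qc (iP k l) k l" using PB_Q[OF ctx] .
  have mi: "mono FV (iP k l)" using iP_vnat[OF ctx] iP_injv[OF ctx] mono_iff' by blast
  have ej: "epi FV (jP k l)" using jP_props[OF ctx] PB_surj[OF ctx k(2)] epi_iff' by blast
  have "bicartesian FV (iP k l) (jP k l) k l"
    unfolding bicartesian_def using Q_pullback[OF sq iP_injv[OF ctx] l(2) Q]
      Q_pushout[OF sq PB_surj[OF ctx k(2)] l(2) k(2) Q] by blast
  thus "\<exists>i j. mono FV i \<and> epi FV j \<and> bicartesian FV i j k l" using mi ej by blast
next
  fix i j assume a: "mono FV i \<and> epi FV j \<and> cDom FV i = cDom FV j"
  have i: "is_vnat G M i" "injv i" and j: "is_vnat G M j" "surjv j" and dm: "Dm i = Dm j"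
    using a mono_iff' epi_iff' by auto
  note ctx = i(1) j(1) dm i(2) j(2)
  have sq: "comm_square FV i j (kO i j) (lO i j)" using PO_sq[OF ctx] .
  have Q: "Qc i (kO i j) (lO i j)" using PO_Q[OF ctx] .
  have ek: "epi FV (kO i j)" using kO_vnat[OF ctx] kO_surj[OF ctx] epi_iff' by blast
  have ml: "mono FV (lO i j)" using lO_vnat[OF ctx] lO_inj[OF ctx] mono_iff' by blast
  have "bicartesian FV i j (kO i j) (lO i j)"
    unfolding bicartesian_def using Q_pullback[OF sq i(2) lO_inj[OF ctx] Q]
      Q_pushout[OF sq j(2) lO_inj[OF ctx] kO_surj[OF ctx] Q] by blast
  thus "\<exists>k l. epi FV k \<and> mono FV l \<and> bicartesian FV i j k l" using ek ml by blast
qed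

end


context fv begin

lemma bij_iso: assumes t: "is_vnat G M t" and it: "injv t" and st: "surjv t" shows "iso FV t"
proof -
  have idv: "is_vnat G M (cId FV (Cd t))" using id_vnat[OF vnat_D2[OF t]] .
  have img: "\<forall>x\<in>Ob. \<forall>v\<in>Car (Dm (cId FV (Cd t))) x. Ap (cId FV (Cd t)) x v \<in> Ap t x ` Car (Dm t) x"
    using st unfolding surjv_def by simp
  have L: "is_vnat G M (liftN t (cId FV (Cd t))) \<and> cComp FV t (liftN t (cId FV (Cd t))) = cId FV (Cd t) \<and>
    (\<forall>x\<in>Ob. \<forall>v\<in>Car (Dm (cId FV (Cd t))) x. Ap (liftN t (cId FV (Cd t))) x v \<in> Car (Dm t) x \<and>
       Ap t x (Ap (liftN t (cId FV (Cd t))) x v) = Ap (cId FV (Cd t)) x v)"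
    by (rule lift_all[OF t idv _ it img]) simp
  define u where "u = liftN t (cId FV (Cd t))"
  have u: "is_vnat G M u" "cComp FV t u = cId FV (Cd t)" "Dm u = Cd t" "Cd u = Dm t" using L u_def by auto
  have ua: "\<And>x w. x \<in> Ob \<Longrightarrow> w \<in> Car (Cd t) x \<Longrightarrow> Ap u x w \<in> Car (Dm t) x \<and> Ap t x (Ap u x w) = w"
    using L u_def by simp
  have "cComp FV u t = cId FV (Dm t)"
  proof (rule vnat_eqI)
    show "is_vnat G M (cComp FV u t)" using comp_vnat[OF u(1) t] u by simp
    show "is_vnat G M (cId FV (Dm t))" using id_vnat[OF vnat_D1[OF t]] .
    fix x v assume xv: "x \<in> Ob" "v \<in> Car (Dm (cComp FV u t)) x"
    hence v: "v \<in> Car (Dm t) x" by simp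
    have tv: "Ap t x v \<in> Car (Cd t) x" using vnat_in[OF t xv(1) v] .
    have "Ap u x (Ap t x v) = v" using injvD[OF it xv(1)] ua[OF xv(1) tv] v by metis
    thus "Ap (cComp FV u t) x v = Ap (cId FV (Dm t)) x v" using xv v by simp
  qed (use u in simp_all)
  moreover have "u \<in> hom FV (cCod FV t) (cDom FV t)" using u by (simp add: hom_def)
  ultimately show ?thesis unfolding iso_def using u(2) t by (intro conjI bexI[of _ u]) simp_all
qed

definition transF :: "('o,'a,'g) vfun \<Rightarrow> ('o \<Rightarrow> nat \<Rightarrow> nat) \<Rightarrow> ('o,'a,'g) vfun" where
  "transF F \<sigma> = (\<lambda>x\<in>Ob. \<lparr>vcar = \<sigma> x ` Car F x, vpt = \<sigma> x (Pt F x),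
      vact = \<lambda>g\<in>carrier G. \<lambda>w\<in>\<sigma> x ` Car F x. \<sigma> x (Act F x g (inv_into (Car F x) (\<sigma> x) w))\<rparr>,
    \<lambda>m\<in>Mo. \<lambda>w\<in>\<sigma> (mD m) ` Car F (mD m). \<sigma> (mC m) (Fm F m (inv_into (Car F (mD m)) (\<sigma> (mD m)) w)))"

definition trmap :: "('o,'a,'g) vfun \<Rightarrow> ('o \<Rightarrow> nat \<Rightarrow> nat) \<Rightarrow> ('o,'a,'g) vnat" where
  "trmap F \<sigma> = (F, transF F \<sigma>, \<lambda>x\<in>Ob. \<lambda>v\<in>Car F x. \<sigma> x v)"

context fixes F :: "('o,'a,'g) vfun" and \<sigma> :: "'o \<Rightarrow> nat \<Rightarrow> nat" assumes F: "is_vfunctor G M F" and inj: "\<And>x. x \<in> Ob \<Longrightarrow> inj_on (\<sigma> x) (Car F x)"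
begin

lemma iv: "x \<in> Ob \<Longrightarrow> v \<in> Car F x \<Longrightarrow> inv_into (Car F x) (\<sigma> x) (\<sigma> x v) = v"
  using inj inv_into_f_f by metis

lemma tr_simps: "x \<in> Ob \<Longrightarrow> Car (transF F \<sigma>) x = \<sigma> x ` Car F x"
  "x \<in> Ob \<Longrightarrow> Pt (transF F \<sigma>) x = \<sigma> x (Pt F x)"
  "x \<in> Ob \<Longrightarrow> g \<in> carrier G \<Longrightarrow> v \<in> Car F x \<Longrightarrow> Act (transF F \<sigma>) x g (\<sigma> x v) = \<sigma> x (Act F x g v)"
  "m \<in> Mo \<Longrightarrow> v \<in> Car F (mD m) \<Longrightarrow> Fm (transF F \<sigma>) m (\<sigma> (mD m) v) = \<sigma> (mC m) (Fm F m v)"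
  using iv M_dc by (auto simp: transF_def)

lemma sig_eq: "x \<in> Ob \<Longrightarrow> a \<in> Car F x \<Longrightarrow> b \<in> Car F x \<Longrightarrow> \<sigma> x a = \<sigma> x b \<Longrightarrow> a = b"
  using inj inj_onD by metis

lemma tr_obj: assumes x: "x \<in> Ob" shows "vect_obj G (fst (transF F \<sigma>) x)"
proof -
  have V: "vect_obj G (fst F x)" using vfun_obj[OF F x] .
  let ?T = "fst (transF F \<sigma>) x"
  have c: "vcar ?T = \<sigma> x ` Car F x" "vpt ?T = \<sigma> x (Pt F x)" using tr_simps x by auto
  have a: "\<And>g v. g \<in> carrier G \<Longrightarrow> v \<in> Car F x \<Longrightarrow> vact ?T g (\<sigma> x v) = \<sigma> x (Act F x g v)"
    using tr_simps(3) x by blast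
  have one: "\<one>\<^bsub>G\<^esub> \<in> carrier G" using grp by (simp add: group.is_monoid monoid.one_closed)
  have mc: "\<And>g h. g \<in> carrier G \<Longrightarrow> h \<in> carrier G \<Longrightarrow> g \<otimes>\<^bsub>G\<^esub> h \<in> carrier G"
    using grp by (simp add: group.is_monoid monoid.m_closed)
  show ?thesis unfolding vect_obj_def
  proof (intro conjI ballI impI)
    show "finite (vcar ?T)" using c vo_fin[OF V] by simp
    show "vpt ?T \<in> vcar ?T" using c vo_ptin[OF V] by simp
    show "vact ?T \<in> extensional (carrier G)" using x by (simp add: transF_def)
  next
    fix g assume g: "g \<in> carrier G"
    show "vact ?T g \<in> vcar ?T \<rightarrow> vcar ?T" using c a g vo_act_in[OF V g] by auto
    show "vact ?T g \<in> extensional (vcar ?T)" using x g by (simp add: transF_def)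
    show "vact ?T g (vpt ?T) = vpt ?T" using c a g vo_pt[OF V g] vo_ptin[OF V] by simp
  next
    fix w assume "w \<in> vcar ?T"
    then obtain v where v: "v \<in> Car F x" "w = \<sigma> x v" using c by auto
    show "vact ?T \<one>\<^bsub>G\<^esub> w = w" using a[OF one v(1)] vo_one[OF V v(1)] v(2) by simp
  next
    fix g h w assume gh: "g \<in> carrier G" "h \<in> carrier G" "w \<in> vcar ?T"
    then obtain v where v: "v \<in> Car F x" "w = \<sigma> x v" using c by auto
    show "vact ?T (g \<otimes>\<^bsub>G\<^esub> h) w = vact ?T g (vact ?T h w)"
      using a[OF mc[OF gh(1,2)] v(1)] a[OF gh(2) v(1)] a[OF gh(1) vo_act_in[OF V gh(2) v(1)]] vo_mult[OF V gh(1,2) v(1)] v(2)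
      by simp
  next
    fix g w assume gw: "g \<in> carrier G" "w \<in> vcar ?T - {vpt ?T}" "vact ?T g w = w"
    then obtain v where v: "v \<in> Car F x" "w = \<sigma> x v" using c by auto
    have "\<sigma> x (Act F x g v) = \<sigma> x v" using gw(3) a[OF gw(1) v(1)] v(2) by simp
    hence "Act F x g v = v" using sig_eq[OF x vo_act_in[OF V gw(1) v(1)] v(1)] by simp
    moreover have "v \<noteq> Pt F x" using gw(2) v(2) c by auto
    ultimately show "g = \<one>\<^bsub>G\<^esub>" using vo_free[OF V gw(1) v(1)] by simp
  qed
qed

lemma tr_vfun: "is_vfunctor G M (transF F \<sigma>)"
proof (rule vfunI)
  show "fst (transF F \<sigma>) \<in> extensional Ob" "snd (transF F \<sigma>) \<in> extensional Mo" by (auto simp: transF_def)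
  show "\<And>x. x \<in> Ob \<Longrightarrow> vect_obj G (fst (transF F \<sigma>) x)" using tr_obj .
next
  fix m assume m: "m \<in> Mo"
  have d: "mD m \<in> Ob" "mC m \<in> Ob" using M_dc[OF m] by auto
  show "vect_mor G (fst (transF F \<sigma>) (mD m)) (fst (transF F \<sigma>) (mC m)) (Fm (transF F \<sigma>) m)"
  proof (rule vect_morI[OF tr_obj[OF d(1)]])
    fix w assume "w \<in> vcar (fst (transF F \<sigma>) (mD m))"
    then obtain v where v: "v \<in> Car F (mD m)" "w = \<sigma> (mD m) v" using tr_simps(1)[OF d(1)] by auto
    show "Fm (transF F \<sigma>) m w \<in> vcar (fst (transF F \<sigma>) (mC m))"
      using tr_simps(4)[OF m v(1)] v(2) tr_simps(1)[OF d(2)] vfun_in[OF F m v(1)] by simp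
  next
    show "Fm (transF F \<sigma>) m \<in> extensional (vcar (fst (transF F \<sigma>) (mD m)))" using m d by (simp add: transF_def)
    show "Fm (transF F \<sigma>) m (vpt (fst (transF F \<sigma>) (mD m))) = vpt (fst (transF F \<sigma>) (mC m))"
      using tr_simps(2)[OF d(1)] tr_simps(2)[OF d(2)] tr_simps(4)[OF m vfun_ptin[OF F d(1)]] vfun_pt[OF F m] by simp
  next
    fix g w assume gw: "g \<in> carrier G" "w \<in> vcar (fst (transF F \<sigma>) (mD m))"
    then obtain v where v: "v \<in> Car F (mD m)" "w = \<sigma> (mD m) v" using tr_simps(1)[OF d(1)] by auto
    show "Fm (transF F \<sigma>) m (vact (fst (transF F \<sigma>) (mD m)) g w) = vact (fst (transF F \<sigma>) (mC m)) g (Fm (transF F \<sigma>) m w)"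
      using v tr_simps(3)[OF d(1) gw(1) v(1)] tr_simps(4)[OF m v(1)] tr_simps(4)[OF m vfun_actin[OF F d(1) gw(1) v(1)]]
        tr_simps(3)[OF d(2) gw(1) vfun_in[OF F m v(1)]] vfun_eq[OF F m gw(1) v(1)] by simp
  next
    fix w1 w2 assume a: "w1 \<in> vcar (fst (transF F \<sigma>) (mD m))" "w2 \<in> vcar (fst (transF F \<sigma>) (mD m))"
      "Fm (transF F \<sigma>) m w1 = Fm (transF F \<sigma>) m w2" "Fm (transF F \<sigma>) m w1 \<noteq> vpt (fst (transF F \<sigma>) (mC m))"
    obtain v1 where v1: "v1 \<in> Car F (mD m)" "w1 = \<sigma> (mD m) v1" using a(1) tr_simps(1)[OF d(1)] by auto
    obtain v2 where v2: "v2 \<in> Car F (mD m)" "w2 = \<sigma> (mD m) v2" using a(2) tr_simps(1)[OF d(1)] by auto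
    have "\<sigma> (mC m) (Fm F m v1) = \<sigma> (mC m) (Fm F m v2)" using a(3) v1 v2 tr_simps(4)[OF m] by simp
    hence e: "Fm F m v1 = Fm F m v2" using sig_eq[OF d(2) vfun_in[OF F m v1(1)] vfun_in[OF F m v2(1)]] by simp
    have "Fm F m v1 \<noteq> Pt F (mC m)" using a(4) v1 tr_simps(4)[OF m v1(1)] tr_simps(2)[OF d(2)] by auto
    thus "w1 = w2" using vfun_inj[OF F m v1(1) v2(1) e] v1 v2 by simp
  qed
next
  fix x assume x: "x \<in> Ob"
  show "Fm (transF F \<sigma>) (cId M x) = (\<lambda>v\<in>Car (transF F \<sigma>) x. v)"
  proof (rule extensionalityI[of _ "Car (transF F \<sigma>) x"])
    show "Fm (transF F \<sigma>) (cId M x) \<in> extensional (Car (transF F \<sigma>) x)"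
      using M_id[OF x] x by (simp add: transF_def)
    fix w assume "w \<in> Car (transF F \<sigma>) x"
    then obtain v where v: "v \<in> Car F x" "w = \<sigma> x v" using tr_simps(1)[OF x] by auto
    show "Fm (transF F \<sigma>) (cId M x) w = (\<lambda>v\<in>Car (transF F \<sigma>) x. v) w"
      using tr_simps(4)[OF conjunct1[OF M_id[OF x]]] M_id[OF x] v vfun_id[OF F x] tr_simps(1)[OF x] by simp
  qed simp
next
  fix f g w assume a: "f \<in> Mo" "g \<in> Mo" "mC f = mD g" "w \<in> Car (transF F \<sigma>) (mD f)"
  have d: "mD f \<in> Ob" using M_dc[OF a(1)] by auto
  obtain v where v: "v \<in> Car F (mD f)" "w = \<sigma> (mD f) v" using a(4) tr_simps(1)[OF d] by auto
  have c: "cComp M g f \<in> Mo" "mD (cComp M g f) = mD f" "mC (cComp M g f) = mC g" using M_comp[OF a(1-3)] by auto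
  have fv: "Fm F f v \<in> Car F (mD g)" using vfun_in[OF F a(1) v(1)] a(3) by simp
  show "Fm (transF F \<sigma>) (cComp M g f) w = Fm (transF F \<sigma>) g (Fm (transF F \<sigma>) f w)"
    using tr_simps(4)[OF c(1)] tr_simps(4)[OF a(1) v(1)] tr_simps(4)[OF a(2) fv] c v a(3)
      vfun_comp[OF F a(1-3) v(1)] by simp
qed

lemma trmap_props: "is_vnat G M (trmap F \<sigma>) \<and> injv (trmap F \<sigma>) \<and> surjv (trmap F \<sigma>) \<and>
   Dm (trmap F \<sigma>) = F \<and> Cd (trmap F \<sigma>) = transF F \<sigma>"
proof (intro conjI)
  have ap: "\<And>x v. x \<in> Ob \<Longrightarrow> v \<in> Car F x \<Longrightarrow> Ap (trmap F \<sigma>) x v = \<sigma> x v" by (simp add: trmap_def)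
  show "Dm (trmap F \<sigma>) = F" "Cd (trmap F \<sigma>) = transF F \<sigma>" by (simp_all add: trmap_def)
  show "is_vnat G M (trmap F \<sigma>)"
  proof (rule vnatI)
    show "is_vfunctor G M (Dm (trmap F \<sigma>))" using F by (simp add: trmap_def)
    show "is_vfunctor G M (Cd (trmap F \<sigma>))" using tr_vfun by (simp add: trmap_def)
    show "snd (snd (trmap F \<sigma>)) \<in> extensional Ob" by (simp add: trmap_def)
  next
    fix x assume x: "x \<in> Ob"
    show "vect_mor G (fst (Dm (trmap F \<sigma>)) x) (fst (Cd (trmap F \<sigma>)) x) (Ap (trmap F \<sigma>) x)"
    proof (rule vect_morI)
      show "vect_obj G (fst (Dm (trmap F \<sigma>)) x)" using vfun_obj[OF F x] by (simp add: trmap_def)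
      show "Ap (trmap F \<sigma>) x \<in> extensional (vcar (fst (Dm (trmap F \<sigma>)) x))" using x by (simp add: trmap_def)
      show "\<And>v. v \<in> vcar (fst (Dm (trmap F \<sigma>)) x) \<Longrightarrow> Ap (trmap F \<sigma>) x v \<in> vcar (fst (Cd (trmap F \<sigma>)) x)"
        using x ap tr_simps(1)[OF x] by (simp add: trmap_def)
      show "Ap (trmap F \<sigma>) x (vpt (fst (Dm (trmap F \<sigma>)) x)) = vpt (fst (Cd (trmap F \<sigma>)) x)"
        using x ap[OF x vfun_ptin[OF F x]] tr_simps(2)[OF x] by (simp add: trmap_def)
      show "\<And>g v. g \<in> carrier G \<Longrightarrow> v \<in> vcar (fst (Dm (trmap F \<sigma>)) x) \<Longrightarrow>
        Ap (trmap F \<sigma>) x (vact (fst (Dm (trmap F \<sigma>)) x) g v) = vact (fst (Cd (trmap F \<sigma>)) x) g (Ap (trmap F \<sigma>) x v)"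
        using x ap tr_simps(3)[OF x] vfun_actin[OF F x] by (simp add: trmap_def)
      show "\<And>v1 v2. v1 \<in> vcar (fst (Dm (trmap F \<sigma>)) x) \<Longrightarrow> v2 \<in> vcar (fst (Dm (trmap F \<sigma>)) x) \<Longrightarrow>
        Ap (trmap F \<sigma>) x v1 = Ap (trmap F \<sigma>) x v2 \<Longrightarrow> Ap (trmap F \<sigma>) x v1 \<noteq> vpt (fst (Cd (trmap F \<sigma>)) x) \<Longrightarrow> v1 = v2"
        using x ap sig_eq[OF x] by (simp add: trmap_def)
    qed
  next
    fix m v assume a: "m \<in> Mo" "v \<in> Car (Dm (trmap F \<sigma>)) (mD m)"
    have d: "mD m \<in> Ob" "mC m \<in> Ob" using M_dc[OF a(1)] by auto
    have v: "v \<in> Car F (mD m)" using a by (simp add: trmap_def)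
    show "Ap (trmap F \<sigma>) (mC m) (Fm (Dm (trmap F \<sigma>)) m v) = Fm (Cd (trmap F \<sigma>)) m (Ap (trmap F \<sigma>) (mD m) v)"
      using ap[OF d(2) vfun_in[OF F a(1) v]] ap[OF d(1) v] tr_simps(4)[OF a(1) v] by (simp add: trmap_def)
  qed
  show "injv (trmap F \<sigma>)" unfolding injv_def
    using sig_eq ap by (auto simp: trmap_def intro!: inj_onI)
  show "surjv (trmap F \<sigma>)" unfolding surjv_def
  proof
    fix x assume x: "x \<in> Ob"
    have "Ap (trmap F \<sigma>) x ` Car F x = \<sigma> x ` Car F x" using ap[OF x] by (rule image_cong[OF refl])
    thus "Ap (trmap F \<sigma>) x ` Car (Dm (trmap F \<sigma>)) x = Car (Cd (trmap F \<sigma>)) x"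
      using tr_simps(1)[OF x] by (simp add: trmap_def)
  qed
qed

end
end


context fixes C :: "('o,'m) catg" assumes cat: "is_category C"
begin

lemma equiv_shift:
  assumes i: "i \<in> cMor C" and p: "p \<in> cMor C" and ip: "cCod C i = cDom C p"
  and \<phi>h: "\<phi> \<in> hom C (cCod C i) B'" and \<psi>h: "\<psi> \<in> hom C B' (cCod C i)"
  and \<phi>i: "iso C \<phi>" and \<psi>i: "iso C \<psi>"
  and \<psi>\<phi>: "cComp C \<psi> \<phi> = cId C (cCod C i)"
  and i2: "i2 \<in> cMor C" and p2: "p2 \<in> cMor C" and ip2: "cCod C i2 = cDom C p2"
  shows "ses_equiv C (i,p) (i2,p2) \<longleftrightarrow> ses_equiv C (cComp C \<phi> i, cComp C p \<psi>) (i2,p2)"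
proof -
  have \<phi>: "\<phi> \<in> cMor C" "cDom C \<phi> = cCod C i" "cCod C \<phi> = B'" using \<phi>h by (auto simp: hom_def)
  have \<psi>: "\<psi> \<in> cMor C" "cDom C \<psi> = B'" "cCod C \<psi> = cCod C i" using \<psi>h by (auto simp: hom_def)
  have \<phi>i_c: "cComp C \<phi> i \<in> cMor C" "cCod C (cComp C \<phi> i) = B'" "cDom C (cComp C \<phi> i) = cDom C i"
    using c_comp[OF cat i \<phi>(1)] \<phi> by auto
  have \<psi>\<phi>i: "cComp C \<psi> (cComp C \<phi> i) = i"
  proof -
    have "cComp C \<psi> (cComp C \<phi> i) = cComp C (cComp C \<psi> \<phi>) i" using c_assoc[OF cat i \<phi>(1) \<psi>(1)] \<phi> \<psi> by simp
    thus ?thesis using \<psi>\<phi> c_idl[OF cat i] by simp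
  qed
  show ?thesis
  proof
    assume "ses_equiv C (i,p) (i2,p2)"
    then obtain \<chi> where \<chi>: "iso C \<chi>" "\<chi> \<in> hom C (cCod C i) (cCod C i2)" "cComp C \<chi> i = i2" "cComp C p2 \<chi> = p"
      unfolding ses_equiv_def by auto
    have \<chi>m: "\<chi> \<in> cMor C" "cDom C \<chi> = cCod C i" "cCod C \<chi> = cCod C i2" using \<chi>(2) by (auto simp: hom_def)
    have c: "cComp C \<chi> \<psi> \<in> cMor C" "cDom C (cComp C \<chi> \<psi>) = B'" "cCod C (cComp C \<chi> \<psi>) = cCod C i2"
      using c_comp[OF cat \<psi>(1) \<chi>m(1)] \<psi> \<chi>m by auto
    have e1: "cComp C (cComp C \<chi> \<psi>) (cComp C \<phi> i) = i2"
      using c_assoc[OF cat \<phi>i_c(1) \<psi>(1) \<chi>m(1)] \<phi>i_c \<psi> \<chi>m \<psi>\<phi>i \<chi>(3) by simp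
    have e2: "cComp C p2 (cComp C \<chi> \<psi>) = cComp C p \<psi>"
      using c_assoc[OF cat \<psi>(1) \<chi>m(1) p2] \<psi> \<chi>m ip2 \<chi>(4) by simp
    have "iso C (cComp C \<chi> \<psi>)" using iso_comp[OF cat \<psi>i \<chi>(1)] \<psi> \<chi>m by simp
    thus "ses_equiv C (cComp C \<phi> i, cComp C p \<psi>) (i2,p2)"
      unfolding ses_equiv_def using c e1 e2 \<phi>i_c by (intro exI[of _ "cComp C \<chi> \<psi>"]) (simp add: hom_def)
  next
    assume "ses_equiv C (cComp C \<phi> i, cComp C p \<psi>) (i2,p2)"
    then obtain \<chi> where \<chi>: "iso C \<chi>" "\<chi> \<in> hom C B' (cCod C i2)" "cComp C \<chi> (cComp C \<phi> i) = i2"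
      "cComp C p2 \<chi> = cComp C p \<psi>"
      unfolding ses_equiv_def using \<phi>i_c by auto
    have \<chi>m: "\<chi> \<in> cMor C" "cDom C \<chi> = B'" "cCod C \<chi> = cCod C i2" using \<chi>(2) by (auto simp: hom_def)
    have c: "cComp C \<chi> \<phi> \<in> cMor C" "cDom C (cComp C \<chi> \<phi>) = cCod C i" "cCod C (cComp C \<chi> \<phi>) = cCod C i2"
      using c_comp[OF cat \<phi>(1) \<chi>m(1)] \<phi> \<chi>m by auto
    have e1: "cComp C (cComp C \<chi> \<phi>) i = i2"
      using c_assoc[OF cat i \<phi>(1) \<chi>m(1)] \<phi> \<chi>m \<chi>(3) by simp
    have "cComp C p2 (cComp C \<chi> \<phi>) = cComp C (cComp C p2 \<chi>) \<phi>"
      using c_assoc[OF cat \<phi>(1) \<chi>m(1) p2] \<phi> \<chi>m ip2 by simp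
    also have "\<dots> = cComp C (cComp C p \<psi>) \<phi>" using \<chi>(4) by simp
    also have "\<dots> = cComp C p (cComp C \<psi> \<phi>)" using c_assoc[OF cat \<phi>(1) \<psi>(1) p] \<phi> \<psi> ip by simp
    also have "\<dots> = p" using \<psi>\<phi> ip c_idr[OF cat p] by simp
    finally have e2: "cComp C p2 (cComp C \<chi> \<phi>) = p" .
    have "iso C (cComp C \<chi> \<phi>)" using iso_comp[OF cat \<phi>i \<chi>(1)] \<phi> \<chi>m by simp
    thus "ses_equiv C (i,p) (i2,p2)"
      unfolding ses_equiv_def using c e1 e2 by (intro exI[of _ "cComp C \<chi> \<phi>"]) (simp add: hom_def)
  qed
qed

end

context fv begin

lemma hom_fin: assumes fo: "finite Ob" and X: "is_vfunctor G M X" and Y: "is_vfunctor G M Y"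
  shows "finite (hom FV X Y)"
proof -
  have "hom FV X Y \<subseteq> (\<lambda>\<eta>. (X, Y, \<eta>)) ` (PiE Ob (\<lambda>x. PiE (Car X x) (\<lambda>_. Car Y x)))"
  proof
    fix f assume f: "f \<in> hom FV X Y"
    hence f': "is_vnat G M f" "Dm f = X" "Cd f = Y" by (auto simp: hom_def)
    have "snd (snd f) \<in> PiE Ob (\<lambda>x. PiE (Car X x) (\<lambda>_. Car Y x))"
      unfolding PiE_iff using vnat_ext[OF f'(1)] vnat_in[OF f'(1)] vnat_extx[OF f'(1)] f' by auto
    moreover have "f = (X, Y, snd (snd f))" using f' by (cases f) auto
    ultimately show "f \<in> (\<lambda>\<eta>. (X, Y, \<eta>)) ` (PiE Ob (\<lambda>x. PiE (Car X x) (\<lambda>_. Car Y x)))" by blast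
  qed
  moreover have "finite (PiE Ob (\<lambda>x. PiE (Car X x) (\<lambda>_. Car Y x)))"
    using fo vo_fin[OF vfun_obj[OF X]] vo_fin[OF vfun_obj[OF Y]] by (intro finite_PiE) auto
  ultimately show ?thesis using finite_subset by blast
qed

lemma ext_PiE: "f \<in> extensional S \<Longrightarrow> (\<And>v. v \<in> S \<Longrightarrow> f v \<in> T) \<Longrightarrow> S \<subseteq> U \<Longrightarrow> T \<subseteq> U \<Longrightarrow>
   f \<in> PiE U (\<lambda>_. insert undefined U)"
proof -
  assume a: "f \<in> extensional S" "\<And>v. v \<in> S \<Longrightarrow> f v \<in> T" "S \<subseteq> U" "T \<subseteq> U"
  have "\<forall>x\<in>U. f x \<in> insert undefined U"
  proof
    fix x assume "x \<in> U"
    show "f x \<in> insert undefined U"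
    proof (cases "x \<in> S")
      case True thus ?thesis using a(2,4) by blast
    next
      case False thus ?thesis using a(1) by (simp add: extensional_def)
    qed
  qed
  moreover have "f \<in> extensional U" using a(1,3) unfolding extensional_def by blast
  ultimately show ?thesis unfolding PiE_iff by blast
qed

definition "FO N = {F. is_vfunctor G M F \<and> (\<forall>x\<in>Ob. Car F x \<subseteq> {..<N})}"

lemma FO_fin: assumes fo: "finite Ob" and fm: "finite Mo" and fg: "finite (carrier G)" shows "finite (FO N)"
proof -
  define U where "U = {..<(N::nat)}"
  define P where "P = PiE U (\<lambda>_. insert undefined U)"
  define VO where "VO = (\<lambda>(c,p,a). \<lparr>vcar=c, vpt=p, vact=a\<rparr>) ` (Pow U \<times> U \<times> PiE (carrier G) (\<lambda>_. P))"
  have fP: "finite P" unfolding P_def U_def by (intro finite_PiE) auto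
  have fU: "finite U" unfolding U_def by simp
  have fVO: "finite VO" unfolding VO_def
    by (intro finite_imageI finite_cartesian_product finite_PiE fP fg fU finite_Pow_iff[THEN iffD2])
  have "FO N \<subseteq> PiE Ob (\<lambda>_. VO) \<times> PiE Mo (\<lambda>_. P)"
  proof
    fix F assume "F \<in> FO N"
    hence F: "is_vfunctor G M F" "\<And>x. x \<in> Ob \<Longrightarrow> Car F x \<subseteq> U" by (auto simp: FO_def U_def)
    have "fst F \<in> PiE Ob (\<lambda>_. VO)"
      unfolding PiE_iff
    proof (intro conjI ballI)
      show "fst F \<in> extensional Ob" using vfun_ext1[OF F(1)] .
      fix x assume x: "x \<in> Ob"
      define V where "V = fst F x"
      have V: "vect_obj G V" using vfun_obj[OF F(1) x] V_def by simp
      have cU: "vcar V \<subseteq> U" using F(2)[OF x] V_def by simp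
      have "vact V \<in> PiE (carrier G) (\<lambda>_. P)"
        unfolding PiE_iff
      proof (intro conjI ballI)
        show "vact V \<in> extensional (carrier G)" using V unfolding vect_obj_def by blast
        fix g assume g: "g \<in> carrier G"
        have "vact V g \<in> extensional (vcar V)" using V g unfolding vect_obj_def by blast
        moreover have "\<And>v. v \<in> vcar V \<Longrightarrow> vact V g v \<in> vcar V" using vo_act_in[OF V g] .
        ultimately show "vact V g \<in> P" unfolding P_def by (rule ext_PiE[OF _ _ cU cU])
      qed
      moreover have "vpt V \<in> U" using vo_ptin[OF V] cU by blast
      moreover have eV: "V = (\<lambda>(c,p,a). \<lparr>vcar=c, vpt=p, vact=a\<rparr>) (vcar V, vpt V, vact V)" by (cases V) simp
      moreover have mV: "(vcar V, vpt V, vact V) \<in> Pow U \<times> U \<times> PiE (carrier G) (\<lambda>_. P)"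
        using cU \<open>vact V \<in> PiE (carrier G) (\<lambda>_. P)\<close> \<open>vpt V \<in> U\<close> by simp
      have "V \<in> VO" unfolding VO_def
        using image_eqI[where f="\<lambda>(c,p,a). \<lparr>vcar=c, vpt=p, vact=a\<rparr>" and x="(vcar V, vpt V, vact V)", OF eV mV] .
      thus "fst F x \<in> VO" using V_def by simp
    qed
    moreover have "snd F \<in> PiE Mo (\<lambda>_. P)"
      unfolding PiE_iff
    proof (intro conjI ballI)
      show "snd F \<in> extensional Mo" using vfun_ext2[OF F(1)] .
      fix m assume m: "m \<in> Mo"
      have d: "mD m \<in> Ob" "mC m \<in> Ob" using M_dc[OF m] by auto
      show "Fm F m \<in> P" unfolding P_def
        by (rule ext_PiE[OF vm_ext[OF vfun_mor[OF F(1) m]] _ F(2)[OF d(1)] F(2)[OF d(2)]]) (rule vfun_in[OF F(1) m])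
    qed
    ultimately show "F \<in> PiE Ob (\<lambda>_. VO) \<times> PiE Mo (\<lambda>_. P)" by (simp add: mem_Times_iff)
  qed
  moreover have "finite (PiE Ob (\<lambda>_. VO) \<times> PiE Mo (\<lambda>_. P))"
    using fo fm fVO fP by (intro finite_cartesian_product finite_PiE) auto
  ultimately show ?thesis using finite_subset by blast
qed

end


context fv begin

lemma ses_mem: "s \<in> ses FV (mono FV) (epi FV) A Cc \<Longrightarrow>
   mono FV (fst s) \<and> epi FV (snd s) \<and> Dm (fst s) = A \<and> Cd (snd s) = Cc \<and>
   (\<exists>Z z1 z2. zero_obj FV Z \<and> z1 \<in> hom FV A Z \<and> z2 \<in> hom FV Z Cc \<and> bicartesian FV (fst s) z1 (snd s) z2)"
  by (cases s) (simp add: ses_def)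

lemma ses_ker: assumes s: "s \<in> ses FV (mono FV) (epi FV) A Cc"
  shows "Cd (fst s) = Dm (snd s) \<and>
    (\<forall>x\<in>Ob. \<forall>b\<in>Car (Cd (fst s)) x. Ap (snd s) x b = Pt Cc x \<longrightarrow> b \<in> Ap (fst s) x ` Car A x)"
proof -
  obtain Z z1 z2 where z: "zero_obj FV Z" "z1 \<in> hom FV A Z" "z2 \<in> hom FV Z Cc"
    "bicartesian FV (fst s) z1 (snd s) z2" and m: "Dm (fst s) = A" "Cd (snd s) = Cc"
    using ses_mem[OF s] by blast
  have pb: "is_pullback FV (fst s) z1 (snd s) z2" using z(4) unfolding bicartesian_def by blast
  have sq: "comm_square FV (fst s) z1 (snd s) z2" using pb unfolding is_pullback_def by blast
  have cd: "Cd (fst s) = Dm (snd s)" using sq unfolding sq_unf by blast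
  have mz: "mono FV z2" using zero_mono[OF FV_cat z(1) z(3)] .
  have iz: "injv z2" "is_vnat G M z2" using mz mono_iff' by auto
  have Q: "Qc (fst s) (snd s) z2" using pullback_Q[OF pb iz(1)] .
  have Zf: "is_vfunctor G M Z" using z(1) unfolding zero_obj_def by simp
  have dz: "Dm z2 = Z" "Cd z2 = Cc" using z(3) by (auto simp: hom_def)
  show ?thesis
  proof (intro conjI cd ballI impI)
    fix x b assume a: "x \<in> Ob" "b \<in> Car (Cd (fst s)) x" "Ap (snd s) x b = Pt Cc x"
    have zp: "Pt Z x \<in> Car (Dm z2) x" using vfun_ptin[OF Zf a(1)] dz by simp
    have "Ap z2 x (Pt Z x) = Pt Cc x" using vnat_pt[OF iz(2) a(1)] dz by simp
    hence "Ap (snd s) x b = Ap z2 x (Pt Z x)" using a(3) by simp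
    moreover have "b \<in> Car (Dm (snd s)) x" using a(2) cd by simp
    ultimately show "b \<in> Ap (fst s) x ` Car A x" using QcD[OF Q a(1) _ zp] m(1) by blast
  qed
qed

lemma ses_card: assumes s: "s \<in> ses FV (mono FV) (epi FV) A Cc" and x: "x \<in> Ob"
  and A: "is_vfunctor G M A" and Cc: "is_vfunctor G M Cc"
  shows "card (Car (Cd (fst s)) x) \<le> card (Car A x) + card (Car Cc x)"
proof -
  define B where "B = Cd (fst s)"
  have ip: "mono FV (fst s)" "epi FV (snd s)" "Dm (fst s) = A" "Cd (snd s) = Cc" using ses_mem[OF s] by auto
  have p: "is_vnat G M (snd s)" using ip(2) epi_iff' by auto
  have i: "is_vnat G M (fst s)" using ip(1) mono_iff' by auto
  have K: "Cd (fst s) = Dm (snd s)" "\<forall>b\<in>Car B x. Ap (snd s) x b = Pt Cc x \<longrightarrow> b \<in> Ap (fst s) x ` Car A x"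
    using ses_ker[OF s] x B_def by auto
  define S2 where "S2 = {b \<in> Car B x. Ap (snd s) x b \<noteq> Pt Cc x}"
  have sub: "Car B x \<subseteq> Ap (fst s) x ` Car A x \<union> S2" using K(2) S2_def by auto
  have fA: "finite (Car A x)" using vo_fin[OF vfun_obj[OF A x]] .
  have fC: "finite (Car Cc x)" using vo_fin[OF vfun_obj[OF Cc x]] .
  have fS2: "finite S2" using vo_fin[OF vfun_obj[OF vnat_D2[OF i] x]] unfolding S2_def B_def by simp
  have injS2: "inj_on (Ap (snd s) x) S2"
  proof (rule inj_onI)
    fix a b assume ab: "a \<in> S2" "b \<in> S2" "Ap (snd s) x a = Ap (snd s) x b"
    thus "a = b" using vnat_inj[OF p x] K(1) ip(4) unfolding S2_def B_def by auto
  qed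
  have imS2: "Ap (snd s) x ` S2 \<subseteq> Car Cc x" using vnat_in[OF p x] K(1) ip(4) unfolding S2_def B_def by auto
  have "card (Car B x) \<le> card (Ap (fst s) x ` Car A x \<union> S2)" using sub fA fS2 by (intro card_mono) auto
  also have "\<dots> \<le> card (Ap (fst s) x ` Car A x) + card S2" by (rule card_Un_le)
  also have "\<dots> \<le> card (Car A x) + card (Car Cc x)"
    using add_mono[OF card_image_le[OF fA, of "Ap (fst s) x"] card_inj_on_le[OF injS2 imS2 fC]] .
  finally show ?thesis using B_def by simp
qed

lemma Ext_fin: assumes fo: "finite Ob" and fm: "finite Mo" and fg: "finite (carrier G)"
  and A: "is_vfunctor G M A" and Cc: "is_vfunctor G M Cc"
  shows "finite (Ext FV (mono FV) (epi FV) Cc A)"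
proof -
  let ?S = "ses FV (mono FV) (epi FV) A Cc"
  define N where "N = (\<Sum>x\<in>Ob. card (Car A x) + card (Car Cc x))"
  define R where "R = (\<Union>B'\<in>FO N. hom FV A B' \<times> hom FV B' Cc)"
  have fR: "finite R" unfolding R_def
  proof (rule finite_UN_I[OF FO_fin[OF fo fm fg]])
    fix B' assume "B' \<in> FO N"
    hence B': "is_vfunctor G M B'" by (simp add: FO_def)
    show "finite (hom FV A B' \<times> hom FV B' Cc)"
      using hom_fin[OF fo A B'] hom_fin[OF fo B' Cc] by simp
  qed
  have "Ext FV (mono FV) (epi FV) Cc A \<subseteq> (\<lambda>r. {s' \<in> ?S. ses_equiv FV r s'}) ` R"
  proof
    fix K assume "K \<in> Ext FV (mono FV) (epi FV) Cc A"
    then obtain s where s: "s \<in> ?S" "K = {s' \<in> ?S. ses_equiv FV s s'}" unfolding Ext_def by blast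
    obtain i p where ip: "s = (i, p)" by (cases s)
    have im: "mono FV i" "epi FV p" "Dm i = A" "Cd p = Cc" using ses_mem[OF s(1)] ip by auto
    have i: "is_vnat G M i" and p: "is_vnat G M p" using im mono_iff' epi_iff' by auto
    have cdi: "Cd i = Dm p" using ses_ker[OF s(1)] ip by simp
    define B where "B = Cd i"
    have B: "is_vfunctor G M B" using vnat_D2[OF i] B_def by simp
    have cardB: "\<And>x. x \<in> Ob \<Longrightarrow> card (Car B x) \<le> N"
    proof -
      fix x assume x: "x \<in> Ob"
      have "card (Car B x) \<le> card (Car A x) + card (Car Cc x)" using ses_card[OF s(1) x A Cc] ip B_def by simp
      also have "\<dots> \<le> N" unfolding N_def using x fo by (intro member_le_sum) auto
      finally show "card (Car B x) \<le> N" .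
    qed
    define \<sigma> where "\<sigma> = (\<lambda>x. SOME h. bij_betw h (Car B x) {0..<card (Car B x)})"
    have bij: "\<And>x. x \<in> Ob \<Longrightarrow> bij_betw (\<sigma> x) (Car B x) {0..<card (Car B x)}"
    proof -
      fix x assume x: "x \<in> Ob"
      have "\<exists>h. bij_betw h (Car B x) {0..<card (Car B x)}"
        using ex_bij_betw_finite_nat[OF vo_fin[OF vfun_obj[OF B x]]] .
      thus "bij_betw (\<sigma> x) (Car B x) {0..<card (Car B x)}" unfolding \<sigma>_def by (rule someI_ex)
    qed
    have inj: "\<And>x. x \<in> Ob \<Longrightarrow> inj_on (\<sigma> x) (Car B x)" using bij bij_betw_def by blast
    define B' where "B' = transF B \<sigma>"
    define \<phi> where "\<phi> = trmap B \<sigma>"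
    have \<phi>: "is_vnat G M \<phi>" "injv \<phi>" "surjv \<phi>" "Dm \<phi> = B" "Cd \<phi> = B'"
      using trmap_props[OF B inj] \<phi>_def B'_def by auto
    have B'f: "is_vfunctor G M B'" using tr_vfun[OF B inj] B'_def by simp
    have B'FO: "B' \<in> FO N" unfolding FO_def
    proof (intro CollectI conjI ballI B'f)
      fix x assume x: "x \<in> Ob"
      have "Car B' x = {0..<card (Car B x)}" using tr_simps(1)[OF B inj x] bij[OF x] B'_def
        by (simp add: bij_betw_def)
      thus "Car B' x \<subseteq> {..<N}" using cardB[OF x] by auto
    qed
    have \<phi>iso: "iso FV \<phi>" using bij_iso[OF \<phi>(1-3)] .
    obtain \<psi> where \<psi>: "iso FV \<psi>" "\<psi> \<in> hom FV (cCod FV \<phi>) (cDom FV \<phi>)"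
      "cComp FV \<psi> \<phi> = cId FV (cDom FV \<phi>)" "cComp FV \<phi> \<psi> = cId FV (cCod FV \<phi>)"
      using iso_inv[OF FV_cat \<phi>iso] by blast
    have \<psi>': "is_vnat G M \<psi>" "Dm \<psi> = B'" "Cd \<psi> = B" using \<psi>(2) \<phi> by (auto simp: hom_def)
    define r where "r = (cComp FV \<phi> i, cComp FV p \<psi>)"
    have rR: "r \<in> R" unfolding R_def r_def
    proof (rule UN_I[OF B'FO], rule SigmaI)
      show "cComp FV \<phi> i \<in> hom FV A B'" using comp_vnat[OF \<phi>(1) i] \<phi> B_def im(3) by (simp add: hom_def)
      show "cComp FV p \<psi> \<in> hom FV B' Cc" using comp_vnat[OF p \<psi>'(1)] \<psi>' B_def cdi im(4) by (simp add: hom_def)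
    qed
    have "K = {s' \<in> ?S. ses_equiv FV r s'}"
    proof -
      have "\<And>s'. s' \<in> ?S \<Longrightarrow> ses_equiv FV s s' \<longleftrightarrow> ses_equiv FV r s'"
      proof -
        fix s' assume s': "s' \<in> ?S"
        obtain i2 p2 where ip2: "s' = (i2, p2)" by (cases s')
        have im2: "mono FV i2" "epi FV p2" using ses_mem[OF s'] ip2 by auto
        have i2: "i2 \<in> cMor FV" "p2 \<in> cMor FV" using im2 mono_iff' epi_iff' by auto
        have cd2: "cCod FV i2 = cDom FV p2" using ses_ker[OF s'] ip2 by simp
        show "ses_equiv FV s s' \<longleftrightarrow> ses_equiv FV r s'"
          unfolding ip ip2 r_def
        proof (rule equiv_shift[OF FV_cat])
          show "i \<in> cMor FV" "p \<in> cMor FV" using i p by simp_all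
          show "cCod FV i = cDom FV p" using cdi by simp
          show "\<phi> \<in> hom FV (cCod FV i) B'" using \<phi> B_def by (simp add: hom_def)
          show "\<psi> \<in> hom FV B' (cCod FV i)" using \<psi>' B_def by (simp add: hom_def)
          show "iso FV \<phi>" "iso FV \<psi>" using \<phi>iso \<psi>(1) by simp_all
          show "cComp FV \<psi> \<phi> = cId FV (cCod FV i)" using \<psi>(3) \<phi> B_def by simp
        qed (use i2 cd2 in simp_all)
      qed
      thus ?thesis using s(2) by blast
    qed
    thus "K \<in> (\<lambda>r. {s' \<in> ?S. ses_equiv FV r s'}) ` R" using rR by blast
  qed
  thus ?thesis using finite_surj[OF fR] by blast
qed

lemma FV_finitary: assumes fo: "finite Ob" and fm: "finite Mo" and fg: "finite (carrier G)"
  shows "finitary FV (mono FV) (epi FV)"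
  unfolding finitary_def
proof (intro conjI ballI)
  fix X Y assume "X \<in> cObj FV" "Y \<in> cObj FV"
  thus "finite (hom FV X Y)" using hom_fin[OF fo] by simp
next
  fix A Cc assume "A \<in> cObj FV" "Cc \<in> cObj FV"
  thus "finite (Ext FV (mono FV) (epi FV) Cc A)" using Ext_fin[OF fo fm fg] by simp
qed

end

theorem mainTheorem4:
  fixes G :: "('g,'b) monoid_scheme" and M :: "('o,'a) catg"
  assumes "comm_group G" and "finite (carrier G)" and "is_category M"
  shows "proto_abelian (FunVect G M) \<and>
         (finite (cObj M) \<and> finite (cMor M) \<longrightarrow>
            finitary (FunVect G M) (mono (FunVect G M)) (epi (FunVect G M)))"
proof -
  have g: "group G" using assms(1) comm_group.axioms(2) by blast
  interpret fv G M by (intro fv.intro vg.intro fv_axioms.intro g assms(3))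
  show ?thesis using FV_proto_abelian FV_finitary assms(2) by blast
qed


end
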